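(* Every filtered dg-algebra has a filtered minimal $A_\infty$-model.
   Context: Work over a field. A filtered dg-algebra $(A,d,\mu,F)$ is a dg-algebra with a decreasing, bounded below, exhaustive filtration $F$ with $d(F^pA^n)\subseteq F^pA^{n+1}$ and $\mu(F^pA\otimes F^qA)\subseteq F^{p+q}A$. A filtered $A_\infty$-algebra is an $A_\infty$-algebra $(M,d,\nu_s)$ with such a filtration satisfying $d(F^pM^n)\subseteq F^pM^{n+1}$ and $\nu_s(F^{p_1}M^{n_1}\otimes\cdots\otimes F^{p_s}M^{n_s})\subseteq F^{p_1+\cdots+p_s}M^{n_1+\cdots+n_s-s+2}$; it is filtered minimal if $M$ has a bigrading with $F^pM^n=\bigoplus_{q\geq p}M^{q,n-q}$ and $d(F^pM^n)\subseteq F^{p+1}M^{n+1}$. A filtered $A_\infty$-morphism $f=(f_s)$ is an $A_\infty$-morphism with $f_s(F^{p_1}\otimes\cdots\otimes F^{p_s})\subseteq F^{p_1+\cdots+p_s}$, and it is a filtered quasi-isomorphism if $F^pf_1$ is a quasi-isomorphism for every $p$. A filtered minimal $A_\infty$-model of a filtered dg-algebra $A$ (viewed as an $A_\infty$-algebra with $\nu_2=\mu$, $\nu_s=0$ for $s\ge3$) is a filtered minimal $A_\infty$-algebra $M$ together with a filtered $A_\infty$-morphism $M\to A$ which is a filtered quasi-isomorphism. *)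

theory Defs
  imports Complex_Main
begin

text \<open>
A graded vector space
is represented by a family V :: int => 'a set of subspaces of an ambient vector space
(type 'a, scalar multiplication sc).  All operations are indexed by the degrees of their
(homogeneous) arguments, so different graded pieces may overlap as sets.
A filtration is F :: int => int => 'a set, where F p n is F^p V^n.
Multilinear operations of arity s take a list of s degrees and a list of s homogeneous
elements.  Sign conventions for A-infinity structures are those of Keller
(Introduction to A-infinity algebras and modules), with Koszul signs.
\<close>

definition psign :: "int \<Rightarrow> 'k::field" where
  "psign e = (if even e then 1 else -1)"

definition graded_space :: "('k::field \<Rightarrow> 'a::ab_group_add \<Rightarrow> 'a) \<Rightarrow> (int \<Rightarrow> 'a set) \<Rightarrow> bool" where
  "graded_space sc V \<longleftrightarrow> vector_space sc \<and> (\<forall>n. module.subspace sc (V n))"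

definition linear_on ::
  "('k::field \<Rightarrow> 'a::ab_group_add \<Rightarrow> 'a) \<Rightarrow> ('k \<Rightarrow> 'b::ab_group_add \<Rightarrow> 'b) \<Rightarrow> 'a set \<Rightarrow> ('a \<Rightarrow> 'b) \<Rightarrow> bool" where
  "linear_on sc1 sc2 S g \<longleftrightarrow>
     (\<forall>x\<in>S. \<forall>y\<in>S. g (x + y) = g x + g y) \<and> (\<forall>c. \<forall>x\<in>S. g (sc1 c x) = sc2 c (g x))"

definition homog :: "(int \<Rightarrow> 'a set) \<Rightarrow> int list \<Rightarrow> 'a list \<Rightarrow> bool" where
  "homog V ds xs \<longleftrightarrow> length xs = length ds \<and> (\<forall>i<length xs. xs ! i \<in> V (ds ! i))"

definition multilinear_op ::
  "('k::field \<Rightarrow> 'a::ab_group_add \<Rightarrow> 'a) \<Rightarrow> (int \<Rightarrow> 'a set) \<Rightarrow> ('k \<Rightarrow> 'b::ab_group_add \<Rightarrow> 'b) \<Rightarrow> (int \<Rightarrow> 'b set)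
    \<Rightarrow> nat \<Rightarrow> int \<Rightarrow> (int list \<Rightarrow> 'a list \<Rightarrow> 'b) \<Rightarrow> bool" where
  "multilinear_op sc1 V sc2 W s e g \<longleftrightarrow>
     (\<forall>ds xs. length ds = s \<longrightarrow> homog V ds xs \<longrightarrow> g ds xs \<in> W (sum_list ds + e)) \<and>
     (\<forall>ds xs i. length ds = s \<longrightarrow> homog V ds xs \<longrightarrow> i < s \<longrightarrow>
          linear_on sc1 sc2 (V (ds ! i)) (\<lambda>y. g ds (xs[i := y])))"

definition filtered_op ::
  "(int \<Rightarrow> 'a set) \<Rightarrow> (int \<Rightarrow> int \<Rightarrow> 'a set) \<Rightarrow> (int \<Rightarrow> int \<Rightarrow> 'b set)
    \<Rightarrow> nat \<Rightarrow> int \<Rightarrow> (int list \<Rightarrow> 'a list \<Rightarrow> 'b) \<Rightarrow> bool" where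
  "filtered_op V F G s e g \<longleftrightarrow>
     (\<forall>ps ds xs. length ps = s \<longrightarrow> length ds = s \<longrightarrow> homog V ds xs \<longrightarrow>
        (\<forall>i<s. xs ! i \<in> F (ps ! i) (ds ! i)) \<longrightarrow> g ds xs \<in> G (sum_list ps) (sum_list ds + e))"

text \<open>Decreasing, bounded below (for each n, F^p V^n = 0 for p large; cf. Weibel 5.5.1)
  and exhaustive filtration by subspaces.\<close>
definition filtration :: "('k::field \<Rightarrow> 'a::ab_group_add \<Rightarrow> 'a) \<Rightarrow> (int \<Rightarrow> 'a set) \<Rightarrow> (int \<Rightarrow> int \<Rightarrow> 'a set) \<Rightarrow> bool" where
  "filtration sc V F \<longleftrightarrow>
     (\<forall>p n. module.subspace sc (F p n) \<and> F p n \<subseteq> V n \<and> F (p + 1) n \<subseteq> F p n) \<and>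
     (\<forall>n. (\<Union>p. F p n) = V n) \<and>
     (\<forall>n. \<exists>p. F p n = {0})"

definition dg_algebra ::
  "('k::field \<Rightarrow> 'a::ab_group_add \<Rightarrow> 'a) \<Rightarrow> (int \<Rightarrow> 'a set) \<Rightarrow> (int \<Rightarrow> 'a \<Rightarrow> 'a)
    \<Rightarrow> (int \<Rightarrow> int \<Rightarrow> 'a \<Rightarrow> 'a \<Rightarrow> 'a) \<Rightarrow> bool" where
  "dg_algebra sc A d mu \<longleftrightarrow>
     graded_space sc A \<and>
     (\<forall>n. linear_on sc sc (A n) (d n) \<and> (\<forall>x\<in>A n. d n x \<in> A (n + 1))) \<and>
     (\<forall>n m. \<forall>x\<in>A n. \<forall>y\<in>A m. mu n m x y \<in> A (n + m)) \<and>
     (\<forall>n m. \<forall>y\<in>A m. linear_on sc sc (A n) (\<lambda>x. mu n m x y)) \<and>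
     (\<forall>n m. \<forall>x\<in>A n. linear_on sc sc (A m) (\<lambda>y. mu n m x y)) \<and>
     (\<forall>n. \<forall>x\<in>A n. d (n + 1) (d n x) = 0) \<and>
     (\<forall>n m. \<forall>x\<in>A n. \<forall>y\<in>A m.
        d (n + m) (mu n m x y) = mu (n + 1) m (d n x) y + sc (psign n) (mu n (m + 1) x (d m y))) \<and>
     (\<forall>n m k. \<forall>x\<in>A n. \<forall>y\<in>A m. \<forall>z\<in>A k.
        mu (n + m) k (mu n m x y) z = mu n (m + k) x (mu m k y z))"

definition filtered_dg_algebra ::
  "('k::field \<Rightarrow> 'a::ab_group_add \<Rightarrow> 'a) \<Rightarrow> (int \<Rightarrow> 'a set) \<Rightarrow> (int \<Rightarrow> int \<Rightarrow> 'a set) \<Rightarrow> (int \<Rightarrow> 'a \<Rightarrow> 'a)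
    \<Rightarrow> (int \<Rightarrow> int \<Rightarrow> 'a \<Rightarrow> 'a \<Rightarrow> 'a) \<Rightarrow> bool" where
  "filtered_dg_algebra sc A F d mu \<longleftrightarrow>
     dg_algebra sc A d mu \<and> filtration sc A F \<and>
     (\<forall>p n. \<forall>x\<in>F p n. d n x \<in> F p (n + 1)) \<and>
     (\<forall>p q n m. \<forall>x\<in>F p n. \<forall>y\<in>F q m. mu n m x y \<in> F (p + q) (n + m))"

definition ainf_ops :: "(int \<Rightarrow> 'a \<Rightarrow> 'a) \<Rightarrow> (nat \<Rightarrow> int list \<Rightarrow> 'a list \<Rightarrow> 'a) \<Rightarrow> nat \<Rightarrow> int list \<Rightarrow> 'a list \<Rightarrow> 'a" where
  "ainf_ops d nu s ds xs = (if s = 1 then d (hd ds) (hd xs) else nu s ds xs)"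

definition dg_nu :: "(int \<Rightarrow> int \<Rightarrow> 'a \<Rightarrow> 'a \<Rightarrow> 'a::zero) \<Rightarrow> nat \<Rightarrow> int list \<Rightarrow> 'a list \<Rightarrow> 'a" where
  "dg_nu mu s ds xs = (if s = 2 then mu (ds ! 0) (ds ! 1) (xs ! 0) (xs ! 1) else 0)"

text \<open>The sum  sum_{r+s+t=n, s>=1} (-1)^(r+st) outer_{r+1+t} (1^r (x) inner_s (x) 1^t)
  evaluated on homogeneous xs of degrees ds, with Koszul sign (-1)^((2-s)(|x_1|+..+|x_r|)).\<close>
definition insert_sum ::
  "('k::field \<Rightarrow> 'b::ab_group_add \<Rightarrow> 'b) \<Rightarrow> (nat \<Rightarrow> int list \<Rightarrow> 'a list \<Rightarrow> 'b)
    \<Rightarrow> (nat \<Rightarrow> int list \<Rightarrow> 'a list \<Rightarrow> 'a) \<Rightarrow> nat \<Rightarrow> int list \<Rightarrow> 'a list \<Rightarrow> 'b" where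
  "insert_sum sc outer inner n ds xs =
     (\<Sum>(r, s) \<in> {(r, s). 1 \<le> s \<and> r + s \<le> n}.
        let t = n - r - s in
        sc (psign (int r + int s * int t + (2 - int s) * sum_list (take r ds)))
           (outer (r + 1 + t)
              (take r ds @ [sum_list (take s (drop r ds)) + 2 - int s] @ drop (r + s) ds)
              (take r xs @ [inner s (take s (drop r ds)) (take s (drop r xs))] @ drop (r + s) xs)))"

definition ainf_algebra ::
  "('k::field \<Rightarrow> 'a::ab_group_add \<Rightarrow> 'a) \<Rightarrow> (int \<Rightarrow> 'a set) \<Rightarrow> (int \<Rightarrow> 'a \<Rightarrow> 'a)
    \<Rightarrow> (nat \<Rightarrow> int list \<Rightarrow> 'a list \<Rightarrow> 'a) \<Rightarrow> bool" where
  "ainf_algebra sc V d nu \<longleftrightarrow>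
     graded_space sc V \<and>
     (\<forall>n. linear_on sc sc (V n) (d n) \<and> (\<forall>x\<in>V n. d n x \<in> V (n + 1))) \<and>
     (\<forall>s\<ge>2. multilinear_op sc V sc V s (2 - int s) (nu s)) \<and>
     (\<forall>n\<ge>1. \<forall>ds xs. length ds = n \<longrightarrow> homog V ds xs \<longrightarrow>
        insert_sum sc (ainf_ops d nu) (ainf_ops d nu) n ds xs = 0)"

definition filtered_ainf_algebra ::
  "('k::field \<Rightarrow> 'a::ab_group_add \<Rightarrow> 'a) \<Rightarrow> (int \<Rightarrow> 'a set) \<Rightarrow> (int \<Rightarrow> int \<Rightarrow> 'a set) \<Rightarrow> (int \<Rightarrow> 'a \<Rightarrow> 'a)
    \<Rightarrow> (nat \<Rightarrow> int list \<Rightarrow> 'a list \<Rightarrow> 'a) \<Rightarrow> bool" where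
  "filtered_ainf_algebra sc V F d nu \<longleftrightarrow>
     ainf_algebra sc V d nu \<and> filtration sc V F \<and>
     (\<forall>p n. \<forall>x\<in>F p n. d n x \<in> F p (n + 1)) \<and>
     (\<forall>s\<ge>2. filtered_op V F F s (2 - int s) (nu s))"

definition independent_family :: "('b \<Rightarrow> 'a::ab_group_add set) \<Rightarrow> bool" where
  "independent_family W \<longleftrightarrow>
     (\<forall>Q x. finite Q \<longrightarrow> (\<forall>q\<in>Q. x q \<in> W q) \<longrightarrow> (\<Sum>q\<in>Q. x q) = 0 \<longrightarrow> (\<forall>q\<in>Q. x q = 0))"

text \<open>Filtered minimal: a bigrading B p q = M^(p,q) inside M^(p+q) with
  F^p M^n = (+)_(q>=p) M^(q,n-q) (direct sum), and d(F^p M^n) in F^(p+1) M^(n+1).\<close>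
definition filtered_minimal ::
  "('k::field \<Rightarrow> 'a::ab_group_add \<Rightarrow> 'a) \<Rightarrow> (int \<Rightarrow> 'a set) \<Rightarrow> (int \<Rightarrow> int \<Rightarrow> 'a set) \<Rightarrow> (int \<Rightarrow> 'a \<Rightarrow> 'a)
    \<Rightarrow> (nat \<Rightarrow> int list \<Rightarrow> 'a list \<Rightarrow> 'a) \<Rightarrow> bool" where
  "filtered_minimal sc V F d nu \<longleftrightarrow>
     filtered_ainf_algebra sc V F d nu \<and>
     (\<exists>B :: int \<Rightarrow> int \<Rightarrow> 'a set.
        (\<forall>p q. module.subspace sc (B p q) \<and> B p q \<subseteq> V (p + q)) \<and>
        (\<forall>n. independent_family (\<lambda>q. B q (n - q))) \<and>
        (\<forall>p n. F p n = module.span sc (\<Union>q\<in>{p..}. B q (n - q)))) \<and>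
     (\<forall>p n. \<forall>x\<in>F p n. d n x \<in> F (p + 1) (n + 1))"

definition compositions :: "nat \<Rightarrow> nat list set" where
  "compositions n = {cs. sum_list cs = n \<and> 0 \<notin> set cs}"

fun blocks :: "nat list \<Rightarrow> 'b list \<Rightarrow> 'b list list" where
  "blocks [] xs = []"
| "blocks (i # is) xs = take i xs # blocks is (drop i xs)"

text \<open>Koszul sign exponent of (f_(i_1) (x) ... (x) f_(i_r)) applied to the blocks:
  sum_j (1 - i_j) * (total degree of the blocks before j).\<close>
fun koszul_exp :: "int \<Rightarrow> nat list \<Rightarrow> int list list \<Rightarrow> int" where
  "koszul_exp acc (i # is) (b # bs) = (1 - int i) * acc + koszul_exp (acc + sum_list b) is bs"
| "koszul_exp acc _ _ = 0"

definition keller_exp :: "nat list \<Rightarrow> int" where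
  "keller_exp cs = (\<Sum>j<length cs. (int (length cs) - 1 - int j) * (int (cs ! j) - 1))"

definition comp_sum ::
  "('k::field \<Rightarrow> 'b::ab_group_add \<Rightarrow> 'b) \<Rightarrow> (nat \<Rightarrow> int list \<Rightarrow> 'b list \<Rightarrow> 'b)
    \<Rightarrow> (nat \<Rightarrow> int list \<Rightarrow> 'a list \<Rightarrow> 'b) \<Rightarrow> nat \<Rightarrow> int list \<Rightarrow> 'a list \<Rightarrow> 'b" where
  "comp_sum sc m f n ds xs =
     (\<Sum>cs \<in> compositions n.
        let dbs = blocks cs ds; xbs = blocks cs xs in
        sc (psign (keller_exp cs + koszul_exp 0 cs dbs))
           (m (length cs)
              (map (\<lambda>(i, b). sum_list b + 1 - int i) (zip cs dbs))
              (map (\<lambda>(i, (db, xb)). f i db xb) (zip cs (zip dbs xbs)))))"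

definition filtered_ainf_morphism ::
  "('k::field \<Rightarrow> 'a::ab_group_add \<Rightarrow> 'a) \<Rightarrow> (int \<Rightarrow> 'a set) \<Rightarrow> (int \<Rightarrow> int \<Rightarrow> 'a set) \<Rightarrow> (int \<Rightarrow> 'a \<Rightarrow> 'a)
    \<Rightarrow> (nat \<Rightarrow> int list \<Rightarrow> 'a list \<Rightarrow> 'a)
    \<Rightarrow> (int \<Rightarrow> 'a set) \<Rightarrow> (int \<Rightarrow> int \<Rightarrow> 'a set) \<Rightarrow> (int \<Rightarrow> 'a \<Rightarrow> 'a)
    \<Rightarrow> (nat \<Rightarrow> int list \<Rightarrow> 'a list \<Rightarrow> 'a)
    \<Rightarrow> (nat \<Rightarrow> int list \<Rightarrow> 'a list \<Rightarrow> 'a) \<Rightarrow> bool" where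
  "filtered_ainf_morphism sc V FV dV nuV W FW dW nuW f \<longleftrightarrow>
     (\<forall>s\<ge>1. multilinear_op sc V sc W s (1 - int s) (f s)) \<and>
     (\<forall>s\<ge>1. filtered_op V FV FW s (1 - int s) (f s)) \<and>
     (\<forall>n\<ge>1. \<forall>ds xs. length ds = n \<longrightarrow> homog V ds xs \<longrightarrow>
        insert_sum sc f (ainf_ops dV nuV) n ds xs = comp_sum sc (ainf_ops dW nuW) f n ds xs)"

text \<open>F^p f_1 : F^p V -> F^p W induces a bijection in cohomology, for every p.\<close>
definition filtered_quasi_iso ::
  "(int \<Rightarrow> int \<Rightarrow> 'a::ab_group_add set) \<Rightarrow> (int \<Rightarrow> 'a \<Rightarrow> 'a) \<Rightarrow> (int \<Rightarrow> int \<Rightarrow> 'b::ab_group_add set) \<Rightarrow> (int \<Rightarrow> 'b \<Rightarrow> 'b)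
    \<Rightarrow> (int \<Rightarrow> 'a \<Rightarrow> 'b) \<Rightarrow> bool" where
  "filtered_quasi_iso FV dV FW dW g \<longleftrightarrow>
     (\<forall>p n. \<forall>y\<in>FW p n. dW n y = 0 \<longrightarrow>
        (\<exists>x\<in>FV p n. dV n x = 0 \<and> y - g n x \<in> dW (n - 1) ` FW p (n - 1))) \<and>
     (\<forall>p n. \<forall>x\<in>FV p n. dV n x = 0 \<longrightarrow> g n x \<in> dW (n - 1) ` FW p (n - 1) \<longrightarrow>
        x \<in> dV (n - 1) ` FV p (n - 1))"

definition filtered_minimal_model ::
  "('k::field \<Rightarrow> 'a::ab_group_add \<Rightarrow> 'a) \<Rightarrow> (int \<Rightarrow> 'a set) \<Rightarrow> (int \<Rightarrow> int \<Rightarrow> 'a set) \<Rightarrow> (int \<Rightarrow> 'a \<Rightarrow> 'a)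
    \<Rightarrow> (int \<Rightarrow> int \<Rightarrow> 'a \<Rightarrow> 'a \<Rightarrow> 'a)
    \<Rightarrow> (int \<Rightarrow> 'a set) \<Rightarrow> (int \<Rightarrow> int \<Rightarrow> 'a set) \<Rightarrow> (int \<Rightarrow> 'a \<Rightarrow> 'a)
    \<Rightarrow> (nat \<Rightarrow> int list \<Rightarrow> 'a list \<Rightarrow> 'a) \<Rightarrow> (nat \<Rightarrow> int list \<Rightarrow> 'a list \<Rightarrow> 'a) \<Rightarrow> bool" where
  "filtered_minimal_model sc A FA dA muA M FM dM nuM f \<longleftrightarrow>
     filtered_minimal sc M FM dM nuM \<and>
     filtered_ainf_morphism sc M FM dM nuM A FA dA (dg_nu muA) f \<and>
     filtered_quasi_iso FM dM FA dA (\<lambda>n x. f 1 [n] [x])"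

end

theory Submission
  imports Defs
begin


definition cmpl :: "('k::field \<Rightarrow> 'a::ab_group_add \<Rightarrow> 'a) \<Rightarrow> 'a set \<Rightarrow> 'a set \<Rightarrow> 'a set" where
  "cmpl sc U V = (SOME W. module.subspace sc W \<and> W \<subseteq> V \<and> U \<inter> W = {0} \<and> (\<forall>v\<in>V. \<exists>u\<in>U. \<exists>w\<in>W. v = u + w))"

context vector_space
begin

lemma span_indep_disjoint:
  assumes "independent B" "B1 \<subseteq> B" "B2 \<subseteq> B" "B1 \<inter> B2 = {}" "x \<in> span B1" "x \<in> span B2"
  shows "x = 0"
proof -
  have i1: "independent B1" using assms independent_mono by blast
  have e1: "representation B x = representation B1 x"
    by (rule representation_extend) (use assms in auto)
  have e2: "representation B x = representation B2 x"
    by (rule representation_extend) (use assms in auto)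
  have "\<forall>b. representation B1 x b = 0"
  proof
    fix b show "representation B1 x b = 0"
    proof (rule ccontr)
      assume h: "representation B1 x b \<noteq> 0"
      then have "b \<in> B1" using representation_ne_zero by blast
      moreover have "representation B2 x b \<noteq> 0" using h e1 e2 by simp
      then have "b \<in> B2" using representation_ne_zero by blast
      ultimately show False using assms(4) by blast
    qed
  qed
  then show "x = 0" using sum_nonzero_representation_eq[OF i1 assms(5)] by simp
qed

lemma complement_exists:
  assumes "subspace U" "subspace V" "U \<subseteq> V"
  shows "\<exists>W. subspace W \<and> W \<subseteq> V \<and> U \<inter> W = {0} \<and> (\<forall>v\<in>V. \<exists>u\<in>U. \<exists>w\<in>W. v = u + w)"
proof -
  obtain BU where BU: "BU \<subseteq> U" "independent BU" "U \<subseteq> span BU"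
    using maximal_independent_subset[of U] by blast
  obtain B where B: "BU \<subseteq> B" "B \<subseteq> V" "independent B" "V \<subseteq> span B"
    using maximal_independent_subset_extend[of BU V] BU assms(3) by blast
  define W where "W = span (B - BU)"
  have sU: "span BU = U" using BU assms(1) span_subspace by blast
  show ?thesis
  proof (intro exI conjI)
    show "subspace W" by (simp add: W_def)
    show "W \<subseteq> V" unfolding W_def using B assms(2) span_minimal by blast
    show "U \<inter> W = {0}"
    proof
      show "U \<inter> W \<subseteq> {0}"
      proof
        fix x assume "x \<in> U \<inter> W"
        then have "x = 0" using span_indep_disjoint[of B BU "B - BU" x] B sU W_def by auto
        then show "x \<in> {0}" by simp
      qed
      show "{0} \<subseteq> U \<inter> W" using assms(1) subspace_0 W_def span_zero by auto
    qed
    show "\<forall>v\<in>V. \<exists>u\<in>U. \<exists>w\<in>W. v = u + w"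
    proof
      fix v assume "v \<in> V"
      then have "v \<in> span (BU \<union> (B - BU))" using B by (metis Un_Diff_cancel Un_absorb1 subsetD)
      then show "\<exists>u\<in>U. \<exists>w\<in>W. v = u + w" unfolding span_Un using sU W_def by auto
    qed
  qed
qed

lemma cmpl:
  assumes "subspace U" "subspace V" "U \<subseteq> V"
  shows "subspace (cmpl scale U V)" "cmpl scale U V \<subseteq> V" "U \<inter> cmpl scale U V = {0}"
    "\<And>v. v \<in> V \<Longrightarrow> \<exists>u\<in>U. \<exists>w\<in>cmpl scale U V. v = u + w"
proof -
  have "subspace (cmpl scale U V) \<and> cmpl scale U V \<subseteq> V \<and> U \<inter> cmpl scale U V = {0} \<and> (\<forall>v\<in>V. \<exists>u\<in>U. \<exists>w\<in>cmpl scale U V. v = u + w)"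
    unfolding cmpl_def by (rule someI_ex) (rule complement_exists[OF assms])
  then show "subspace (cmpl scale U V)" "cmpl scale U V \<subseteq> V" "U \<inter> cmpl scale U V = {0}"
    "\<And>v. v \<in> V \<Longrightarrow> \<exists>u\<in>U. \<exists>w\<in>cmpl scale U V. v = u + w" by auto
qed

lemma compl_zero:
  assumes "subspace U" "subspace V" "U \<subseteq> V" "w \<in> cmpl scale U V" "w \<in> U"
  shows "w = 0"
  using cmpl(3)[OF assms(1-3)] assms(4,5) by blast

lemma dec_mono:
  fixes G :: "int \<Rightarrow> 'b set"
  assumes dec: "\<And>q. G (q+1) \<subseteq> G q" and "(q::int) \<le> q'"
  shows "G q' \<subseteq> G q"
  using assms(2)
proof (induction q' rule: int_ge_induct)
  case base then show ?case by simp
next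
  case (step i) then show ?case using dec[of i] by blast
qed

lemma strict_sum:
  fixes G Z :: "int \<Rightarrow> 'b set" and v :: "int \<Rightarrow> 'b"
  assumes dec: "\<And>q. G (q+1) \<subseteq> G q" and subG: "\<And>q. subspace (G q)"
    and ZG: "\<And>q. Z q \<subseteq> G q" and strict: "\<And>q z. z \<in> Z q \<Longrightarrow> z \<in> G (q+1) \<Longrightarrow> z = 0"
    and fin: "finite Q" and v: "\<And>q. q \<in> Q \<Longrightarrow> v q \<in> Z q"
    and s: "(\<Sum>q\<in>Q. v q) \<in> G p"
  shows "\<forall>q\<in>Q. q < p \<longrightarrow> v q = 0"
  using fin v s
proof (induction "card Q" arbitrary: Q rule: less_induct)
  case less
  show ?case
  proof (cases "Q = {}")
    case True then show ?thesis by simp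
  next
    case False
    define q0 where "q0 = Min Q"
    have q0Q: "q0 \<in> Q" using False less.prems(1) q0_def by simp
    have q0min: "\<And>q. q \<in> Q \<Longrightarrow> q0 \<le> q" using less.prems(1) q0_def by simp
    show ?thesis
    proof (cases "p \<le> q0")
      case True then show ?thesis using q0min by force
    next
      case False
      define Q' where "Q' = Q - {q0}"
      have fQ': "finite Q'" using less.prems(1) Q'_def by simp
      have sumQ: "(\<Sum>q\<in>Q. v q) = v q0 + (\<Sum>q\<in>Q'. v q)"
        using less.prems(1) q0Q Q'_def by (simp add: sum.remove)
      have rest: "(\<Sum>q\<in>Q'. v q) \<in> G (q0+1)"
      proof (rule subspace_sum[OF subG])
        fix q assume "q \<in> Q'"
        then have "q0 + 1 \<le> q" "q \<in> Q" using q0min Q'_def by force+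
        then show "v q \<in> G (q0+1)" using dec_mono[where G=G, OF dec, of "q0+1" q] ZG less.prems(2) by blast
      qed
      have inG: "(\<Sum>q\<in>Q. v q) \<in> G (q0+1)" using less.prems(3) dec_mono[where G=G, OF dec, of "q0+1" p] False by auto
      have "v q0 \<in> G (q0+1)"
        using subspace_diff[OF subG inG rest] sumQ by simp
      then have v0: "v q0 = 0" using strict less.prems(2)[OF q0Q] by blast
      have "card Q' < card Q" using less.prems(1) q0Q Q'_def by (metis card_Diff1_less)
      moreover have "(\<Sum>q\<in>Q'. v q) \<in> G p" using sumQ v0 less.prems(3) by simp
      ultimately have "\<forall>q\<in>Q'. q < p \<longrightarrow> v q = 0"
        using less.hyps[of Q'] fQ' less.prems(2) Q'_def by blast
      then show ?thesis using v0 Q'_def by blast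
    qed
  qed
qed

lemma span_UN_subspaces:
  assumes sub: "\<And>q. q \<in> I \<Longrightarrow> subspace (X q)"
    and x: "x \<in> span (\<Union>q\<in>I. X q)"
  shows "\<exists>Q v. finite Q \<and> Q \<subseteq> I \<and> (\<forall>q\<in>Q. v q \<in> X q) \<and> x = (\<Sum>q\<in>Q. v q)"
  using x
proof (induction rule: span_induct_alt)
  case base
  show ?case by (rule exI[of _ "{}"]) simp
next
  case (step c x y)
  then obtain Q v where Qv: "finite Q" "Q \<subseteq> I" "\<forall>q\<in>Q. v q \<in> X q" "y = (\<Sum>q\<in>Q. v q)" by blast
  from step obtain q0 where q0: "q0 \<in> I" "x \<in> X q0" by blast
  define v' where "v' = v(q0 := c *s x + (if q0 \<in> Q then v q0 else 0))"
  have "finite (insert q0 Q)" "insert q0 Q \<subseteq> I" using Qv q0 by auto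
  moreover have "\<forall>q\<in>insert q0 Q. v' q \<in> X q"
    using Qv q0 sub unfolding v'_def
    by (auto intro!: subspace_add subspace_scale subspace_0)
  moreover have "c *s x + y = (\<Sum>q\<in>insert q0 Q. v' q)"
  proof (cases "q0 \<in> Q")
    case True
    then have "(\<Sum>q\<in>insert q0 Q. v' q) = v' q0 + (\<Sum>q\<in>Q - {q0}. v' q)"
      using Qv by (simp add: sum.remove insert_absorb)
    also have "(\<Sum>q\<in>Q - {q0}. v' q) = (\<Sum>q\<in>Q - {q0}. v q)"
      by (rule sum.cong) (auto simp: v'_def)
    also have "v' q0 + (\<Sum>q\<in>Q - {q0}. v q) = c *s x + (v q0 + (\<Sum>q\<in>Q - {q0}. v q))"
      using True by (simp add: v'_def add.assoc)
    also have "v q0 + (\<Sum>q\<in>Q - {q0}. v q) = y" using Qv True by (simp add: sum.remove)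
    finally show ?thesis by simp
  next
    case False
    then have "(\<Sum>q\<in>insert q0 Q. v' q) = v' q0 + (\<Sum>q\<in>Q. v' q)" using Qv by simp
    also have "(\<Sum>q\<in>Q. v' q) = (\<Sum>q\<in>Q. v q)"
      by (rule sum.cong) (use False in \<open>auto simp: v'_def\<close>)
    finally show ?thesis using False Qv by (simp add: v'_def)
  qed
  ultimately show ?case by blast
qed

end


context vector_space
begin

lemma split_filtered_exists:
  fixes G X Y :: "int \<Rightarrow> 'b set"
  assumes dec: "\<And>q. G (q+1) \<subseteq> G q" and subG: "\<And>q. subspace (G q)"
    and bnd: "G P = {0}"
    and XG: "\<And>q. X q \<subseteq> G q" and YG: "\<And>q. Y q \<subseteq> G q"
    and spn: "\<And>q v. v \<in> G q \<Longrightarrow> \<exists>x\<in>X q. \<exists>y\<in>Y q. \<exists>g\<in>G (q+1). v = x + y + g"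
    and v: "v \<in> G p"
  shows "\<exists>x \<in> span (\<Union>q. X q) \<inter> G p. \<exists>y \<in> span (\<Union>q. Y q) \<inter> G p. v = x + y"
proof (cases "P \<le> p")
  case True
  then have "v = 0" using dec_mono[where G=G, OF dec True] bnd v by auto
  then show ?thesis using span_zero subspace_0[OF subG] by (metis IntI add_0)
next
  case False
  have main: "\<forall>v\<in>G (P - int m). \<exists>x \<in> span (\<Union>q. X q) \<inter> G (P - int m). \<exists>y \<in> span (\<Union>q. Y q) \<inter> G (P - int m). v = x + y" for m
  proof (induction m)
    case 0
    then show ?case using bnd span_zero subspace_0[OF subG] by auto
  next
    case (Suc m)
    show ?case
    proof
      fix v assume "v \<in> G (P - int (Suc m))"
      have e: "P - int (Suc m) + 1 = P - int m" by simp
      from spn[of v "P - int (Suc m)", unfolded e] \<open>v \<in> G (P - int (Suc m))\<close>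
      obtain x y g where xyg: "x \<in> X (P - int (Suc m))" "y \<in> Y (P - int (Suc m))"
        "g \<in> G (P - int m)" "v = x + y + g"
        by blast
      obtain x' y' where x'y': "x' \<in> span (\<Union>q. X q) \<inter> G (P - int m)" "y' \<in> span (\<Union>q. Y q) \<inter> G (P - int m)" "g = x' + y'"
        using Suc xyg(3) by blast
      have sub: "G (P - int m) \<subseteq> G (P - int (Suc m))" using dec[of "P - int (Suc m)"] e by simp
      have x1: "x \<in> span (\<Union>q. X q)" using xyg(1) by (meson UN_I UNIV_I span_base)
      have x2: "x \<in> G (P - int (Suc m))" using xyg(1) XG by blast
      have y1: "y \<in> span (\<Union>q. Y q)" using xyg(2) by (meson UN_I UNIV_I span_base)
      have y2: "y \<in> G (P - int (Suc m))" using xyg(2) YG by blast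
      have "x + x' \<in> span (\<Union>q. X q) \<inter> G (P - int (Suc m))"
        using x1 x2 x'y'(1) sub span_add subspace_add[OF subG] by blast
      moreover have "y + y' \<in> span (\<Union>q. Y q) \<inter> G (P - int (Suc m))"
        using y1 y2 x'y'(2) sub span_add subspace_add[OF subG] by blast
      moreover have "v = (x + x') + (y + y')" using xyg(4) x'y'(3) by (simp add: algebra_simps)
      ultimately show "\<exists>x \<in> span (\<Union>q. X q) \<inter> G (P - int (Suc m)). \<exists>y \<in> span (\<Union>q. Y q) \<inter> G (P - int (Suc m)). v = x + y"
        by blast
    qed
  qed
  have pe: "p = P - int (nat (P - p))" using False by simp
  show ?thesis using main[of "nat (P - p)", folded pe] v by blast
qed

lemma split_filtered_unique:
  fixes G X Y :: "int \<Rightarrow> 'b set"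
  assumes dec: "\<And>q. G (q+1) \<subseteq> G q" and subG: "\<And>q. subspace (G q)"
    and subX: "\<And>q. subspace (X q)" and subY: "\<And>q. subspace (Y q)"
    and XG: "\<And>q. X q \<subseteq> G q" and YG: "\<And>q. Y q \<subseteq> G q"
    and ind: "\<And>q x y g. x \<in> X q \<Longrightarrow> y \<in> Y q \<Longrightarrow> g \<in> G (q+1) \<Longrightarrow> x + y + g = 0 \<Longrightarrow> x = 0 \<and> y = 0"
    and x: "x \<in> span (\<Union>q. X q)" and y: "y \<in> span (\<Union>q. Y q)" and xy: "x + y = 0"
  shows "x = 0"
proof -
  obtain Q1 a where a: "finite Q1" "\<forall>q\<in>Q1. a q \<in> X q" "x = (\<Sum>q\<in>Q1. a q)"
    using span_UN_subspaces[of UNIV X x] subX x by auto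
  obtain Q2 b where b: "finite Q2" "\<forall>q\<in>Q2. b q \<in> Y q" "y = (\<Sum>q\<in>Q2. b q)"
    using span_UN_subspaces[of UNIV Y y] subY y by auto
  define Q where "Q = Q1 \<union> Q2"
  define a' where "a' q = (if q \<in> Q1 then a q else 0)" for q
  define b' where "b' q = (if q \<in> Q2 then b q else 0)" for q
  have fQ: "finite Q" using a b Q_def by simp
  have a'X: "a' q \<in> X q" for q using a subspace_0[OF subX] a'_def by auto
  have b'Y: "b' q \<in> Y q" for q using b subspace_0[OF subY] b'_def by auto
  have xa: "x = (\<Sum>q\<in>Q. a' q)"
    unfolding a(3) a'_def Q_def by (rule sum.mono_neutral_cong_left) (use a b in auto)
  have yb: "y = (\<Sum>q\<in>Q. b' q)"
    unfolding b(3) b'_def Q_def by (rule sum.mono_neutral_cong_left) (use a b in auto)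
  define Z where "Z q = {u + w |u w. u \<in> X q \<and> w \<in> Y q}" for q
  have ZG: "Z q \<subseteq> G q" for q unfolding Z_def using XG YG subspace_add[OF subG] by blast
  have strict: "z = 0" if zZ: "z \<in> Z q" and zG: "z \<in> G (q+1)" for q z
  proof -
    obtain u w where uw: "u \<in> X q" "w \<in> Y q" "z = u + w" using zZ unfolding Z_def by blast
    have "u + w + (- z) = 0" using uw by simp
    then have "u = 0 \<and> w = 0" using ind[OF uw(1,2) subspace_neg[OF subG zG]] by blast
    then show "z = 0" using uw by simp
  qed
  have sum0: "(\<Sum>q\<in>Q. a' q + b' q) = 0" using xa yb xy by (simp add: sum.distrib)
  define p where "p = (if Q = {} then 0 else Max Q + 1)"
  have inZ: "\<And>q. q \<in> Q \<Longrightarrow> a' q + b' q \<in> Z q" unfolding Z_def using a'X b'Y by blast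
  have s0: "(\<Sum>q\<in>Q. a' q + b' q) \<in> G p" unfolding sum0 by (rule subspace_0[OF subG])
  have "\<forall>q\<in>Q. q < p \<longrightarrow> a' q + b' q = 0"
    by (rule strict_sum[where G=G and Z=Z, OF dec subG ZG strict fQ inZ s0])
  moreover have "\<forall>q\<in>Q. q < p"
  proof
    fix q assume "q \<in> Q"
    then have "q \<le> Max Q" "Q \<noteq> {}" using fQ by auto
    then show "q < p" using p_def by simp
  qed
  ultimately have "\<forall>q\<in>Q. a' q = 0"
  proof (intro ballI)
    fix q assume "\<forall>q\<in>Q. q < p \<longrightarrow> a' q + b' q = 0" "\<forall>q\<in>Q. q < p" "q \<in> Q"
    then have "a' q + b' q + 0 = 0" by simp
    then show "a' q = 0" using ind[OF a'X b'Y subspace_0[OF subG]] by blast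
  qed
  then have "(\<Sum>q\<in>Q. a' q) = 0" by (rule sum.neutral)
  then show ?thesis using xa by simp
qed

end


context vector_space
begin

lemma lin_add: "linear_on scale scale V g \<Longrightarrow> x \<in> V \<Longrightarrow> y \<in> V \<Longrightarrow> g (x + y) = g x + g y"
  unfolding linear_on_def by blast
lemma lin_scale: "linear_on scale scale V g \<Longrightarrow> x \<in> V \<Longrightarrow> g (c *s x) = c *s g x"
  unfolding linear_on_def by blast
lemma lin_zero: "linear_on scale scale V g \<Longrightarrow> subspace V \<Longrightarrow> g 0 = 0"
  using lin_scale[of V g 0 0] subspace_0 by simp
lemma lin_neg: "linear_on scale scale V g \<Longrightarrow> x \<in> V \<Longrightarrow> g (- x) = - g x"
  using lin_scale[of V g x "-1"] by (simp add: scale_minus_left)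
lemma lin_diff: "linear_on scale scale V g \<Longrightarrow> subspace V \<Longrightarrow> x \<in> V \<Longrightarrow> y \<in> V \<Longrightarrow> g (x - y) = g x - g y"
proof -
  assume a: "linear_on scale scale V g" "subspace V" "x \<in> V" "y \<in> V"
  have "g (x + - y) = g x + g (- y)" using lin_add[OF a(1) a(3) subspace_neg[OF a(2) a(4)]] .
  also have "g (- y) = - g y" using lin_neg[OF a(1) a(4)] .
  finally show ?thesis by (simp only: diff_conv_add_uminus)
qed
lemma lin_sum: 
  assumes "linear_on scale scale V g" "subspace V" "\<And>i. i \<in> I \<Longrightarrow> f i \<in> V"
  shows "g (\<Sum>i\<in>I. f i) = (\<Sum>i\<in>I. g (f i))"
  using assms(3)
proof (induction I rule: infinite_finite_induct)
  case (infinite A) then show ?case using lin_zero[OF assms(1,2)] by simp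
next
  case empty then show ?case using lin_zero[OF assms(1,2)] by simp
next
  case (insert x F)
  have "(\<Sum>i\<in>F. f i) \<in> V" using insert subspace_sum[OF assms(2)] by blast
  then show ?case using insert lin_add[OF assms(1)] by simp
qed
lemma lin_image_subspace:
  assumes "linear_on scale scale V g" "subspace V" "subspace S" "S \<subseteq> V"
  shows "subspace (g ` S)"
  unfolding subspace_def
proof (intro conjI ballI allI)
  have "g 0 = 0" using lin_zero[OF assms(1,2)] .
  then show "0 \<in> g ` S" using subspace_0[OF assms(3)] by (metis image_eqI)
next
  fix x y assume "x \<in> g ` S" "y \<in> g ` S"
  then obtain a b where "a \<in> S" "b \<in> S" "x = g a" "y = g b" by blast
  have "a \<in> V" "b \<in> V" using \<open>a \<in> S\<close> \<open>b \<in> S\<close> assms(4) by auto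
  then have "x + y = g (a + b)" using lin_add[OF assms(1)] \<open>x = g a\<close> \<open>y = g b\<close> by simp
  moreover have "a + b \<in> S" using subspace_add[OF assms(3)] \<open>a \<in> S\<close> \<open>b \<in> S\<close> by blast
  ultimately show "x + y \<in> g ` S" by blast
next
  fix c x assume "x \<in> g ` S"
  then obtain a where "a \<in> S" "x = g a" by blast
  have "a \<in> V" using \<open>a \<in> S\<close> assms(4) by auto
  then have "c *s x = g (c *s a)" using lin_scale[OF assms(1)] \<open>x = g a\<close> by simp
  moreover have "c *s a \<in> S" using subspace_scale[OF assms(3)] \<open>a \<in> S\<close> by blast
  ultimately show "c *s x \<in> g ` S" by blast
qed

end

locale fdga = vector_space sc for sc :: "'k::field \<Rightarrow> 'a::ab_group_add \<Rightarrow> 'a" +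
  fixes A :: "int \<Rightarrow> 'a set" and F :: "int \<Rightarrow> int \<Rightarrow> 'a set" and d :: "int \<Rightarrow> 'a \<Rightarrow> 'a"
    and mu :: "int \<Rightarrow> int \<Rightarrow> 'a \<Rightarrow> 'a \<Rightarrow> 'a"
  assumes fdg: "filtered_dg_algebra sc A F d mu"
begin

lemma dga: "dg_algebra sc A d mu" using fdg unfolding filtered_dg_algebra_def by blast
lemma filt: "filtration sc A F" using fdg unfolding filtered_dg_algebra_def by blast

lemma A_sub: "subspace (A n)" using dga unfolding dg_algebra_def graded_space_def by simp
lemma d_lin: "linear_on sc sc (A n) (d n)" using dga unfolding dg_algebra_def by simp
lemma d_A: "x \<in> A n \<Longrightarrow> d n x \<in> A (n + 1)" using dga unfolding dg_algebra_def by simp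
lemma dd: "x \<in> A n \<Longrightarrow> d (n + 1) (d n x) = 0" using dga unfolding dg_algebra_def by simp
lemma F_sub: "subspace (F p n)" using filt unfolding filtration_def by simp
lemma F_A: "F p n \<subseteq> A n" using filt unfolding filtration_def by simp
lemma F_dec: "F (p + 1) n \<subseteq> F p n" using filt unfolding filtration_def by simp
lemma F_exh: "x \<in> A n \<Longrightarrow> \<exists>p. x \<in> F p n"
proof -
  assume x: "x \<in> A n"
  have "(\<Union>p. F p n) = A n" using filt unfolding filtration_def by simp
  then show ?thesis using x by blast
qed
lemma F_bnd: "\<exists>p. F p n = {0}" using filt unfolding filtration_def by simp
lemma d_F: "x \<in> F p n \<Longrightarrow> d n x \<in> F p (n + 1)" using fdg unfolding filtered_dg_algebra_def by simp
lemma F_mono: "p \<le> p' \<Longrightarrow> F p' n \<subseteq> F p n"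
  using dec_mono[where G="\<lambda>p. F p n", OF F_dec] by blast
lemma F_big: "F p n = {0} \<Longrightarrow> p \<le> p' \<Longrightarrow> F p' n = {0}"
  using F_mono[of p p' n] subspace_0[OF F_sub] by blast

lemma d_add: "x \<in> A n \<Longrightarrow> y \<in> A n \<Longrightarrow> d n (x + y) = d n x + d n y" using lin_add[OF d_lin] .
lemma d_scale: "x \<in> A n \<Longrightarrow> d n (sc c x) = sc c (d n x)" using lin_scale[OF d_lin] .
lemma d_zero[simp]: "d n 0 = 0" using lin_zero[OF d_lin A_sub] .
lemma d_neg: "x \<in> A n \<Longrightarrow> d n (- x) = - d n x" using lin_neg[OF d_lin] .
lemma d_diff: "x \<in> A n \<Longrightarrow> y \<in> A n \<Longrightarrow> d n (x - y) = d n x - d n y" using lin_diff[OF d_lin A_sub] .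

definition Zc :: "int \<Rightarrow> int \<Rightarrow> 'a set" where
  "Zc q n = {x \<in> F q n. d n x \<in> F (q + 1) (n + 1)}"

lemma Zc_sub: "subspace (Zc q n)"
  unfolding subspace_def Zc_def
proof (intro conjI ballI allI)
  show "0 \<in> {x \<in> F q n. d n x \<in> F (q + 1) (n + 1)}" using subspace_0[OF F_sub] by simp
next
  fix x y assume x: "x \<in> {x \<in> F q n. d n x \<in> F (q + 1) (n + 1)}" and y: "y \<in> {x \<in> F q n. d n x \<in> F (q + 1) (n + 1)}"
  then have "x \<in> A n" "y \<in> A n" using F_A by blast+
  then show "x + y \<in> {x \<in> F q n. d n x \<in> F (q + 1) (n + 1)}"
    using x y d_add subspace_add[OF F_sub] by auto
next
  fix c x assume x: "x \<in> {x \<in> F q n. d n x \<in> F (q + 1) (n + 1)}"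
  then have "x \<in> A n" using F_A by blast
  then show "sc c x \<in> {x \<in> F q n. d n x \<in> F (q + 1) (n + 1)}"
    using x d_scale subspace_scale[OF F_sub] by auto
qed

lemma Zc_F: "Zc q n \<subseteq> F q n" unfolding Zc_def by blast

definition Kq :: "int \<Rightarrow> int \<Rightarrow> 'a set" where
  "Kq q n = cmpl sc (Zc q n) (F q n)"

lemma Kq_sub: "subspace (Kq q n)" unfolding Kq_def using cmpl(1)[OF Zc_sub F_sub Zc_F] .
lemma Kq_F: "Kq q n \<subseteq> F q n" unfolding Kq_def using cmpl(2)[OF Zc_sub F_sub Zc_F] .
lemma Kq_A: "Kq q n \<subseteq> A n" using Kq_F F_A by blast
lemma Kq_split: "v \<in> F q n \<Longrightarrow> \<exists>u\<in>Zc q n. \<exists>w\<in>Kq q n. v = u + w"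
  unfolding Kq_def using cmpl(4)[OF Zc_sub F_sub Zc_F] .
lemma Kq_strict: "k \<in> Kq q n \<Longrightarrow> d n k \<in> F (q + 1) (n + 1) \<Longrightarrow> k = 0"
proof -
  assume k: "k \<in> Kq q n" "d n k \<in> F (q + 1) (n + 1)"
  then have "k \<in> Zc q n" using Kq_F Zc_def by blast
  then show "k = 0" using compl_zero[OF Zc_sub F_sub Zc_F] k(1) unfolding Kq_def by blast
qed

definition KK :: "int \<Rightarrow> 'a set" where "KK n = span (\<Union>q. Kq q n)"

lemma KK_A: "KK n \<subseteq> A n"
  unfolding KK_def by (rule span_minimal[OF _ A_sub]) (use Kq_A in blast)
lemma Kq_KK: "Kq q n \<subseteq> KK n"
proof
  fix x assume "x \<in> Kq q n"
  then have "x \<in> (\<Union>q. Kq q n)" by blast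
  then show "x \<in> KK n" unfolding KK_def by (rule span_base)
qed

lemma kval:
  assumes k: "k \<in> KK n" and dk: "d n k \<in> F p (n + 1)"
  shows "k \<in> F p n"
proof -
  have "\<exists>Q v. finite Q \<and> Q \<subseteq> UNIV \<and> (\<forall>q\<in>Q. v q \<in> Kq q n) \<and> k = (\<Sum>q\<in>Q. v q)"
    by (rule span_UN_subspaces[of UNIV "\<lambda>q. Kq q n" k, OF Kq_sub]) (use k in \<open>simp add: KK_def\<close>)
  then obtain Q v where Qv: "finite Q" "\<forall>q\<in>Q. v q \<in> Kq q n" "k = (\<Sum>q\<in>Q. v q)"
    by blast
  have vA: "\<And>q. q \<in> Q \<Longrightarrow> v q \<in> A n" using Qv Kq_A by blast
  have "d n k = (\<Sum>q\<in>Q. d n (v q))" unfolding Qv(3) by (rule lin_sum[OF d_lin A_sub vA])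
  then have s: "(\<Sum>q\<in>Q. d n (v q)) \<in> F p (n + 1)" using dk by simp
  have ZG: "\<And>q. d n ` Kq q n \<subseteq> F q (n + 1)"
  proof
    fix q x assume "x \<in> d n ` Kq q n"
    then obtain k where "k \<in> Kq q n" "x = d n k" by blast
    then show "x \<in> F q (n + 1)" using Kq_F d_F by blast
  qed
  have strict: "\<And>q z. z \<in> d n ` Kq q n \<Longrightarrow> z \<in> F (q + 1) (n + 1) \<Longrightarrow> z = 0"
  proof -
    fix q z assume "z \<in> d n ` Kq q n" "z \<in> F (q + 1) (n + 1)"
    then obtain k where "k \<in> Kq q n" "z = d n k" "d n k \<in> F (q + 1) (n + 1)" by blast
    then have "k = 0" using Kq_strict by blast
    then show "z = 0" using \<open>z = d n k\<close> by simp
  qed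
  have vZ: "\<And>q. q \<in> Q \<Longrightarrow> d n (v q) \<in> d n ` Kq q n" using Qv(2) by blast
  have "\<forall>q\<in>Q. q < p \<longrightarrow> d n (v q) = 0"
    using strict_sum[where G="\<lambda>q. F q (n+1)" and Z="\<lambda>q. d n ` Kq q n" and v="\<lambda>q. d n (v q)", OF F_dec F_sub ZG strict Qv(1) vZ s] .
  then have "\<forall>q\<in>Q. v q \<in> F p n"
  proof (intro ballI)
    fix q assume h: "\<forall>q\<in>Q. q < p \<longrightarrow> d n (v q) = 0" and q: "q \<in> Q"
    show "v q \<in> F p n"
    proof (cases "q < p")
      case True
      then have "d n (v q) = 0" using h q by blast
      then have "v q = 0" using Kq_strict[of "v q" q n] Qv(2) q subspace_0[OF F_sub] by simp
      then show ?thesis using subspace_0[OF F_sub] by simp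
    next
      case False
      then have "F q n \<subseteq> F p n" using F_mono[of p q n] by simp
      moreover have "v q \<in> F q n" using Kq_F Qv(2) q by blast
      ultimately show ?thesis by blast
    qed
  qed
  then show ?thesis unfolding Qv(3) by (intro subspace_sum[OF F_sub]) simp
qed

lemma kinj: "k \<in> KK n \<Longrightarrow> d n k = 0 \<Longrightarrow> k = 0"
proof -
  assume k: "k \<in> KK n" "d n k = 0"
  obtain p where p: "F p n = {0}" using F_bnd by blast
  have "d n k \<in> F p (n + 1)" using k(2) subspace_0[OF F_sub] by simp
  then have "k \<in> F p n" using kval[OF k(1)] by blast
  then show "k = 0" using p by blast
qed

end


context fdga
begin

definition Dq :: "int \<Rightarrow> int \<Rightarrow> 'a set" where "Dq q n = d (n - 1) ` Kq q (n - 1)"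

lemma Dq_sub: "subspace (Dq q n)"
  unfolding Dq_def by (rule lin_image_subspace[OF d_lin A_sub Kq_sub Kq_A])

lemma Dq_F: "Dq q n \<subseteq> F q n"
proof
  fix x assume "x \<in> Dq q n"
  then obtain k where k: "k \<in> Kq q (n - 1)" "x = d (n - 1) k" unfolding Dq_def by blast
  then have "k \<in> F q (n - 1)" using Kq_F by blast
  then have "d (n - 1) k \<in> F q (n - 1 + 1)" by (rule d_F)
  then show "x \<in> F q n" using k by simp
qed

lemma Dq_strict: "x \<in> Dq q n \<Longrightarrow> x \<in> F (q + 1) n \<Longrightarrow> x = 0"
proof -
  assume x: "x \<in> Dq q n" "x \<in> F (q + 1) n"
  then obtain k where k: "k \<in> Kq q (n - 1)" "x = d (n - 1) k" unfolding Dq_def by blast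
  then have "d (n - 1) k \<in> F (q + 1) (n - 1 + 1)" using x by simp
  then have "k = 0" using Kq_strict k(1) by blast
  then show "x = 0" using k by simp
qed

definition S3 :: "int \<Rightarrow> int \<Rightarrow> 'a set" where
  "S3 q n = {u + c |u c. u \<in> {a + b |a b. a \<in> F (q + 1) n \<and> b \<in> Kq q n} \<and> c \<in> Dq q n}"

lemma S3_sub: "subspace (S3 q n)"
  unfolding S3_def by (intro subspace_sums F_sub Kq_sub Dq_sub)

lemma S3_F: "S3 q n \<subseteq> F q n"
proof
  fix x assume "x \<in> S3 q n"
  then obtain a b c where abc: "a \<in> F (q + 1) n" "b \<in> Kq q n" "c \<in> Dq q n" "x = a + b + c"
    unfolding S3_def by blast
  have "a \<in> F q n" using abc(1) F_dec by blast
  moreover have "b \<in> F q n" using abc(2) Kq_F by blast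
  moreover have "c \<in> F q n" using abc(3) Dq_F by blast
  ultimately show "x \<in> F q n" using abc(4) subspace_add[OF F_sub] by metis
qed

definition Wq :: "int \<Rightarrow> int \<Rightarrow> 'a set" where "Wq q n = cmpl sc (S3 q n) (F q n)"

lemma Wq_sub: "subspace (Wq q n)" unfolding Wq_def using cmpl(1)[OF S3_sub F_sub S3_F] .
lemma Wq_F: "Wq q n \<subseteq> F q n" unfolding Wq_def using cmpl(2)[OF S3_sub F_sub S3_F] .
lemma Wq_split: "v \<in> F q n \<Longrightarrow> \<exists>u\<in>S3 q n. \<exists>w\<in>Wq q n. v = u + w"
  unfolding Wq_def using cmpl(4)[OF S3_sub F_sub S3_F] .
lemma Wq_zero: "w \<in> Wq q n \<Longrightarrow> w \<in> S3 q n \<Longrightarrow> w = 0"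
  unfolding Wq_def using compl_zero[OF S3_sub F_sub S3_F] by blast

definition Yq :: "int \<Rightarrow> int \<Rightarrow> 'a set" where
  "Yq q n = {k + w |k w. k \<in> Kq q n \<and> w \<in> Wq q n}"

lemma Yq_sub: "subspace (Yq q n)" unfolding Yq_def by (intro subspace_sums Kq_sub Wq_sub)

lemma Yq_F: "Yq q n \<subseteq> F q n"
proof
  fix x assume "x \<in> Yq q n"
  then obtain k w where kw: "k \<in> Kq q n" "w \<in> Wq q n" "x = k + w" unfolding Yq_def by blast
  have "k \<in> F q n" using kw(1) Kq_F by blast
  moreover have "w \<in> F q n" using kw(2) Wq_F by blast
  ultimately show "x \<in> F q n" using kw(3) subspace_add[OF F_sub] by metis
qed

lemma Kq_Yq: "Kq q n \<subseteq> Yq q n"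
proof
  fix k assume "k \<in> Kq q n"
  moreover have "0 \<in> Wq q n" using subspace_0[OF Wq_sub] .
  ultimately have "k + 0 \<in> Yq q n" unfolding Yq_def by blast
  then show "k \<in> Yq q n" by simp
qed

lemma split_ind:
  assumes x: "x \<in> Dq q n" and y: "y \<in> Yq q n" and g: "g \<in> F (q + 1) n" and s: "x + y + g = 0"
  shows "x = 0 \<and> y = 0"
proof -
  obtain k w where kw: "k \<in> Kq q n" "w \<in> Wq q n" "y = k + w" using y unfolding Yq_def by blast
  have "g + k \<in> {a + b |a b. a \<in> F (q + 1) n \<and> b \<in> Kq q n}" using g kw(1) by blast
  then have "(g + k) + x \<in> S3 q n" unfolding S3_def using x by blast
  then have "- ((g + k) + x) \<in> S3 q n" by (rule subspace_neg[OF S3_sub])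
  moreover have "w = - ((g + k) + x)" using s kw(3)
    by (simp add: algebra_simps eq_neg_iff_add_eq_0)
  ultimately have w0: "w = 0" using Wq_zero kw(2) by metis
  have xA: "x \<in> A n" using x Dq_F F_A by blast
  have kA: "k \<in> A n" using kw(1) Kq_A by blast
  have gA: "g \<in> A n" using g F_A by blast
  obtain k' where k': "k' \<in> Kq q (n - 1)" "x = d (n - 1) k'" using x unfolding Dq_def by blast
  have k'A: "k' \<in> A (n - 1)" using k'(1) Kq_A by blast
  have dx: "d n x = 0" using dd[OF k'A] k'(2) by simp
  have "x + k + g = 0" using s kw(3) w0 by simp
  then have "d n (x + k + g) = 0" by simp
  then have "d n x + d n k + d n g = 0" using d_add xA kA gA subspace_add[OF A_sub] by simp
  then have "d n k = - d n g" using dx by (simp add: eq_neg_iff_add_eq_0)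
  moreover have "d n g \<in> F (q + 1) (n + 1)" using g d_F by blast
  ultimately have "d n k \<in> F (q + 1) (n + 1)" using subspace_neg[OF F_sub] by simp
  then have k0: "k = 0" using Kq_strict kw(1) by blast
  then have "x = - g" using \<open>x + k + g = 0\<close> by (simp add: eq_neg_iff_add_eq_0)
  then have "x \<in> F (q + 1) n" using g subspace_neg[OF F_sub] by simp
  then have x0: "x = 0" using Dq_strict x by blast
  show ?thesis using x0 k0 w0 kw(3) by simp
qed

lemma split_spn: "v \<in> F q n \<Longrightarrow> \<exists>x\<in>Dq q n. \<exists>y\<in>Yq q n. \<exists>g\<in>F (q + 1) n. v = x + y + g"
proof -
  assume v: "v \<in> F q n"
  obtain u w where uw: "u \<in> S3 q n" "w \<in> Wq q n" "v = u + w" using Wq_split[OF v] by blast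
  obtain a b c where abc: "a \<in> F (q + 1) n" "b \<in> Kq q n" "c \<in> Dq q n" "u = a + b + c"
    using uw(1) unfolding S3_def by blast
  have "b + w \<in> Yq q n" unfolding Yq_def using abc(2) uw(2) by blast
  moreover have "v = c + (b + w) + a" using uw(3) abc(4) by (simp add: algebra_simps)
  ultimately show ?thesis using abc(1,3) by blast
qed

definition DD :: "int \<Rightarrow> 'a set" where "DD n = span (\<Union>q. Dq q n)"
definition YY :: "int \<Rightarrow> 'a set" where "YY n = span (\<Union>q. Yq q n)"

lemma DD_A: "DD n \<subseteq> A n"
  unfolding DD_def by (rule span_minimal[OF _ A_sub]) (use Dq_F F_A in blast)
lemma YY_A: "YY n \<subseteq> A n"
  unfolding YY_def by (rule span_minimal[OF _ A_sub]) (use Yq_F F_A in blast)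
lemma KK_YY: "KK n \<subseteq> YY n"
  unfolding KK_def YY_def by (rule span_mono) (use Kq_Yq in blast)

lemma decomp_ex:
  assumes "v \<in> F p n"
  shows "\<exists>x \<in> DD n \<inter> F p n. \<exists>y \<in> YY n \<inter> F p n. v = x + y"
proof -
  obtain P where P: "F P n = {0}" using F_bnd by blast
  show ?thesis unfolding DD_def YY_def
    by (rule split_filtered_exists[where G="\<lambda>q. F q n", OF F_dec F_sub P Dq_F Yq_F split_spn assms])
qed

lemma decomp_unique0:
  assumes "x \<in> DD n" "y \<in> YY n" "x + y = 0"
  shows "x = 0"
  by (rule split_filtered_unique[where G="\<lambda>q. F q n" and X="\<lambda>q. Dq q n" and Y="\<lambda>q. Yq q n",
        OF F_dec F_sub Dq_sub Yq_sub Dq_F Yq_F split_ind assms[unfolded DD_def YY_def]])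

lemma decomp_unique:
  assumes "x1 \<in> DD n" "y1 \<in> YY n" "x2 \<in> DD n" "y2 \<in> YY n" "x1 + y1 = x2 + y2"
  shows "x1 = x2"
proof -
  have "x1 - x2 \<in> DD n" unfolding DD_def using assms(1,3) span_diff unfolding DD_def by blast
  moreover have "y1 - y2 \<in> YY n" unfolding YY_def using assms(2,4) span_diff unfolding YY_def by blast
  moreover have "(x1 - x2) + (y1 - y2) = 0" using assms(5) by (simp add: algebra_simps)
  ultimately have "x1 - x2 = 0" by (rule decomp_unique0)
  then show ?thesis by simp
qed

definition Pi :: "int \<Rightarrow> 'a \<Rightarrow> 'a" where
  "Pi n v = (THE x. x \<in> DD n \<and> (\<exists>y\<in>YY n. v = x + y))"

lemma Pi_eq:
  assumes "x \<in> DD n" "y \<in> YY n" "v = x + y"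
  shows "Pi n v = x"
  unfolding Pi_def
proof (rule the_equality)
  show "x \<in> DD n \<and> (\<exists>y\<in>YY n. v = x + y)" using assms by blast
next
  fix x' assume "x' \<in> DD n \<and> (\<exists>y\<in>YY n. v = x' + y)"
  then obtain y' where "x' \<in> DD n" "y' \<in> YY n" "v = x' + y'" by blast
  then show "x' = x" using decomp_unique[of x' n y' x y] assms by simp
qed

lemma Pi_props:
  assumes "v \<in> F p n"
  shows "Pi n v \<in> DD n \<inter> F p n" "v - Pi n v \<in> YY n \<inter> F p n"
proof -
  obtain x y where xy: "x \<in> DD n \<inter> F p n" "y \<in> YY n \<inter> F p n" "v = x + y"
    using decomp_ex[OF assms] by blast
  have "Pi n v = x" using Pi_eq xy by blast
  then show "Pi n v \<in> DD n \<inter> F p n" "v - Pi n v \<in> YY n \<inter> F p n" using xy by auto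
qed

lemma Pi_DD: "v \<in> A n \<Longrightarrow> Pi n v \<in> DD n" using F_exh Pi_props(1) by blast
lemma Pi_YY: "v \<in> A n \<Longrightarrow> v - Pi n v \<in> YY n" using F_exh Pi_props(2) by blast
lemma Pi_F: "v \<in> F p n \<Longrightarrow> Pi n v \<in> F p n" using Pi_props(1) by blast
lemma Pi_id: "x \<in> DD n \<Longrightarrow> Pi n x = x" using Pi_eq[of x n 0 x] span_zero unfolding YY_def by simp
lemma Pi_K: "k \<in> KK n \<Longrightarrow> Pi n k = 0"
  using Pi_eq[of 0 n k k] span_zero KK_YY unfolding DD_def by auto

lemma Pi_lin: "linear_on sc sc (A n) (Pi n)"
  unfolding linear_on_def
proof (intro conjI ballI allI)
  fix x y assume x: "x \<in> A n" and y: "y \<in> A n"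
  have "Pi n x + Pi n y \<in> DD n" using Pi_DD[OF x] Pi_DD[OF y] span_add unfolding DD_def by blast
  moreover have "(x - Pi n x) + (y - Pi n y) \<in> YY n" using Pi_YY[OF x] Pi_YY[OF y] span_add unfolding YY_def by blast
  moreover have "x + y = (Pi n x + Pi n y) + ((x - Pi n x) + (y - Pi n y))" by (simp add: algebra_simps)
  ultimately show "Pi n (x + y) = Pi n x + Pi n y" by (rule Pi_eq)
next
  fix c x assume x: "x \<in> A n"
  have "sc c (Pi n x) \<in> DD n" using Pi_DD[OF x] span_scale unfolding DD_def by blast
  moreover have "sc c (x - Pi n x) \<in> YY n" using Pi_YY[OF x] span_scale unfolding YY_def by blast
  moreover have "sc c x = sc c (Pi n x) + sc c (x - Pi n x)" by (simp add: scale_right_diff_distrib)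
  ultimately show "Pi n (sc c x) = sc c (Pi n x)" by (rule Pi_eq)
qed

end


context vector_space
begin

lemma lin_span_image:
  assumes g: "linear_on scale scale V g" and V: "subspace V" and S: "S \<subseteq> V"
  shows "g ` span S = span (g ` S)"
proof
  have spV: "span S \<subseteq> V" using span_minimal[OF S V] .
  have "x \<in> V \<longrightarrow> g x \<in> span (g ` S)" if "x \<in> span S" for x
    using that
  proof (induction rule: span_induct_alt)
    case base then show ?case using lin_zero[OF g V] span_zero by simp
  next
    case (step c x y)
    show ?case
    proof
      assume cxy: "c *s x + y \<in> V"
      have xV: "x \<in> V" using step(1) S by blast
      then have "c *s x \<in> V" using subspace_scale[OF V] by blast
      then have "c *s x + y - c *s x \<in> V" using subspace_diff[OF V cxy] by blast
      then have yV: "y \<in> V" by simp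
      have "g (c *s x + y) = c *s g x + g y"
        using lin_add[OF g subspace_scale[OF V xV] yV] lin_scale[OF g xV] by simp
      moreover have "g x \<in> span (g ` S)" using step(1) by (simp add: span_base)
      moreover have "g y \<in> span (g ` S)" using step(2) yV by blast
      ultimately show "g (c *s x + y) \<in> span (g ` S)" by (simp add: span_add span_scale)
    qed
  qed
  then show "g ` span S \<subseteq> span (g ` S)" using spV by blast
next
  have "\<exists>x\<in>span S. g x = y" if "y \<in> span (g ` S)" for y
    using that
  proof (induction rule: span_induct_alt)
    case base then show ?case using lin_zero[OF g V] span_zero by metis
  next
    case (step c x y)
    then obtain s where s: "s \<in> S" "x = g s" by blast
    obtain x' where x': "x' \<in> span S" "g x' = y" using step(2) by blast
    have sV: "s \<in> V" using s S by blast
    have x'V: "x' \<in> V" using x' span_minimal[OF S V] by blast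
    have "g (c *s s + x') = c *s x + y"
      using lin_add[OF g subspace_scale[OF V sV] x'V] lin_scale[OF g sV] s x' by simp
    moreover have "c *s s + x' \<in> span S" using s x' by (simp add: span_add span_scale span_base)
    ultimately show ?case by blast
  qed
  then show "span (g ` S) \<subseteq> g ` span S" by blast
qed

end

context fdga
begin

lemma DD_eq: "DD n = d (n - 1) ` KK (n - 1)"
proof -
  have S: "(\<Union>q. Kq q (n - 1)) \<subseteq> A (n - 1)" using Kq_A by blast
  have "d (n - 1) ` KK (n - 1) = span (d (n - 1) ` (\<Union>q. Kq q (n - 1)))"
    unfolding KK_def by (rule lin_span_image[OF d_lin A_sub S])
  also have "d (n - 1) ` (\<Union>q. Kq q (n - 1)) = (\<Union>q. Dq q n)" unfolding Dq_def by blast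
  finally show ?thesis unfolding DD_def by simp
qed

lemma d_KK_DD: "k \<in> KK (n - 1) \<Longrightarrow> d (n - 1) k \<in> DD n" using DD_eq by blast
lemma DD_d: "y \<in> DD n \<Longrightarrow> \<exists>k\<in>KK (n - 1). d (n - 1) k = y"
  unfolding DD_eq by (simp add: image_iff eq_commute)

definition kap :: "int \<Rightarrow> 'a \<Rightarrow> 'a" where
  "kap n y = (THE k. k \<in> KK (n - 1) \<and> d (n - 1) k = y)"

lemma kap_eq: "k \<in> KK (n - 1) \<Longrightarrow> d (n - 1) k = y \<Longrightarrow> kap n y = k"
  unfolding kap_def
proof (rule the_equality)
  assume "k \<in> KK (n - 1)" "d (n - 1) k = y"
  then show "k \<in> KK (n - 1) \<and> d (n - 1) k = y" by blast
next
  fix k' assume k: "k \<in> KK (n - 1)" "d (n - 1) k = y" and k': "k' \<in> KK (n - 1) \<and> d (n - 1) k' = y"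
  have "k' - k \<in> KK (n - 1)" using k(1) k' span_diff unfolding KK_def by blast
  moreover have "d (n - 1) (k' - k) = 0" using d_diff k(1) k' KK_A k(2) by (metis diff_self subsetD)
  ultimately have "k' - k = 0" by (rule kinj)
  then show "k' = k" by simp
qed

lemma kap_props: "y \<in> DD n \<Longrightarrow> kap n y \<in> KK (n - 1) \<and> d (n - 1) (kap n y) = y"
  using DD_d kap_eq by metis

lemma kap_F: "y \<in> DD n \<Longrightarrow> y \<in> F p n \<Longrightarrow> kap n y \<in> F p (n - 1)"
  using kap_props kval[of "kap n y" "n - 1" p] by simp

lemma kap_zero: "kap n 0 = 0"
  using kap_eq[of 0 n 0] span_zero unfolding KK_def by simp

lemma kap_d: "k \<in> KK (n - 1) \<Longrightarrow> kap n (d (n - 1) k) = k" using kap_eq by blast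

lemma kap_add: "y1 \<in> DD n \<Longrightarrow> y2 \<in> DD n \<Longrightarrow> kap n (y1 + y2) = kap n y1 + kap n y2"
proof -
  assume y: "y1 \<in> DD n" "y2 \<in> DD n"
  have k1: "kap n y1 \<in> KK (n - 1)" "d (n - 1) (kap n y1) = y1" using kap_props[OF y(1)] by auto
  have k2: "kap n y2 \<in> KK (n - 1)" "d (n - 1) (kap n y2) = y2" using kap_props[OF y(2)] by auto
  have "kap n y1 + kap n y2 \<in> KK (n - 1)" using k1 k2 span_add unfolding KK_def by blast
  moreover have "d (n - 1) (kap n y1 + kap n y2) = y1 + y2"
    using d_add k1 k2 KK_A by (metis subsetD)
  ultimately show ?thesis using kap_eq by blast
qed

lemma kap_scale: "y \<in> DD n \<Longrightarrow> kap n (sc c y) = sc c (kap n y)"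
proof -
  assume y: "y \<in> DD n"
  have k: "kap n y \<in> KK (n - 1)" "d (n - 1) (kap n y) = y" using kap_props[OF y] by auto
  have "sc c (kap n y) \<in> KK (n - 1)" using k span_scale unfolding KK_def by blast
  moreover have "d (n - 1) (sc c (kap n y)) = sc c y"
    using d_scale k KK_A by (metis subsetD)
  ultimately show ?thesis using kap_eq by blast
qed

definition hh :: "int \<Rightarrow> 'a \<Rightarrow> 'a" where "hh n x = - kap n (Pi n x)"

lemma hh_KK: "x \<in> A n \<Longrightarrow> hh n x \<in> KK (n - 1)"
  unfolding hh_def using kap_props[OF Pi_DD] span_neg unfolding KK_def by blast

lemma hh_A: "x \<in> A n \<Longrightarrow> hh n x \<in> A (n - 1)" using hh_KK KK_A by blast

lemma hh_F: "x \<in> F p n \<Longrightarrow> hh n x \<in> F p (n - 1)"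
proof -
  assume x: "x \<in> F p n"
  have "Pi n x \<in> DD n" "Pi n x \<in> F p n" using Pi_props(1)[OF x] by auto
  then have "kap n (Pi n x) \<in> F p (n - 1)" by (rule kap_F)
  then show ?thesis unfolding hh_def by (rule subspace_neg[OF F_sub])
qed

lemma hh_lin: "linear_on sc sc (A n) (hh n)"
  unfolding linear_on_def
proof (intro conjI ballI allI)
  fix x y assume x: "x \<in> A n" and y: "y \<in> A n"
  show "hh n (x + y) = hh n x + hh n y"
    unfolding hh_def using lin_add[OF Pi_lin x y] kap_add[OF Pi_DD[OF x] Pi_DD[OF y]] by simp
next
  fix c x assume x: "x \<in> A n"
  show "hh n (sc c x) = sc c (hh n x)"
    unfolding hh_def using lin_scale[OF Pi_lin x] kap_scale[OF Pi_DD[OF x]] by (simp add: scale_minus_right)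
qed

lemma hh_K: "k \<in> KK n \<Longrightarrow> hh n k = 0"
  unfolding hh_def using Pi_K kap_zero by simp

lemma hh_dK: "k \<in> KK (n - 1) \<Longrightarrow> hh n (d (n - 1) k) = - k"
  unfolding hh_def using Pi_id[OF d_KK_DD] kap_d by simp

end


context fdga
begin

lemma hh_A': "y \<in> A (n + 1) \<Longrightarrow> hh (n + 1) y \<in> A n" using hh_A[of y "n + 1"] by simp
lemma hh_F': "y \<in> F p (n + 1) \<Longrightarrow> hh (n + 1) y \<in> F p n" using hh_F[of y p "n + 1"] by simp
lemma d_A': "y \<in> A (n - 1) \<Longrightarrow> d (n - 1) y \<in> A n" using d_A[of y "n - 1"] by simp
lemma d_F': "y \<in> F p (n - 1) \<Longrightarrow> d (n - 1) y \<in> F p n" using d_F[of y p "n - 1"] by simp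
lemma dd': "y \<in> A (n - 1) \<Longrightarrow> d n (d (n - 1) y) = 0" using dd[of y "n - 1"] by simp
lemma hh_zero[simp]: "hh n 0 = 0" using lin_zero[OF hh_lin A_sub] .
lemma hh_add: "x \<in> A n \<Longrightarrow> y \<in> A n \<Longrightarrow> hh n (x + y) = hh n x + hh n y" using lin_add[OF hh_lin] .
lemma hh_scale: "x \<in> A n \<Longrightarrow> hh n (sc c x) = sc c (hh n x)" using lin_scale[OF hh_lin] .
lemma hh_K': "k \<in> KK n \<Longrightarrow> hh (n + 1) (d n k) = - k" using hh_dK[of k "n + 1"] by simp

definition PP :: "int \<Rightarrow> 'a \<Rightarrow> 'a" where
  "PP n x = x + d (n - 1) (hh n x) + hh (n + 1) (d n x)"

lemma PP_A: "x \<in> A n \<Longrightarrow> PP n x \<in> A n"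
  unfolding PP_def using d_A' hh_A hh_A' d_A subspace_add[OF A_sub] by metis

lemma PP_F: "x \<in> F p n \<Longrightarrow> PP n x \<in> F p n"
  unfolding PP_def using d_F' hh_F hh_F' d_F subspace_add[OF F_sub] by metis

lemma PP_homotopy: "PP n x - x = d (n - 1) (hh n x) + hh (n + 1) (d n x)"
  unfolding PP_def by (simp add: algebra_simps)

lemma PP_lin: "linear_on sc sc (A n) (PP n)"
  unfolding linear_on_def
proof (intro conjI ballI allI)
  fix x y assume x: "x \<in> A n" and y: "y \<in> A n"
  have hx: "hh n x \<in> A (n - 1)" "hh n y \<in> A (n - 1)" using hh_A x y by auto
  have dx: "d n x \<in> A (n + 1)" "d n y \<in> A (n + 1)" using d_A x y by auto
  show "PP n (x + y) = PP n x + PP n y"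
    unfolding PP_def using hh_add[OF x y] d_add[OF x y] d_add[OF hx] hh_add[OF dx] by (simp add: algebra_simps)
next
  fix c x assume x: "x \<in> A n"
  have hx: "hh n x \<in> A (n - 1)" using hh_A x by auto
  have dx: "d n x \<in> A (n + 1)" using d_A x by auto
  show "PP n (sc c x) = sc c (PP n x)"
    unfolding PP_def using hh_scale[OF x] d_scale[OF x] d_scale[OF hx] hh_scale[OF dx]
    by (simp add: scale_right_distrib)
qed

lemma PP_chain: "x \<in> A n \<Longrightarrow> PP (n + 1) (d n x) = d n (PP n x)"
proof -
  assume x: "x \<in> A n"
  have hx: "hh n x \<in> A (n - 1)" using hh_A x by auto
  have dx: "d n x \<in> A (n + 1)" using d_A x by auto
  have dhx: "d (n - 1) (hh n x) \<in> A n" using d_A' hx by auto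
  have hdx: "hh (n + 1) (d n x) \<in> A n" using hh_A' dx by auto
  have "PP (n + 1) (d n x) = d n x + d n (hh (n + 1) (d n x))"
    unfolding PP_def using dd[OF x] by simp
  moreover have "d n (PP n x) = d n x + d n (d (n - 1) (hh n x)) + d n (hh (n + 1) (d n x))"
    unfolding PP_def using d_add x dhx hdx subspace_add[OF A_sub] by metis
  ultimately show ?thesis using dd'[OF hx] by simp
qed

lemma hh_PP: "x \<in> A n \<Longrightarrow> hh n (PP n x) = 0"
proof -
  assume x: "x \<in> A n"
  have hx: "hh n x \<in> KK (n - 1)" using hh_KK x by auto
  have hxA: "hh n x \<in> A (n - 1)" using hh_A x by auto
  have dx: "d n x \<in> A (n + 1)" using d_A x by auto
  have dhx: "d (n - 1) (hh n x) \<in> A n" using d_A' hxA by auto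
  have hdx: "hh (n + 1) (d n x) \<in> A n" using hh_A' dx by auto
  have hdxK: "hh (n + 1) (d n x) \<in> KK n" using hh_KK[OF dx] by simp
  have "hh n (PP n x) = hh n x + hh n (d (n - 1) (hh n x)) + hh n (hh (n + 1) (d n x))"
    unfolding PP_def using hh_add x dhx hdx subspace_add[OF A_sub] by metis
  then show ?thesis using hh_dK[OF hx] hh_K[OF hdxK] by simp
qed

lemma PP_idem: "x \<in> A n \<Longrightarrow> PP n (PP n x) = PP n x"
proof -
  assume x: "x \<in> A n"
  have "hh n (PP n x) = 0" using hh_PP[OF x] .
  moreover have "d n (PP n x) = PP (n + 1) (d n x)" using PP_chain[OF x] by simp
  moreover have "hh (n + 1) (PP (n + 1) (d n x)) = 0" using hh_PP d_A x by blast
  ultimately show ?thesis unfolding PP_def[of n "PP n x"] by simp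
qed

lemma PP_dK: "k \<in> KK n \<Longrightarrow> PP (n + 1) (d n k) = 0"
proof -
  assume k: "k \<in> KK n"
  have kA: "k \<in> A n" using k KK_A by blast
  show ?thesis unfolding PP_def using hh_K'[OF k] dd[OF kA] d_neg[OF kA] by simp
qed

definition M :: "int \<Rightarrow> 'a set" where "M n = {x \<in> A n. PP n x = x}"

lemma M_A: "M n \<subseteq> A n" unfolding M_def by blast
lemma M_sub: "subspace (M n)"
  unfolding subspace_def M_def
proof (intro conjI ballI allI)
  show "0 \<in> {x \<in> A n. PP n x = x}" using subspace_0[OF A_sub] lin_zero[OF PP_lin A_sub] by simp
next
  fix x y assume x: "x \<in> {x \<in> A n. PP n x = x}" and y: "y \<in> {x \<in> A n. PP n x = x}"
  then show "x + y \<in> {x \<in> A n. PP n x = x}" using lin_add[OF PP_lin] subspace_add[OF A_sub] by auto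
next
  fix c x assume x: "x \<in> {x \<in> A n. PP n x = x}"
  then show "sc c x \<in> {x \<in> A n. PP n x = x}" using lin_scale[OF PP_lin] subspace_scale[OF A_sub] by auto
qed
lemma PP_M: "x \<in> A n \<Longrightarrow> PP n x \<in> M n" unfolding M_def using PP_A PP_idem by blast
lemma M_PP: "x \<in> M n \<Longrightarrow> PP n x = x" unfolding M_def by blast
lemma d_M: "x \<in> M n \<Longrightarrow> d n x \<in> M (n + 1)"
  unfolding M_def using PP_chain d_A by auto

lemma M_minimal: "x \<in> F p n \<Longrightarrow> x \<in> M n \<Longrightarrow> d n x \<in> F (p + 1) (n + 1)"
proof -
  assume x: "x \<in> F p n" "x \<in> M n"
  obtain u w where uw: "u \<in> Zc p n" "w \<in> Kq p n" "x = u + w" using Kq_split[OF x(1)] by blast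
  have uA: "u \<in> A n" using uw(1) Zc_F F_A by blast
  have wA: "w \<in> A n" using uw(2) Kq_A by blast
  have wK: "w \<in> KK n" using uw(2) Kq_KK by blast
  have du: "d n u \<in> F (p + 1) (n + 1)" using uw(1) unfolding Zc_def by blast
  have "d n x = PP (n + 1) (d n x)" using PP_chain M_PP x(2) M_A by (metis subsetD)
  also have "\<dots> = PP (n + 1) (d n u) + PP (n + 1) (d n w)"
    using uw(3) d_add[OF uA wA] lin_add[OF PP_lin d_A[OF uA] d_A[OF wA]] by simp
  also have "PP (n + 1) (d n w) = 0" using PP_dK[OF wK] .
  finally show ?thesis using PP_F[OF du] by simp
qed

lemma qi_surj:
  assumes y: "y \<in> F p n" "d n y = 0"
  shows "\<exists>x\<in>F p n \<inter> M n. d n x = 0 \<and> y - x \<in> d (n - 1) ` F p (n - 1)"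
proof -
  have yA: "y \<in> A n" using y F_A by blast
  have "PP n y \<in> F p n \<inter> M n" using PP_F[OF y(1)] PP_M[OF yA] by blast
  moreover have "d n (PP n y) = 0" using PP_chain[OF yA] y(2) lin_zero[OF PP_lin A_sub] by simp
  moreover have "y - PP n y = d (n - 1) (- hh n y)"
  proof -
    have "PP n y - y = d (n - 1) (hh n y)" using PP_homotopy[of n y] y(2) hh_zero by simp
    then show ?thesis using d_neg hh_A yA by (metis minus_diff_eq)
  qed
  moreover have "- hh n y \<in> F p (n - 1)" using hh_F[OF y(1)] subspace_neg[OF F_sub] by blast
  ultimately show ?thesis by blast
qed

lemma qi_inj:
  assumes x: "x \<in> F p n" "x \<in> M n" "a \<in> F p (n - 1)" "x = d (n - 1) a"
  shows "\<exists>b\<in>F p (n - 1) \<inter> M (n - 1). x = d (n - 1) b"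
proof -
  have aA: "a \<in> A (n - 1)" using x(3) F_A by blast
  have "x = PP n x" using M_PP x(2) by simp
  also have "\<dots> = d (n - 1) (PP (n - 1) a)" using PP_chain[OF aA] x(4) by simp
  finally show ?thesis using PP_F[OF x(3)] PP_M[OF aA] by blast
qed

end


context vector_space
begin

lemma bigrading_span:
  fixes G :: "int \<Rightarrow> 'b set"
  assumes dec: "\<And>q. G (q+1) \<subseteq> G q" and subG: "\<And>q. subspace (G q)" and bnd: "G P = {0}"
  shows "G p = span (\<Union>q\<in>{p..}. cmpl scale (G (q+1)) (G q))"
proof
  show "span (\<Union>q\<in>{p..}. cmpl scale (G (q+1)) (G q)) \<subseteq> G p"
  proof (rule span_minimal[OF _ subG])
    show "(\<Union>q\<in>{p..}. cmpl scale (G (q+1)) (G q)) \<subseteq> G p"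
    proof
      fix x assume "x \<in> (\<Union>q\<in>{p..}. cmpl scale (G (q+1)) (G q))"
      then obtain q where q: "p \<le> q" "x \<in> cmpl scale (G (q+1)) (G q)" by auto
      then have "x \<in> G q" using cmpl(2)[OF subG subG dec] by blast
      then show "x \<in> G p" using dec_mono[where G=G, OF dec q(1)] by blast
    qed
  qed
next
  show "G p \<subseteq> span (\<Union>q\<in>{p..}. cmpl scale (G (q+1)) (G q))"
  proof (cases "P \<le> p")
    case True
    then have "G p = {0}" using dec_mono[where G=G, OF dec True] bnd subspace_0[OF subG] by blast
    then show ?thesis using span_zero by simp
  next
    case False
    have main: "\<forall>x\<in>G (P - int m). x \<in> span (\<Union>q\<in>{P - int m..}. cmpl scale (G (q+1)) (G q))" for m
    proof (induction m)
      case 0 then show ?case using bnd span_zero by simp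
    next
      case (Suc m)
      show ?case
      proof
        fix x assume x: "x \<in> G (P - int (Suc m))"
        have e: "P - int (Suc m) + 1 = P - int m" by simp
        have "\<exists>u\<in>G (P - int (Suc m) + 1). \<exists>w\<in>cmpl scale (G (P - int (Suc m) + 1)) (G (P - int (Suc m))). x = u + w"
          by (rule cmpl(4)[OF subG subG dec x])
        then obtain u w where uw: "u \<in> G (P - int m)" "w \<in> cmpl scale (G (P - int m)) (G (P - int (Suc m)))" "x = u + w"
          unfolding e by blast
        have sub: "(\<Union>q\<in>{P - int m..}. cmpl scale (G (q+1)) (G q)) \<subseteq> (\<Union>q\<in>{P - int (Suc m)..}. cmpl scale (G (q+1)) (G q))"
          by (rule UN_mono) auto
        have "u \<in> span (\<Union>q\<in>{P - int (Suc m)..}. cmpl scale (G (q+1)) (G q))"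
          using Suc uw(1) span_mono[OF sub] by blast
        moreover have "w \<in> (\<Union>q\<in>{P - int (Suc m)..}. cmpl scale (G (q+1)) (G q))"
          using uw(2) e by (metis UN_iff atLeast_iff order_refl)
        then have "w \<in> span (\<Union>q\<in>{P - int (Suc m)..}. cmpl scale (G (q+1)) (G q))" by (rule span_base)
        ultimately show "x \<in> span (\<Union>q\<in>{P - int (Suc m)..}. cmpl scale (G (q+1)) (G q))"
          using uw(3) span_add by blast
      qed
    qed
    have pe: "p = P - int (nat (P - p))" using False by simp
    show ?thesis using main[of "nat (P - p)", folded pe] by blast
  qed
qed

lemma bigrading_indep:
  fixes G :: "int \<Rightarrow> 'b set"
  assumes dec: "\<And>q. G (q+1) \<subseteq> G q" and subG: "\<And>q. subspace (G q)"
  shows "independent_family (\<lambda>q. cmpl scale (G (q+1)) (G q))"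
  unfolding independent_family_def
proof (intro allI impI)
  fix Q :: "int set" and x :: "int \<Rightarrow> 'b"
  assume fQ: "finite Q" and xQ: "\<forall>q\<in>Q. x q \<in> cmpl scale (G (q+1)) (G q)" and s: "(\<Sum>q\<in>Q. x q) = 0"
  define p where "p = (if Q = {} then 0 else Max Q + 1)"
  have ZG: "\<And>q. cmpl scale (G (q+1)) (G q) \<subseteq> G q" using cmpl(2)[OF subG subG dec] by blast
  have strict: "\<And>q z. z \<in> cmpl scale (G (q+1)) (G q) \<Longrightarrow> z \<in> G (q+1) \<Longrightarrow> z = 0"
    using compl_zero[OF subG subG dec] by blast
  have s0: "(\<Sum>q\<in>Q. x q) \<in> G p" using s subspace_0[OF subG] by simp
  have xQ': "\<And>q. q \<in> Q \<Longrightarrow> x q \<in> cmpl scale (G (q+1)) (G q)" using xQ by blast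
  have "\<forall>q\<in>Q. q < p \<longrightarrow> x q = 0"
    using strict_sum[where G=G and Z="\<lambda>q. cmpl scale (G (q+1)) (G q)", OF dec subG ZG strict fQ xQ' s0] .
  moreover have "\<forall>q\<in>Q. q < p"
  proof
    fix q assume "q \<in> Q"
    then have "q \<le> Max Q" "Q \<noteq> {}" using fQ by auto
    then show "q < p" using p_def by simp
  qed
  ultimately show "\<forall>q\<in>Q. x q = 0" by blast
qed

end

context fdga
begin

definition FM :: "int \<Rightarrow> int \<Rightarrow> 'a set" where "FM p n = F p n \<inter> M n"

lemma FM_sub: "subspace (FM p n)" unfolding FM_def by (rule subspace_inter[OF F_sub M_sub])
lemma FM_dec: "FM (p + 1) n \<subseteq> FM p n" unfolding FM_def using F_dec by blast
lemma FM_M: "FM p n \<subseteq> M n" unfolding FM_def by blast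
lemma FM_bnd: "\<exists>p. FM p n = {0}"
proof -
  obtain p where "F p n = {0}" using F_bnd by blast
  then have "FM p n = {0}" unfolding FM_def using subspace_0[OF M_sub] by blast
  then show ?thesis by blast
qed

definition BBq :: "int \<Rightarrow> int \<Rightarrow> 'a set" where "BBq q n = cmpl sc (FM (q + 1) n) (FM q n)"

lemma BBq_sub: "subspace (BBq q n)" unfolding BBq_def using cmpl(1)[OF FM_sub FM_sub FM_dec] .
lemma BBq_M: "BBq q n \<subseteq> M n" unfolding BBq_def using cmpl(2)[OF FM_sub FM_sub FM_dec] FM_M by blast
lemma FM_span: "FM p n = span (\<Union>q\<in>{p..}. BBq q n)"
proof -
  obtain P where "FM P n = {0}" using FM_bnd by blast
  then show ?thesis unfolding BBq_def
    by (rule bigrading_span[where G="\<lambda>q. FM q n", OF FM_dec FM_sub])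
qed
lemma BBq_indep: "independent_family (\<lambda>q. BBq q n)"
  unfolding BBq_def by (rule bigrading_indep[where G="\<lambda>q. FM q n", OF FM_dec FM_sub])

end


lemma homog_take: "homog V ds xs \<Longrightarrow> homog V (take k ds) (take k xs)"
  unfolding homog_def by auto
lemma homog_drop: "homog V ds xs \<Longrightarrow> homog V (drop k ds) (drop k xs)"
  unfolding homog_def by auto
lemma homog_append: "homog V ds xs \<Longrightarrow> homog V es ys \<Longrightarrow> homog V (ds @ es) (xs @ ys)"
  unfolding homog_def by (auto simp: nth_append)
lemma homog_single: "x \<in> V e \<Longrightarrow> homog V [e] [x]"
  unfolding homog_def by auto
lemma homog_length: "homog V ds xs \<Longrightarrow> length xs = length ds"
  unfolding homog_def by auto
lemma homog_hd: "homog V ds xs \<Longrightarrow> length ds = 1 \<Longrightarrow> hd xs \<in> V (hd ds)"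
  unfolding homog_def by (cases ds; cases xs) auto
lemma homog_nth: "homog V ds xs \<Longrightarrow> i < length ds \<Longrightarrow> xs ! i \<in> V (ds ! i)"
  unfolding homog_def by auto
lemma sum_list_one: "length ds = 1 \<Longrightarrow> sum_list ds = hd ds"
  by (cases ds) auto

lemma psign_add: "psign (a + b) = (psign a * psign b :: 'k::field)"
  unfolding psign_def by auto
lemma psign_sq: "psign a * psign a = (1 :: 'k::field)"
  unfolding psign_def by auto
lemma psign_even: "even a \<Longrightarrow> psign a = (1 :: 'k::field)"
  unfolding psign_def by auto
lemma psign_cong: "even (a - b) \<Longrightarrow> psign a = (psign b :: 'k::field)"
  unfolding psign_def by auto
lemma psign_anti: "odd (a - b) \<Longrightarrow> psign a = - (psign b :: 'k::field)"
  unfolding psign_def by auto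

locale xfer = vector_space sc for sc :: "'k::field \<Rightarrow> 'a::ab_group_add \<Rightarrow> 'a" +
  fixes A :: "int \<Rightarrow> 'a set" and d :: "int \<Rightarrow> 'a \<Rightarrow> 'a"
    and mu :: "int \<Rightarrow> int \<Rightarrow> 'a \<Rightarrow> 'a \<Rightarrow> 'a"
    and M :: "int \<Rightarrow> 'a set" and P :: "int \<Rightarrow> 'a \<Rightarrow> 'a" and h :: "int \<Rightarrow> 'a \<Rightarrow> 'a"
  assumes dga: "dg_algebra sc A d mu"
    and M_sub: "subspace (M n)" and M_A: "M n \<subseteq> A n" and d_M: "x \<in> M n \<Longrightarrow> d n x \<in> M (n + 1)"
    and P_lin: "linear_on sc sc (A n) (P n)" and P_M: "x \<in> A n \<Longrightarrow> P n x \<in> M n"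
    and P_chain: "x \<in> A n \<Longrightarrow> P (n + 1) (d n x) = d n (P n x)"
    and h_lin: "linear_on sc sc (A n) (h n)" and h_A: "x \<in> A n \<Longrightarrow> h n x \<in> A (n - 1)"
    and homot: "x \<in> A n \<Longrightarrow> P n x - x = d (n - 1) (h n x) + h (n + 1) (d n x)"
begin

lemma A_sub: "subspace (A n)" using dga unfolding dg_algebra_def graded_space_def by simp
lemma d_lin: "linear_on sc sc (A n) (d n)" using dga unfolding dg_algebra_def by simp
lemma d_A: "x \<in> A n \<Longrightarrow> d n x \<in> A (n + 1)" using dga unfolding dg_algebra_def by simp
lemma mu_A: "x \<in> A n \<Longrightarrow> y \<in> A m \<Longrightarrow> mu n m x y \<in> A (n + m)" using dga unfolding dg_algebra_def by simp
lemma mu_lin1: "y \<in> A m \<Longrightarrow> linear_on sc sc (A n) (\<lambda>x. mu n m x y)" using dga unfolding dg_algebra_def by simp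
lemma mu_lin2: "x \<in> A n \<Longrightarrow> linear_on sc sc (A m) (\<lambda>y. mu n m x y)" using dga unfolding dg_algebra_def by simp
lemma dd: "x \<in> A n \<Longrightarrow> d (n + 1) (d n x) = 0" using dga unfolding dg_algebra_def by simp
lemma leibniz: "x \<in> A n \<Longrightarrow> y \<in> A m \<Longrightarrow>
    d (n + m) (mu n m x y) = mu (n + 1) m (d n x) y + sc (psign n) (mu n (m + 1) x (d m y))"
  using dga unfolding dg_algebra_def by simp
lemma assoc: "x \<in> A n \<Longrightarrow> y \<in> A m \<Longrightarrow> z \<in> A k \<Longrightarrow>
    mu (n + m) k (mu n m x y) z = mu n (m + k) x (mu m k y z)"
  using dga unfolding dg_algebra_def by simp

function ff :: "nat \<Rightarrow> int list \<Rightarrow> 'a list \<Rightarrow> 'a" where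
  "ff n ds xs = (if n \<le> 1 then hd xs else
     h (sum_list ds + 2 - int n)
       (\<Sum>k\<in>{1..<n}. sc (psign (int k - 1 + (1 - int (n - k)) * sum_list (take k ds)))
          (mu (sum_list (take k ds) + 1 - int k) (sum_list (drop k ds) + 1 - int (n - k))
             (ff k (take k ds) (take k xs)) (ff (n - k) (drop k ds) (drop k xs)))))"
  by pat_completeness auto
termination by (relation "measure (\<lambda>(n, ds, xs). n)") auto

declare ff.simps[simp del]

definition Lam :: "nat \<Rightarrow> int list \<Rightarrow> 'a list \<Rightarrow> 'a" where
  "Lam n ds xs = (\<Sum>k\<in>{1..<n}. sc (psign (int k - 1 + (1 - int (n - k)) * sum_list (take k ds)))
          (mu (sum_list (take k ds) + 1 - int k) (sum_list (drop k ds) + 1 - int (n - k))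
             (ff k (take k ds) (take k xs)) (ff (n - k) (drop k ds) (drop k xs))))"

lemma ff_1: "n \<le> 1 \<Longrightarrow> ff n ds xs = hd xs" by (simp add: ff.simps)
lemma ff_ge2: "2 \<le> n \<Longrightarrow> ff n ds xs = h (sum_list ds + 2 - int n) (Lam n ds xs)"
  by (simp add: ff.simps Lam_def)
lemma Lam_le1: "n \<le> 1 \<Longrightarrow> Lam n ds xs = 0" by (simp add: Lam_def)

definition nu :: "nat \<Rightarrow> int list \<Rightarrow> 'a list \<Rightarrow> 'a" where
  "nu n ds xs = P (sum_list ds + 2 - int n) (Lam n ds xs)"

abbreviation ops where "ops \<equiv> ainf_ops d nu"

lemma mem:
  assumes "homog M ds xs" "length ds = n" "1 \<le> n"
  shows "ff n ds xs \<in> A (sum_list ds + 1 - int n) \<and> Lam n ds xs \<in> A (sum_list ds + 2 - int n)"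
  using assms
proof (induction n arbitrary: ds xs rule: less_induct)
  case (less n)
  have LamA: "Lam n ds xs \<in> A (sum_list ds + 2 - int n)"
    unfolding Lam_def
  proof (rule subspace_sum[OF A_sub], rule subspace_scale[OF A_sub])
    fix k assume k: "k \<in> {1..<n}"
    have h1: "homog M (take k ds) (take k xs)" using homog_take less.prems(1) .
    have h2: "homog M (drop k ds) (drop k xs)" using homog_drop less.prems(1) .
    have "ff k (take k ds) (take k xs) \<in> A (sum_list (take k ds) + 1 - int k)"
      using less.IH[of k "take k ds" "take k xs"] h1 k less.prems(2) by auto
    moreover have "ff (n - k) (drop k ds) (drop k xs) \<in> A (sum_list (drop k ds) + 1 - int (n - k))"
      using less.IH[of "n - k" "drop k ds" "drop k xs"] h2 k less.prems(2) by auto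
    ultimately have "mu (sum_list (take k ds) + 1 - int k) (sum_list (drop k ds) + 1 - int (n - k))
             (ff k (take k ds) (take k xs)) (ff (n - k) (drop k ds) (drop k xs))
       \<in> A (sum_list (take k ds) + 1 - int k + (sum_list (drop k ds) + 1 - int (n - k)))"
      by (rule mu_A)
    moreover have "sum_list (take k ds) + 1 - int k + (sum_list (drop k ds) + 1 - int (n - k))
        = sum_list ds + 2 - int n"
      using k by (simp add: of_nat_diff) (metis add.commute sum_list_append append_take_drop_id)
    ultimately show "mu (sum_list (take k ds) + 1 - int k) (sum_list (drop k ds) + 1 - int (n - k))
             (ff k (take k ds) (take k xs)) (ff (n - k) (drop k ds) (drop k xs))
       \<in> A (sum_list ds + 2 - int n)" by simp
  qed
  show ?case
  proof (cases "n = 1")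
    case True
    have "ff n ds xs = hd xs" using True ff_1 by simp
    moreover have "hd xs \<in> M (hd ds)" using homog_hd less.prems True by simp
    moreover have "sum_list ds = hd ds" using sum_list_one less.prems(2) True by simp
    ultimately show ?thesis using True M_A LamA by auto
  next
    case False
    then have "2 \<le> n" using less.prems by simp
    then have "ff n ds xs = h (sum_list ds + 2 - int n) (Lam n ds xs)" by (rule ff_ge2)
    moreover have "h (sum_list ds + 2 - int n) (Lam n ds xs) \<in> A (sum_list ds + 2 - int n - 1)"
      using h_A LamA by blast
    ultimately have "ff n ds xs \<in> A (sum_list ds + 2 - int n - 1)" by simp
    then show ?thesis using LamA by (simp add: algebra_simps)
  qed
qed

lemma ff_A: "homog M ds xs \<Longrightarrow> length ds = n \<Longrightarrow> 1 \<le> n \<Longrightarrow> ff n ds xs \<in> A (sum_list ds + 1 - int n)"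
  using mem by blast
lemma Lam_A: "homog M ds xs \<Longrightarrow> length ds = n \<Longrightarrow> Lam n ds xs \<in> A (sum_list ds + 2 - int n)"
  using mem[of ds xs n] Lam_le1[of n ds xs] subspace_0[OF A_sub] by (cases "1 \<le> n") auto
lemma nu_M: "homog M ds xs \<Longrightarrow> length ds = n \<Longrightarrow> nu n ds xs \<in> M (sum_list ds + 2 - int n)"
  unfolding nu_def using P_M Lam_A by blast
lemma ops_M: "homog M ds xs \<Longrightarrow> length ds = n \<Longrightarrow> 1 \<le> n \<Longrightarrow> ops n ds xs \<in> M (sum_list ds + 2 - int n)"
proof (cases "n = 1")
  case True
  assume a: "homog M ds xs" "length ds = n" "1 \<le> n"
  have "hd xs \<in> M (hd ds)" using homog_hd a True by simp
  then have "d (hd ds) (hd xs) \<in> M (hd ds + 1)" by (rule d_M)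
  moreover have "sum_list ds = hd ds" using sum_list_one a(2) True by simp
  ultimately show ?thesis using True unfolding ainf_ops_def by (simp add: add.commute)
next
  case False
  assume a: "homog M ds xs" "length ds = n" "1 \<le> n"
  then show ?thesis using nu_M False unfolding ainf_ops_def by simp
qed

end


definition ins_ds :: "nat \<Rightarrow> nat \<Rightarrow> int list \<Rightarrow> int list" where
  "ins_ds r s ds = take r ds @ [sum_list (take s (drop r ds)) + 2 - int s] @ drop (r + s) ds"
definition ins_xs :: "(nat \<Rightarrow> int list \<Rightarrow> 'a list \<Rightarrow> 'a) \<Rightarrow> nat \<Rightarrow> nat \<Rightarrow> int list \<Rightarrow> 'a list \<Rightarrow> 'a list" where
  "ins_xs G r s ds xs = take r xs @ [G s (take s (drop r ds)) (take s (drop r xs))] @ drop (r + s) xs"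

definition Sn :: "nat \<Rightarrow> (nat \<times> nat) set" where "Sn n = {(r, s). 1 \<le> s \<and> r + s \<le> n}"

lemma Sn_finite: "finite (Sn n)"
proof -
  have "Sn n \<subseteq> {0..n} \<times> {0..n}" unfolding Sn_def by auto
  then show ?thesis using finite_subset by blast
qed

definition isgn :: "nat \<Rightarrow> nat \<Rightarrow> nat \<Rightarrow> int list \<Rightarrow> int" where
  "isgn n r s ds = int r + int s * int (n - r - s) + (2 - int s) * sum_list (take r ds)"

lemma insert_sum_eq: "insert_sum sc Ou In n ds xs =
  (\<Sum>(r, s)\<in>Sn n. sc (psign (isgn n r s ds)) (Ou (n - s + 1) (ins_ds r s ds) (ins_xs In r s ds xs)))"
  unfolding insert_sum_def Sn_def isgn_def ins_ds_def ins_xs_def Let_def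
  by (rule sum.cong) auto

lemma length_ins_ds: "r + s \<le> length ds \<Longrightarrow> length (ins_ds r s ds) = length ds - s + 1"
  unfolding ins_ds_def by simp
lemma length_ins_xs: "r + s \<le> length xs \<Longrightarrow> length (ins_xs G r s ds xs) = length xs - s + 1"
  unfolding ins_xs_def by simp

lemma take_ins: "r + s \<le> k \<Longrightarrow> k \<le> length ys \<Longrightarrow> take (k - s + 1) (take r ys @ [e] @ drop (r + s) ys) = take r (take k ys) @ [e] @ drop (r + s) (take k ys)"
proof -
  assume a: "r + s \<le> k" "k \<le> length ys"
  have e1: "k - s + 1 - r = Suc (k - r - s)" using a by simp
  have "take (k - s + 1) (take r ys @ [e] @ drop (r + s) ys) = take r ys @ take (k - s + 1 - r) (e # drop (r + s) ys)"
    using a by (simp add: take_append min_def)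
  also have "\<dots> = take r ys @ e # take (k - r - s) (drop (r + s) ys)" unfolding e1 by simp
  also have "take (k - r - s) (drop (r + s) ys) = drop (r + s) (take k ys)" by (simp add: drop_take diff_diff_left)
  finally have f: "take (k - s + 1) (take r ys @ [e] @ drop (r + s) ys) = take r ys @ e # drop (r + s) (take k ys)" .
  have "take r (take k ys) = take r ys" using a by (simp add: min_def)
  then show ?thesis using f by (simp only: append_Cons append_Nil)
qed
lemma drop_ins: "r + s \<le> k \<Longrightarrow> k \<le> length ys \<Longrightarrow> drop (k - s + 1) (take r ys @ [e] @ drop (r + s) ys) = drop k ys"
proof -
  assume a: "r + s \<le> k" "k \<le> length ys"
  have e1: "k - s + 1 - r = Suc (k - r - s)" using a by simp
  have "drop (k - s + 1) (take r ys @ [e] @ drop (r + s) ys) = drop (k - s + 1 - r) (e # drop (r + s) ys)"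
    using a by (simp add: drop_append min_def)
  also have "\<dots> = drop (k - r - s) (drop (r + s) ys)" unfolding e1 by simp
  also have "\<dots> = drop k ys" using a by simp
  finally show ?thesis .
qed
lemma split3: "sum_list (ds::int list) = sum_list (take r ds) + sum_list (take s (drop r ds)) + sum_list (drop (r + s) ds)"
proof -
  have "ds = take r ds @ take s (drop r ds) @ drop s (drop r ds)" by (simp only: append_take_drop_id)
  then have "sum_list ds = sum_list (take r ds @ take s (drop r ds) @ drop s (drop r ds))" by simp
  also have "\<dots> = sum_list (take r ds) + sum_list (take s (drop r ds)) + sum_list (drop (r + s) ds)"
    by (simp add: add.commute add.assoc)
  finally show ?thesis .
qed
lemma drop_take_ins: "k \<le> r \<Longrightarrow> take (r - k) (drop k ds) = drop k (take r ds)"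
  by (simp add: drop_take)

lemma sum_list_ins_ds: "r + s \<le> length ds \<Longrightarrow> sum_list (ins_ds r s ds) = sum_list ds + 2 - int s"
  unfolding ins_ds_def using split3[of ds r s] by simp

lemma ins_ds_take: "r + s \<le> k \<Longrightarrow> k \<le> length ds \<Longrightarrow> ins_ds r s (take k ds) = take (k - s + 1) (ins_ds r s ds)"
proof -
  assume a: "r + s \<le> k" "k \<le> length ds"
  have "take s (drop r (take k ds)) = take s (drop r ds)" using a by (simp add: drop_take min_def)
  then show ?thesis unfolding ins_ds_def using take_ins[OF a] by simp
qed

lemma ins_xs_take: "r + s \<le> k \<Longrightarrow> k \<le> length xs \<Longrightarrow> ins_xs G r s (take k ds) (take k xs) = take (k - s + 1) (ins_xs G r s ds xs)"
proof -
  assume a: "r + s \<le> k" "k \<le> length xs"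
  have "take s (drop r (take k ds)) = take s (drop r ds)" using a by (simp add: drop_take min_def)
  moreover have "take s (drop r (take k xs)) = take s (drop r xs)" using a by (simp add: drop_take min_def)
  ultimately show ?thesis unfolding ins_xs_def using take_ins[OF a] by simp
qed

lemma ins_ds_drop_take: "r + s \<le> k \<Longrightarrow> k \<le> length ds \<Longrightarrow> drop (k - s + 1) (ins_ds r s ds) = drop k ds"
  unfolding ins_ds_def by (rule drop_ins)
lemma ins_xs_drop_take: "r + s \<le> k \<Longrightarrow> k \<le> length xs \<Longrightarrow> drop (k - s + 1) (ins_xs G r s ds xs) = drop k xs"
  unfolding ins_xs_def by (rule drop_ins)

lemma ins_ds_drop: "k \<le> r \<Longrightarrow> r + s \<le> length ds \<Longrightarrow> ins_ds (r - k) s (drop k ds) = drop k (ins_ds r s ds)"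
  unfolding ins_ds_def using drop_take_ins[of k r ds] by (simp add: add.commute)
lemma ins_xs_drop: "k \<le> r \<Longrightarrow> r + s \<le> length ds \<Longrightarrow> length xs = length ds \<Longrightarrow> ins_xs G (r - k) s (drop k ds) (drop k xs) = drop k (ins_xs G r s ds xs)"
  unfolding ins_xs_def using drop_take_ins[of k r ds] drop_take_ins[of k r xs] by (simp add: add.commute)
lemma ins_ds_take2: "k \<le> r \<Longrightarrow> r \<le> length ds \<Longrightarrow> take k (ins_ds r s ds) = take k ds"
  unfolding ins_ds_def by (simp add: min_def)
lemma ins_xs_take2: "k \<le> r \<Longrightarrow> length xs = length ds \<Longrightarrow> r \<le> length ds \<Longrightarrow> take k (ins_xs G r s ds xs) = take k xs"
  unfolding ins_xs_def by (simp add: min_def)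


lemma sum_take_add: "sum_list (take (k + j) (ds::int list)) = sum_list (take k ds) + sum_list (take j (drop k ds))"
  by (simp add: take_add)
lemma sum_take_drop: "sum_list (ds::int list) = sum_list (take k ds) + sum_list (drop k ds)"
  by (metis append_take_drop_id sum_list_append)

context xfer
begin

lemma scale_sum: "sc c (\<Sum>i\<in>I. f i) = (\<Sum>i\<in>I. sc c (f i))"
  by (rule scale_sum_right)

lemma lin_sum_scale:
  assumes "linear_on sc sc V g" "subspace V" "\<And>i. i \<in> I \<Longrightarrow> f i \<in> V"
  shows "g (\<Sum>i\<in>I. sc (c i) (f i)) = (\<Sum>i\<in>I. sc (c i) (g (f i)))"
proof -
  have "g (\<Sum>i\<in>I. sc (c i) (f i)) = (\<Sum>i\<in>I. g (sc (c i) (f i)))"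
    by (rule lin_sum[OF assms(1,2)]) (use assms(2,3) subspace_scale in blast)
  also have "\<dots> = (\<Sum>i\<in>I. sc (c i) (g (f i)))"
    by (rule sum.cong) (use lin_scale[OF assms(1)] assms(3) in auto)
  finally show ?thesis .
qed

definition MU :: "nat \<Rightarrow> int list \<Rightarrow> 'a list \<Rightarrow> 'a" where
  "MU k ds xs = mu (sum_list (take k ds) + 1 - int k) (sum_list (drop k ds) + 1 - int (length ds - k))
     (ff k (take k ds) (take k xs)) (ff (length ds - k) (drop k ds) (drop k xs))"

definition eps :: "nat \<Rightarrow> nat \<Rightarrow> int list \<Rightarrow> int" where
  "eps n k ds = int k - 1 + (1 - int (n - k)) * sum_list (take k ds)"

lemma Lam_MU: "length ds = n \<Longrightarrow> Lam n ds xs = (\<Sum>k\<in>{1..<n}. sc (psign (eps n k ds)) (MU k ds xs))"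
  unfolding Lam_def MU_def eps_def by simp

lemma MU_A:
  assumes "homog M ds xs" "length ds = n" "k \<in> {1..<n}"
  shows "MU k ds xs \<in> A (sum_list ds + 2 - int n)"
proof -
  have l1: "length (take k ds) = k" "1 \<le> k" using assms by auto
  have f1: "ff k (take k ds) (take k xs) \<in> A (sum_list (take k ds) + 1 - int k)"
    by (rule ff_A[OF homog_take[OF assms(1)] l1])
  have l2: "length (drop k ds) = n - k" "1 \<le> n - k" using assms by auto
  have f2: "ff (n - k) (drop k ds) (drop k xs) \<in> A (sum_list (drop k ds) + 1 - int (n - k))"
    by (rule ff_A[OF homog_drop[OF assms(1)] l2])
  have "MU k ds xs \<in> A (sum_list (take k ds) + 1 - int k + (sum_list (drop k ds) + 1 - int (n - k)))"
    unfolding MU_def using assms(2) mu_A[OF f1 f2] by simp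
  moreover have "sum_list (take k ds) + 1 - int k + (sum_list (drop k ds) + 1 - int (n - k)) = sum_list ds + 2 - int n"
    using assms(3) sum_take_drop[of ds k] by (simp add: of_nat_diff)
  ultimately show ?thesis by simp
qed

end


lemma sgn1:
  fixes n k r s :: nat and X a :: int
  assumes "r + s \<le> k" "k < n" "1 \<le> s"
  shows "(psign (int k - 1 + (1 - int (n - k)) * X) * psign (int r + int s * int (k - r - s) + (2 - int s) * a) :: 'k::field)
       = - (psign (int r + int s * int (n - r - s) + (2 - int s) * a) *
            psign (int (k - s + 1) - 1 + (1 - int (n - s + 1 - (k - s + 1))) * (X + 2 - int s)))"
proof -
  have e1: "int (n - k) = int n - int k" "int (k - r - s) = int k - int r - int s" "int (n - r - s) = int n - int r - int s"
    "int (k - s + 1) = int k - int s + 1" "int (n - s + 1 - (k - s + 1)) = int n - int k" using assms by auto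
  let ?L = "int k - 1 + (1 - (int n - int k)) * X + (int r + int s * (int k - int r - int s) + (2 - int s) * a)"
  let ?R = "int r + int s * (int n - int r - int s) + (2 - int s) * a + (int k - int s + 1 - 1 + (1 - (int n - int k)) * (X + 2 - int s))"
  have "?L - ?R = 2 * (int s - 2 + (int n - int k) - int s * (int n - int k)) + 1"
    by (simp add: algebra_simps)
  then have "odd (?L - ?R)" by presburger
  then have "psign ?L = - (psign ?R :: 'k)" by (rule psign_anti)
  then show ?thesis unfolding e1 psign_add[symmetric] by simp
qed

lemma sgn2:
  fixes n k r s :: nat and x a :: int
  assumes "k < n" "r + s \<le> n - k" "1 \<le> s"
  shows "(psign (int k - 1 + (1 - int (n - k)) * x) * psign (x + 1 - int k) * psign (int r + int s * int (n - k - r - s) + (2 - int s) * a) :: 'k::field)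
       = - (psign (int (k + r) + int s * int (n - (k + r) - s) + (2 - int s) * (x + a)) *
            psign (int k - 1 + (1 - int (n - s + 1 - k)) * x))"
proof -
  have e1: "int (n - k) = int n - int k" "int (n - k - r - s) = int n - int k - int r - int s"
    "int (n - (k + r) - s) = int n - int k - int r - int s" "int (n - s + 1 - k) = int n - int s + 1 - int k"
    "int (k + r) = int k + int r" using assms by auto
  let ?L = "int k - 1 + (1 - (int n - int k)) * x + (x + 1 - int k) + (int r + int s * (int n - int k - int r - int s) + (2 - int s) * a)"
  let ?R = "int k + int r + int s * (int n - int k - int r - int s) + (2 - int s) * (x + a) + (int k - 1 + (1 - (int n - int s + 1 - int k)) * x)"
  have "?L - ?R = 2 * (- int k) + 1"
    by (simp add: algebra_simps)
  then have "odd (?L - ?R)" by presburger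
  then have "psign ?L = - (psign ?R :: 'k)" by (rule psign_anti)
  then show ?thesis unfolding e1 psign_add[symmetric] by (simp add: add.assoc)
qed
lemma sgn3:
  fixes n k j :: nat and x y :: int
  assumes "k + j < n"
  shows "(psign (int (k + j) - 1 + (1 - int (n - (k + j))) * (x + y)) * psign (int k - 1 + (1 - int (k + j - k)) * x) :: 'k::field)
       = - (psign (int k - 1 + (1 - int (n - k)) * x) * psign (x + 1 - int k) * psign (int j - 1 + (1 - int (n - k - j)) * y))"
proof -
  have e1: "int (n - (k + j)) = int n - int k - int j" "int (k + j - k) = int j" "int (n - k) = int n - int k"
    "int (n - k - j) = int n - int k - int j" "int (k + j) = int k + int j" using assms by auto
  let ?L = "int k + int j - 1 + (1 - (int n - int k - int j)) * (x + y) + (int k - 1 + (1 - int j) * x)"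
  let ?R = "int k - 1 + (1 - (int n - int k)) * x + (x + 1 - int k) + (int j - 1 + (1 - (int n - int k - int j)) * y)"
  have "?L - ?R = 2 * int k - 1"
    by (simp add: algebra_simps)
  then have "odd (?L - ?R)" by presburger
  then have "psign ?L = - (psign ?R :: 'k)" by (rule psign_anti)
  then show ?thesis unfolding e1 psign_add[symmetric] by (simp add: add.assoc)
qed

context xfer
begin


lemma homog_ins_gen:
  assumes "homog M es ys" "length es = m" "(r, s) \<in> Sn m"
  shows "homog M (ins_ds r s es) (ins_xs ops r s es ys)"
proof -
  have a: "1 \<le> s" "r + s \<le> m" using assms(3) unfolding Sn_def by auto
  have h1: "homog M (take r es) (take r ys)" using homog_take[OF assms(1)] .
  have h2: "homog M (drop (r + s) es) (drop (r + s) ys)" using homog_drop[OF assms(1)] .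
  have h3: "homog M (take s (drop r es)) (take s (drop r ys))" using homog_take[OF homog_drop[OF assms(1)]] .
  have l3: "length (take s (drop r es)) = s" using a assms(2) by simp
  have "ops s (take s (drop r es)) (take s (drop r ys)) \<in> M (sum_list (take s (drop r es)) + 2 - int s)"
    by (rule ops_M[OF h3 l3 a(1)])
  then have "homog M [sum_list (take s (drop r es)) + 2 - int s] [ops s (take s (drop r es)) (take s (drop r ys))]"
    by (rule homog_single)
  then show ?thesis unfolding ins_ds_def ins_xs_def
    using homog_append[OF h1 homog_append[OF _ h2]] by blast
qed

context
  fixes n :: nat and ds :: "int list" and xs :: "'a list"
  assumes hom: "homog M ds xs" and len: "length ds = n"
begin

lemma lenx: "length xs = n" using hom len homog_length by metis

definition G2 :: "(nat \<times> nat) \<times> nat \<Rightarrow> 'a" where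
  "G2 p = (case p of ((r, s), k') \<Rightarrow> sc (psign (isgn n r s ds) * psign (eps (n - s + 1) k' (ins_ds r s ds)))
      (MU k' (ins_ds r s ds) (ins_xs ops r s ds xs)))"

definition G1 :: "nat \<times> (nat \<times> nat) \<Rightarrow> 'a" where
  "G1 p = (case p of (k, (r, s)) \<Rightarrow> sc (psign (eps n k ds) * psign (isgn k r s (take k ds)))
      (MU (k - s + 1) (ins_ds r s ds) (ins_xs ops r s ds xs)))"

definition T1 :: 'a where
  "T1 = (\<Sum>k\<in>{1..<n}. sc (psign (eps n k ds)) (mu (sum_list (take k ds) + 2 - int k) (sum_list (drop k ds) + 1 - int (n - k))
      (insert_sum sc ff ops k (take k ds) (take k xs)) (ff (n - k) (drop k ds) (drop k xs))))"

lemma T1_term: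
  assumes k: "k \<in> {1..<n}" and rs: "(r, s) \<in> Sn k"
  shows "mu (sum_list (take k ds) + 2 - int k) (sum_list (drop k ds) + 1 - int (n - k))
      (ff (k - s + 1) (ins_ds r s (take k ds)) (ins_xs ops r s (take k ds) (take k xs))) (ff (n - k) (drop k ds) (drop k xs))
    = MU (k - s + 1) (ins_ds r s ds) (ins_xs ops r s ds xs)"
proof -
  have a: "1 \<le> k" "k < n" "1 \<le> s" "r + s \<le> k" using k rs unfolding Sn_def by auto
  have t1: "take (k - s + 1) (ins_ds r s ds) = ins_ds r s (take k ds)"
    using ins_ds_take[of r s k ds] a len by simp
  have t2: "take (k - s + 1) (ins_xs ops r s ds xs) = ins_xs ops r s (take k ds) (take k xs)"
    using ins_xs_take[of r s k xs ops ds] a lenx by simp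
  have t3: "drop (k - s + 1) (ins_ds r s ds) = drop k ds" using ins_ds_drop_take a len by simp
  have t4: "drop (k - s + 1) (ins_xs ops r s ds xs) = drop k xs" using ins_xs_drop_take[of r s k xs ops ds] a lenx by simp
  have l: "length (ins_ds r s ds) - (k - s + 1) = n - k" using length_ins_ds[of r s ds] a len by simp
  have s1: "sum_list (ins_ds r s (take k ds)) = sum_list (take k ds) + 2 - int s"
    using sum_list_ins_ds[of r s "take k ds"] a len by simp
  have deg1: "sum_list (ins_ds r s (take k ds)) + 1 - int (k - s + 1) = sum_list (take k ds) + 2 - int k"
    using s1 a by (simp add: of_nat_diff)
  show ?thesis unfolding MU_def t1 t2 t3 t4 l deg1 by simp
qed

lemma T1_eq: "T1 = (\<Sum>p\<in>Sigma {1..<n} Sn. G1 p)"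
proof -
  have step: "sc (psign (eps n k ds)) (mu (sum_list (take k ds) + 2 - int k) (sum_list (drop k ds) + 1 - int (n - k))
      (insert_sum sc ff ops k (take k ds) (take k xs)) (ff (n - k) (drop k ds) (drop k xs)))
    = (\<Sum>rs\<in>Sn k. G1 (k, rs))" if k: "k \<in> {1..<n}" for k
  proof -
    let ?X = "take k ds" and ?XS = "take k xs" and ?y = "ff (n - k) (drop k ds) (drop k xs)"
    let ?da = "sum_list (take k ds) + 2 - int k" and ?db = "sum_list (drop k ds) + 1 - int (n - k)"
    have hX: "homog M ?X ?XS" using homog_take[OF hom] .
    have lX: "length ?X = k" using k len by simp
    have ly: "length (drop k ds) = n - k" "1 \<le> n - k" using k len by auto
    have yA: "?y \<in> A ?db" by (rule ff_A[OF homog_drop[OF hom] ly])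
    have memb: "ff (k - s + 1) (ins_ds r s ?X) (ins_xs ops r s ?X ?XS) \<in> A ?da" if rs: "(r, s) \<in> Sn k" for r s
    proof -
      have a: "1 \<le> s" "r + s \<le> k" using rs unfolding Sn_def by auto
      have hI: "homog M (ins_ds r s ?X) (ins_xs ops r s ?X ?XS)" by (rule homog_ins_gen[OF hX lX rs])
      have lI: "length (ins_ds r s ?X) = k - s + 1" using length_ins_ds[of r s ?X] a lX by simp
      have "ff (k - s + 1) (ins_ds r s ?X) (ins_xs ops r s ?X ?XS) \<in> A (sum_list (ins_ds r s ?X) + 1 - int (k - s + 1))"
        by (rule ff_A[OF hI lI]) simp
      moreover have "sum_list (ins_ds r s ?X) + 1 - int (k - s + 1) = ?da"
        using sum_list_ins_ds[of r s ?X] a lX by (simp add: of_nat_diff)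
      ultimately show ?thesis by simp
    qed
    have "insert_sum sc ff ops k ?X ?XS = (\<Sum>(r, s)\<in>Sn k. sc (psign (isgn k r s ?X)) (ff (k - s + 1) (ins_ds r s ?X) (ins_xs ops r s ?X ?XS)))"
      by (rule insert_sum_eq)
    also have "\<dots> = (\<Sum>rs\<in>Sn k. sc (psign (isgn k (fst rs) (snd rs) ?X)) (ff (k - snd rs + 1) (ins_ds (fst rs) (snd rs) ?X) (ins_xs ops (fst rs) (snd rs) ?X ?XS)))"
      by (simp add: case_prod_beta)
    finally have IS: "insert_sum sc ff ops k ?X ?XS = (\<Sum>rs\<in>Sn k. sc (psign (isgn k (fst rs) (snd rs) ?X)) (ff (k - snd rs + 1) (ins_ds (fst rs) (snd rs) ?X) (ins_xs ops (fst rs) (snd rs) ?X ?XS)))" .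
    have "mu ?da ?db (insert_sum sc ff ops k ?X ?XS) ?y
        = (\<Sum>rs\<in>Sn k. sc (psign (isgn k (fst rs) (snd rs) ?X)) (mu ?da ?db (ff (k - snd rs + 1) (ins_ds (fst rs) (snd rs) ?X) (ins_xs ops (fst rs) (snd rs) ?X ?XS)) ?y))"
      unfolding IS by (rule lin_sum_scale[OF mu_lin1[OF yA] A_sub]) (use memb in auto)
    also have "\<dots> = (\<Sum>rs\<in>Sn k. sc (psign (isgn k (fst rs) (snd rs) ?X)) (MU (k - snd rs + 1) (ins_ds (fst rs) (snd rs) ds) (ins_xs ops (fst rs) (snd rs) ds xs)))"
      by (rule sum.cong) (use T1_term[OF k] in auto)
    finally have "sc (psign (eps n k ds)) (mu ?da ?db (insert_sum sc ff ops k ?X ?XS) ?y)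
       = (\<Sum>rs\<in>Sn k. sc (psign (eps n k ds)) (sc (psign (isgn k (fst rs) (snd rs) ?X)) (MU (k - snd rs + 1) (ins_ds (fst rs) (snd rs) ds) (ins_xs ops (fst rs) (snd rs) ds xs))))"
      by (simp add: scale_sum)
    also have "\<dots> = (\<Sum>rs\<in>Sn k. G1 (k, rs))"
      by (rule sum.cong) (auto simp: G1_def case_prod_beta)
    finally show ?thesis .
  qed
  have "T1 = (\<Sum>k\<in>{1..<n}. \<Sum>rs\<in>Sn k. G1 (k, rs))"
    unfolding T1_def by (rule sum.cong) (use step in auto)
  also have "\<dots> = (\<Sum>p\<in>Sigma {1..<n} Sn. G1 p)"
    using sum.Sigma[of "{1..<n}" Sn "\<lambda>k rs. G1 (k, rs)"] Sn_finite by (simp add: case_prod_beta')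
  finally show ?thesis .
qed

lemma ISL_eq: "insert_sum sc Lam ops n ds xs = (\<Sum>p\<in>Sigma (Sn n) (\<lambda>rs. {1..<n - snd rs + 1}). G2 p)"
proof -
  have "insert_sum sc Lam ops n ds xs = (\<Sum>(r, s)\<in>Sn n. sc (psign (isgn n r s ds)) (Lam (n - s + 1) (ins_ds r s ds) (ins_xs ops r s ds xs)))"
    by (rule insert_sum_eq)
  also have "\<dots> = (\<Sum>rs\<in>Sn n. \<Sum>k'\<in>{1..<n - snd rs + 1}. G2 (rs, k'))"
  proof (rule sum.cong)
    fix rs assume rs: "rs \<in> Sn n"
    obtain r s where rs': "rs = (r, s)" by (cases rs)
    have a: "1 \<le> s" "r + s \<le> n" using rs rs' unfolding Sn_def by auto
    have l: "length (ins_ds r s ds) = n - s + 1" using length_ins_ds[of r s ds] a len by simp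
    have "sc (psign (isgn n r s ds)) (Lam (n - s + 1) (ins_ds r s ds) (ins_xs ops r s ds xs))
      = (\<Sum>k'\<in>{1..<n - s + 1}. sc (psign (isgn n r s ds)) (sc (psign (eps (n - s + 1) k' (ins_ds r s ds))) (MU k' (ins_ds r s ds) (ins_xs ops r s ds xs))))"
      unfolding Lam_MU[OF l] scale_sum by (rule refl)
    also have "\<dots> = (\<Sum>k'\<in>{1..<n - s + 1}. G2 ((r, s), k'))" unfolding G2_def by (simp only: prod.case scale_scale)
    finally show "(case rs of (r, s) \<Rightarrow> sc (psign (isgn n r s ds)) (Lam (n - s + 1) (ins_ds r s ds) (ins_xs ops r s ds xs)))
        = (\<Sum>k'\<in>{1..<n - snd rs + 1}. G2 (rs, k'))" using rs' by simp
  qed simp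
  also have "\<dots> = (\<Sum>p\<in>Sigma (Sn n) (\<lambda>rs. {1..<n - snd rs + 1}). G2 p)"
    using sum.Sigma[of "Sn n" "\<lambda>rs. {1..<n - snd rs + 1}" "\<lambda>rs k'. G2 (rs, k')"] Sn_finite by (simp add: case_prod_beta')
  finally show ?thesis .
qed

definition TT1 where "TT1 = {p \<in> Sigma (Sn n) (\<lambda>rs. {1..<n - snd rs + 1}). fst (fst p) < snd p}"
definition TT2 where "TT2 = {p \<in> Sigma (Sn n) (\<lambda>rs. {1..<n - snd rs + 1}). snd p \<le> fst (fst p)}"

lemma T1_ISL1: "(\<Sum>p\<in>Sigma {1..<n} Sn. G1 p) = - (\<Sum>p\<in>TT1. G2 p)"
proof -
  have "(\<Sum>p\<in>Sigma {1..<n} Sn. G1 p) = (\<Sum>p\<in>TT1. - G2 p)"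
  proof (rule sum.reindex_bij_witness[where j="\<lambda>(k, (r, s)). ((r, s), k - s + 1)" and i="\<lambda>((r, s), k'). (k' + s - 1, (r, s))"])
    fix a assume "a \<in> Sigma {1..<n} Sn"
    then obtain k r s where a: "a = (k, (r, s))" "1 \<le> k" "k < n" "1 \<le> s" "r + s \<le> k" unfolding Sn_def by auto
    show "(case case a of (k, r, s) \<Rightarrow> ((r, s), k - s + 1) of (x, xa) \<Rightarrow> (case x of (r, s) \<Rightarrow> \<lambda>k'. (k' + s - 1, r, s)) xa) = a"
      using a by simp
    show "(case a of (k, r, s) \<Rightarrow> ((r, s), k - s + 1)) \<in> TT1"
      using a unfolding TT1_def Sn_def by auto
    show "- G2 (case a of (k, r, s) \<Rightarrow> ((r, s), k - s + 1)) = G1 a"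
    proof -
      have rsk: "(r, s) \<in> Sn k" using a unfolding Sn_def by simp
      have s1: "sum_list (take (k - s + 1) (ins_ds r s ds)) = sum_list (take k ds) + 2 - int s"
        using ins_ds_take[of r s k ds] sum_list_ins_ds[of r s "take k ds"] a len by simp
      have s2: "sum_list (take r (take k ds)) = sum_list (take r ds)" using a by (simp add: min_def)
      have sg: "(psign (eps n k ds) * psign (isgn k r s (take k ds)) :: 'k)
         = - (psign (isgn n r s ds) * psign (eps (n - s + 1) (k - s + 1) (ins_ds r s ds)))"
        unfolding eps_def isgn_def s1 s2 using sgn1[of r s k n "sum_list (take k ds)" "sum_list (take r ds)"] a by simp
      have g1: "G1 (k, (r, s)) = sc (psign (eps n k ds) * psign (isgn k r s (take k ds))) (MU (k - s + 1) (ins_ds r s ds) (ins_xs ops r s ds xs))"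
        unfolding G1_def by (simp only: prod.case)
      have g2: "G2 ((r, s), k - s + 1) = sc (psign (isgn n r s ds) * psign (eps (n - s + 1) (k - s + 1) (ins_ds r s ds))) (MU (k - s + 1) (ins_ds r s ds) (ins_xs ops r s ds xs))"
        unfolding G2_def by (simp only: prod.case)
      show ?thesis unfolding a(1) prod.case g1 g2 sg scale_minus_left by (rule refl)
    qed
  next
    fix b assume "b \<in> TT1"
    then obtain r s k' where b: "b = ((r, s), k')" "1 \<le> s" "r + s \<le> n" "1 \<le> k'" "k' < n - s + 1" "r < k'"
      unfolding TT1_def Sn_def by auto
    show "(case case b of (x, xa) \<Rightarrow> (case x of (r, s) \<Rightarrow> \<lambda>k'. (k' + s - 1, r, s)) xa of (k, r, s) \<Rightarrow> ((r, s), k - s + 1)) = b"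
      using b by simp
    show "(case b of (x, xa) \<Rightarrow> (case x of (r, s) \<Rightarrow> \<lambda>k'. (k' + s - 1, r, s)) xa) \<in> Sigma {1..<n} Sn"
      using b unfolding Sn_def by auto
  qed
  also have "\<dots> = - (\<Sum>p\<in>TT1. G2 p)" by (simp add: sum_negf)
  finally show ?thesis .
qed

definition G3 :: "nat \<times> (nat \<times> nat) \<Rightarrow> 'a" where
  "G3 p = (case p of (k, (r, s)) \<Rightarrow> sc (psign (eps n k ds) * psign (sum_list (take k ds) + 1 - int k) * psign (isgn (n - k) r s (drop k ds)))
      (MU k (ins_ds (k + r) s ds) (ins_xs ops (k + r) s ds xs)))"

definition T2 :: 'a where
  "T2 = (\<Sum>k\<in>{1..<n}. sc (psign (eps n k ds)) (sc (psign (sum_list (take k ds) + 1 - int k))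
      (mu (sum_list (take k ds) + 1 - int k) (sum_list (drop k ds) + 2 - int (n - k))
      (ff k (take k ds) (take k xs)) (insert_sum sc ff ops (n - k) (drop k ds) (drop k xs)))))"

lemma T2_term:
  assumes k: "k \<in> {1..<n}" and rs: "(r, s) \<in> Sn (n - k)"
  shows "mu (sum_list (take k ds) + 1 - int k) (sum_list (drop k ds) + 2 - int (n - k))
      (ff k (take k ds) (take k xs)) (ff (n - k - s + 1) (ins_ds r s (drop k ds)) (ins_xs ops r s (drop k ds) (drop k xs)))
    = MU k (ins_ds (k + r) s ds) (ins_xs ops (k + r) s ds xs)"
proof -
  have a: "1 \<le> k" "k < n" "1 \<le> s" "r + s \<le> n - k" using k rs unfolding Sn_def by auto
  have t1: "take k (ins_ds (k + r) s ds) = take k ds" using ins_ds_take2[of k "k + r" ds s] a len by simp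
  have t2: "take k (ins_xs ops (k + r) s ds xs) = take k xs" using ins_xs_take2[of k "k + r" xs ds ops s] a len lenx by simp
  have t3: "drop k (ins_ds (k + r) s ds) = ins_ds r s (drop k ds)" using ins_ds_drop[of k "k + r" s ds] a len by simp
  have t4: "drop k (ins_xs ops (k + r) s ds xs) = ins_xs ops r s (drop k ds) (drop k xs)"
    using ins_xs_drop[of k "k + r" s ds xs ops] a len lenx by simp
  have l: "length (ins_ds (k + r) s ds) - k = n - k - s + 1" using length_ins_ds[of "k + r" s ds] a len by simp
  have s1: "sum_list (ins_ds r s (drop k ds)) = sum_list (drop k ds) + 2 - int s"
    using sum_list_ins_ds[of r s "drop k ds"] a len by simp
  have deg2: "sum_list (ins_ds r s (drop k ds)) + 1 - int (n - k - s + 1) = sum_list (drop k ds) + 2 - int (n - k)"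
    using s1 a by (simp add: of_nat_diff)
  show ?thesis unfolding MU_def t1 t2 t3 t4 l deg2 by simp
qed

lemma T2_eq: "T2 = (\<Sum>p\<in>Sigma {1..<n} (\<lambda>k. Sn (n - k)). G3 p)"
proof -
  have step: "sc (psign (eps n k ds)) (sc (psign (sum_list (take k ds) + 1 - int k))
      (mu (sum_list (take k ds) + 1 - int k) (sum_list (drop k ds) + 2 - int (n - k))
      (ff k (take k ds) (take k xs)) (insert_sum sc ff ops (n - k) (drop k ds) (drop k xs))))
    = (\<Sum>rs\<in>Sn (n - k). G3 (k, rs))" if k: "k \<in> {1..<n}" for k
  proof -
    let ?Y = "drop k ds" and ?YS = "drop k xs" and ?x = "ff k (take k ds) (take k xs)"
    let ?da = "sum_list (take k ds) + 1 - int k" and ?db = "sum_list (drop k ds) + 2 - int (n - k)"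
    have hY: "homog M ?Y ?YS" using homog_drop[OF hom] .
    have lY: "length ?Y = n - k" using k len by simp
    have lx: "length (take k ds) = k" "1 \<le> k" using k len by auto
    have xA: "?x \<in> A ?da" by (rule ff_A[OF homog_take[OF hom] lx])
    have memb: "ff (n - k - s + 1) (ins_ds r s ?Y) (ins_xs ops r s ?Y ?YS) \<in> A ?db" if rs: "(r, s) \<in> Sn (n - k)" for r s
    proof -
      have a: "1 \<le> s" "r + s \<le> n - k" using rs unfolding Sn_def by auto
      have hI: "homog M (ins_ds r s ?Y) (ins_xs ops r s ?Y ?YS)" by (rule homog_ins_gen[OF hY lY rs])
      have lI: "length (ins_ds r s ?Y) = n - k - s + 1" using length_ins_ds[of r s ?Y] a lY by simp
      have "ff (n - k - s + 1) (ins_ds r s ?Y) (ins_xs ops r s ?Y ?YS) \<in> A (sum_list (ins_ds r s ?Y) + 1 - int (n - k - s + 1))"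
        by (rule ff_A[OF hI lI]) simp
      moreover have "sum_list (ins_ds r s ?Y) + 1 - int (n - k - s + 1) = ?db"
        using sum_list_ins_ds[of r s ?Y] a lY by (simp add: of_nat_diff)
      ultimately show ?thesis by simp
    qed
    have "insert_sum sc ff ops (n - k) ?Y ?YS = (\<Sum>(r, s)\<in>Sn (n - k). sc (psign (isgn (n - k) r s ?Y)) (ff (n - k - s + 1) (ins_ds r s ?Y) (ins_xs ops r s ?Y ?YS)))"
      by (rule insert_sum_eq)
    also have "\<dots> = (\<Sum>rs\<in>Sn (n - k). sc (psign (isgn (n - k) (fst rs) (snd rs) ?Y)) (ff (n - k - snd rs + 1) (ins_ds (fst rs) (snd rs) ?Y) (ins_xs ops (fst rs) (snd rs) ?Y ?YS)))"
      by (simp add: case_prod_beta)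
    finally have IS: "insert_sum sc ff ops (n - k) ?Y ?YS = (\<Sum>rs\<in>Sn (n - k). sc (psign (isgn (n - k) (fst rs) (snd rs) ?Y)) (ff (n - k - snd rs + 1) (ins_ds (fst rs) (snd rs) ?Y) (ins_xs ops (fst rs) (snd rs) ?Y ?YS)))" .
    have "mu ?da ?db ?x (insert_sum sc ff ops (n - k) ?Y ?YS)
        = (\<Sum>rs\<in>Sn (n - k). sc (psign (isgn (n - k) (fst rs) (snd rs) ?Y)) (mu ?da ?db ?x (ff (n - k - snd rs + 1) (ins_ds (fst rs) (snd rs) ?Y) (ins_xs ops (fst rs) (snd rs) ?Y ?YS))))"
      unfolding IS by (rule lin_sum_scale[OF mu_lin2[OF xA] A_sub]) (use memb in auto)
    also have "\<dots> = (\<Sum>rs\<in>Sn (n - k). sc (psign (isgn (n - k) (fst rs) (snd rs) ?Y)) (MU k (ins_ds (k + fst rs) (snd rs) ds) (ins_xs ops (k + fst rs) (snd rs) ds xs)))"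
      by (rule sum.cong) (use T2_term[OF k] in auto)
    finally have "sc (psign (eps n k ds)) (sc (psign ?da) (mu ?da ?db ?x (insert_sum sc ff ops (n - k) ?Y ?YS)))
       = (\<Sum>rs\<in>Sn (n - k). sc (psign (eps n k ds)) (sc (psign ?da) (sc (psign (isgn (n - k) (fst rs) (snd rs) ?Y)) (MU k (ins_ds (k + fst rs) (snd rs) ds) (ins_xs ops (k + fst rs) (snd rs) ds xs)))))"
      by (simp add: scale_sum)
    also have "\<dots> = (\<Sum>rs\<in>Sn (n - k). G3 (k, rs))"
      unfolding G3_def by (rule sum.cong) (auto simp: case_prod_beta mult.assoc)
    finally show ?thesis .
  qed
  have "T2 = (\<Sum>k\<in>{1..<n}. \<Sum>rs\<in>Sn (n - k). G3 (k, rs))"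
    unfolding T2_def by (rule sum.cong) (use step in auto)
  also have "\<dots> = (\<Sum>p\<in>Sigma {1..<n} (\<lambda>k. Sn (n - k)). G3 p)"
    using sum.Sigma[of "{1..<n}" "\<lambda>k. Sn (n - k)" "\<lambda>k rs. G3 (k, rs)"] Sn_finite by (simp add: case_prod_beta')
  finally show ?thesis .
qed

lemma T2_ISL2: "(\<Sum>p\<in>Sigma {1..<n} (\<lambda>k. Sn (n - k)). G3 p) = - (\<Sum>p\<in>TT2. G2 p)"
proof -
  have "(\<Sum>p\<in>Sigma {1..<n} (\<lambda>k. Sn (n - k)). G3 p) = (\<Sum>p\<in>TT2. - G2 p)"
  proof (rule sum.reindex_bij_witness[where j="\<lambda>(k, (r, s)). ((k + r, s), k)" and i="\<lambda>((r, s), k'). (k', (r - k', s))"])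
    fix a assume "a \<in> Sigma {1..<n} (\<lambda>k. Sn (n - k))"
    then obtain k r s where a: "a = (k, (r, s))" "1 \<le> k" "k < n" "1 \<le> s" "r + s \<le> n - k" unfolding Sn_def by auto
    show "(case case a of (k, r, s) \<Rightarrow> ((k + r, s), k) of (x, xa) \<Rightarrow> (case x of (r, s) \<Rightarrow> \<lambda>k'. (k', r - k', s)) xa) = a"
      using a by simp
    show "(case a of (k, r, s) \<Rightarrow> ((k + r, s), k)) \<in> TT2"
      using a unfolding TT2_def Sn_def by auto
    show "- G2 (case a of (k, r, s) \<Rightarrow> ((k + r, s), k)) = G3 a"
    proof -
      have s1: "sum_list (take k (ins_ds (k + r) s ds)) = sum_list (take k ds)"
        using ins_ds_take2[of k "k + r" ds s] a len by simp
      have s2: "sum_list (take (k + r) ds) = sum_list (take k ds) + sum_list (take r (drop k ds))"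
        by (rule sum_take_add)
      have sg: "(psign (eps n k ds) * psign (sum_list (take k ds) + 1 - int k) * psign (isgn (n - k) r s (drop k ds)) :: 'k)
         = - (psign (isgn n (k + r) s ds) * psign (eps (n - s + 1) k (ins_ds (k + r) s ds)))"
        unfolding eps_def isgn_def s1 s2 using sgn2[of k n r s "sum_list (take k ds)" "sum_list (take r (drop k ds))"] a
        by (simp add: diff_diff_add)
      have g1: "G3 (k, (r, s)) = sc (psign (eps n k ds) * psign (sum_list (take k ds) + 1 - int k) * psign (isgn (n - k) r s (drop k ds))) (MU k (ins_ds (k + r) s ds) (ins_xs ops (k + r) s ds xs))"
        unfolding G3_def by (simp only: prod.case)
      have g2: "G2 ((k + r, s), k) = sc (psign (isgn n (k + r) s ds) * psign (eps (n - s + 1) k (ins_ds (k + r) s ds))) (MU k (ins_ds (k + r) s ds) (ins_xs ops (k + r) s ds xs))"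
        unfolding G2_def by (simp only: prod.case)
      show ?thesis unfolding a(1) prod.case g1 g2 sg scale_minus_left by (rule refl)
    qed
  next
    fix b assume "b \<in> TT2"
    then obtain r s k' where b: "b = ((r, s), k')" "1 \<le> s" "r + s \<le> n" "1 \<le> k'" "k' < n - s + 1" "k' \<le> r"
      unfolding TT2_def Sn_def by auto
    show "(case case b of (x, xa) \<Rightarrow> (case x of (r, s) \<Rightarrow> \<lambda>k'. (k', r - k', s)) xa of (k, r, s) \<Rightarrow> ((k + r, s), k)) = b"
      using b by simp
    show "(case b of (x, xa) \<Rightarrow> (case x of (r, s) \<Rightarrow> \<lambda>k'. (k', r - k', s)) xa) \<in> Sigma {1..<n} (\<lambda>k. Sn (n - k))"
      using b unfolding Sn_def by auto
  qed
  also have "\<dots> = - (\<Sum>p\<in>TT2. G2 p)" by (simp add: sum_negf)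
  finally show ?thesis .
qed

definition T3 :: 'a where
  "T3 = (\<Sum>k\<in>{1..<n}. sc (psign (eps n k ds)) (mu (sum_list (take k ds) + 2 - int k) (sum_list (drop k ds) + 1 - int (n - k))
      (Lam k (take k ds) (take k xs)) (ff (n - k) (drop k ds) (drop k xs))))"

definition T4 :: 'a where
  "T4 = (\<Sum>k\<in>{1..<n}. sc (psign (eps n k ds)) (sc (psign (sum_list (take k ds) + 1 - int k))
      (mu (sum_list (take k ds) + 1 - int k) (sum_list (drop k ds) + 2 - int (n - k))
      (ff k (take k ds) (take k xs)) (Lam (n - k) (drop k ds) (drop k xs)))))"

definition G4 :: "nat \<times> nat \<Rightarrow> 'a" where
  "G4 p = (case p of (K, J) \<Rightarrow> sc (psign (eps n K ds) * psign (eps K J (take K ds)))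
     (mu (sum_list (take K ds) + 2 - int K) (sum_list (drop K ds) + 1 - int (n - K))
       (MU J (take K ds) (take K xs)) (ff (n - K) (drop K ds) (drop K xs))))"

definition G5 :: "nat \<times> nat \<Rightarrow> 'a" where
  "G5 p = (case p of (k, j) \<Rightarrow> sc (psign (eps n k ds) * psign (sum_list (take k ds) + 1 - int k) * psign (eps (n - k) j (drop k ds)))
     (mu (sum_list (take k ds) + 1 - int k) (sum_list (drop k ds) + 2 - int (n - k))
       (ff k (take k ds) (take k xs)) (MU j (drop k ds) (drop k xs))))"

lemma T3_eq: "T3 = (\<Sum>p\<in>Sigma {1..<n} (\<lambda>K. {1..<K}). G4 p)"
proof -
  have step: "sc (psign (eps n K ds)) (mu (sum_list (take K ds) + 2 - int K) (sum_list (drop K ds) + 1 - int (n - K))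
      (Lam K (take K ds) (take K xs)) (ff (n - K) (drop K ds) (drop K xs))) = (\<Sum>J\<in>{1..<K}. G4 (K, J))"
    if K: "K \<in> {1..<n}" for K
  proof -
    have ly: "length (drop K ds) = n - K" "1 \<le> n - K" using K len by auto
    have yA: "ff (n - K) (drop K ds) (drop K xs) \<in> A (sum_list (drop K ds) + 1 - int (n - K))"
      by (rule ff_A[OF homog_drop[OF hom] ly])
    have lX: "length (take K ds) = K" using K len by simp
    have "mu (sum_list (take K ds) + 2 - int K) (sum_list (drop K ds) + 1 - int (n - K))
      (Lam K (take K ds) (take K xs)) (ff (n - K) (drop K ds) (drop K xs))
      = (\<Sum>J\<in>{1..<K}. sc (psign (eps K J (take K ds))) (mu (sum_list (take K ds) + 2 - int K) (sum_list (drop K ds) + 1 - int (n - K))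
          (MU J (take K ds) (take K xs)) (ff (n - K) (drop K ds) (drop K xs))))"
      unfolding Lam_MU[OF lX] by (rule lin_sum_scale[OF mu_lin1[OF yA] A_sub]) (use MU_A[OF homog_take[OF hom] lX] in blast)
    then show ?thesis unfolding G4_def by (simp add: scale_sum)
  qed
  have "T3 = (\<Sum>K\<in>{1..<n}. \<Sum>J\<in>{1..<K}. G4 (K, J))"
    unfolding T3_def by (rule sum.cong) (use step in auto)
  also have "\<dots> = (\<Sum>p\<in>Sigma {1..<n} (\<lambda>K. {1..<K}). G4 p)"
    using sum.Sigma[of "{1..<n}" "\<lambda>K. {1..<K}" "\<lambda>K J. G4 (K, J)"] by (simp add: case_prod_beta')
  finally show ?thesis .
qed

lemma T4_eq: "T4 = (\<Sum>p\<in>Sigma {1..<n} (\<lambda>k. {1..<n - k}). G5 p)"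
proof -
  have step: "sc (psign (eps n k ds)) (sc (psign (sum_list (take k ds) + 1 - int k))
      (mu (sum_list (take k ds) + 1 - int k) (sum_list (drop k ds) + 2 - int (n - k))
      (ff k (take k ds) (take k xs)) (Lam (n - k) (drop k ds) (drop k xs)))) = (\<Sum>j\<in>{1..<n - k}. G5 (k, j))"
    if k: "k \<in> {1..<n}" for k
  proof -
    have lx: "length (take k ds) = k" "1 \<le> k" using k len by auto
    have xA: "ff k (take k ds) (take k xs) \<in> A (sum_list (take k ds) + 1 - int k)"
      by (rule ff_A[OF homog_take[OF hom] lx])
    have lY: "length (drop k ds) = n - k" using k len by simp
    have "mu (sum_list (take k ds) + 1 - int k) (sum_list (drop k ds) + 2 - int (n - k))
      (ff k (take k ds) (take k xs)) (Lam (n - k) (drop k ds) (drop k xs))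
      = (\<Sum>j\<in>{1..<n - k}. sc (psign (eps (n - k) j (drop k ds))) (mu (sum_list (take k ds) + 1 - int k) (sum_list (drop k ds) + 2 - int (n - k))
          (ff k (take k ds) (take k xs)) (MU j (drop k ds) (drop k xs))))"
      unfolding Lam_MU[OF lY] by (rule lin_sum_scale[OF mu_lin2[OF xA] A_sub]) (use MU_A[OF homog_drop[OF hom] lY] in blast)
    then show ?thesis unfolding G5_def by (simp add: scale_sum mult.assoc)
  qed
  have "T4 = (\<Sum>k\<in>{1..<n}. \<Sum>j\<in>{1..<n - k}. G5 (k, j))"
    unfolding T4_def by (rule sum.cong) (use step in auto)
  also have "\<dots> = (\<Sum>p\<in>Sigma {1..<n} (\<lambda>k. {1..<n - k}). G5 p)"
    using sum.Sigma[of "{1..<n}" "\<lambda>k. {1..<n - k}" "\<lambda>k j. G5 (k, j)"] by (simp add: case_prod_beta')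
  finally show ?thesis .
qed

lemma T34: "T3 + T4 = 0"
proof -
  have "(\<Sum>p\<in>Sigma {1..<n} (\<lambda>k. {1..<n - k}). G5 p) = (\<Sum>p\<in>Sigma {1..<n} (\<lambda>K. {1..<K}). - G4 p)"
  proof (rule sum.reindex_bij_witness[where j="\<lambda>(k, j). (k + j, k)" and i="\<lambda>(K, J). (J, K - J)"])
    fix a assume "a \<in> Sigma {1..<n} (\<lambda>k. {1..<n - k})"
    then obtain k j where a: "a = (k, j)" "1 \<le> k" "1 \<le> j" "k + j < n" by auto
    show "(case case a of (k, j) \<Rightarrow> (k + j, k) of (K, J) \<Rightarrow> (J, K - J)) = a" using a by simp
    show "(case a of (k, j) \<Rightarrow> (k + j, k)) \<in> Sigma {1..<n} (\<lambda>K. {1..<K})" using a by auto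
    show "- G4 (case a of (k, j) \<Rightarrow> (k + j, k)) = G5 a"
    proof -
      let ?x = "ff k (take k ds) (take k xs)"
      let ?y = "ff j (take j (drop k ds)) (take j (drop k xs))"
      let ?z = "ff (n - (k + j)) (drop (k + j) ds) (drop (k + j) xs)"
      let ?al = "sum_list (take k ds) + 1 - int k"
      let ?be = "sum_list (take j (drop k ds)) + 1 - int j"
      let ?ga = "sum_list (drop (k + j) ds) + 1 - int (n - (k + j))"
      have lx: "length (take k ds) = k" "1 \<le> k" using a len by auto
      have ly: "length (take j (drop k ds)) = j" "1 \<le> j" using a len by auto
      have lz: "length (drop (k + j) ds) = n - (k + j)" "1 \<le> n - (k + j)" using a len by auto
      have xA: "?x \<in> A ?al" by (rule ff_A[OF homog_take[OF hom] lx])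
      have yA: "?y \<in> A ?be" by (rule ff_A[OF homog_take[OF homog_drop[OF hom]] ly])
      have zA: "?z \<in> A ?ga" by (rule ff_A[OF homog_drop[OF hom] lz])
      have as: "mu (?al + ?be) ?ga (mu ?al ?be ?x ?y) ?z = mu ?al (?be + ?ga) ?x (mu ?be ?ga ?y ?z)"
        by (rule assoc[OF xA yA zA])
      have e1: "take k (take (k + j) ds) = take k ds" "drop k (take (k + j) ds) = take j (drop k ds)"
        "take k (take (k + j) xs) = take k xs" "drop k (take (k + j) xs) = take j (drop k xs)"
        "length (take (k + j) ds) - k = j" using a len by (auto simp: drop_take min_def)
      have mu1: "MU k (take (k + j) ds) (take (k + j) xs) = mu ?al ?be ?x ?y"
        unfolding MU_def e1 by simp
      have e2: "drop j (drop k ds) = drop (k + j) ds" "drop j (drop k xs) = drop (k + j) xs"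
        "length (drop k ds) - j = n - (k + j)" using a len by (auto simp: add.commute)
      have mu2: "MU j (drop k ds) (drop k xs) = mu ?be ?ga ?y ?z"
        unfolding MU_def e2 by simp
      have d1: "sum_list (take (k + j) ds) + 2 - int (k + j) = ?al + ?be" using sum_take_add[of k j ds] by simp
      have d2: "sum_list (drop k ds) + 2 - int (n - k) = ?be + ?ga"
        using sum_take_drop[of "drop k ds" j] e2 a by (simp add: of_nat_diff)
      have sg: "(psign (eps n (k + j) ds) * psign (eps (k + j) k (take (k + j) ds)) :: 'k)
        = - (psign (eps n k ds) * psign (sum_list (take k ds) + 1 - int k) * psign (eps (n - k) j (drop k ds)))"
        unfolding eps_def e1(1) sum_take_add using sgn3[of k j n "sum_list (take k ds)" "sum_list (take j (drop k ds))"] a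
        by simp
      have g4: "G4 (k + j, k) = sc (psign (eps n (k + j) ds) * psign (eps (k + j) k (take (k + j) ds)))
          (mu (?al + ?be) ?ga (mu ?al ?be ?x ?y) ?z)"
        unfolding G4_def prod.case mu1 d1 by simp
      have g5: "G5 (k, j) = sc (psign (eps n k ds) * psign (sum_list (take k ds) + 1 - int k) * psign (eps (n - k) j (drop k ds)))
          (mu ?al (?be + ?ga) ?x (mu ?be ?ga ?y ?z))"
        unfolding G5_def prod.case mu2 d2 by simp
      show ?thesis unfolding a(1) prod.case g4 g5 sg as scale_minus_left by simp
    qed
  next
    fix b assume "b \<in> Sigma {1..<n} (\<lambda>K. {1..<K})"
    then obtain K J where b: "b = (K, J)" "1 \<le> J" "J < K" "K < n" by auto
    show "(case case b of (K, J) \<Rightarrow> (J, K - J) of (k, j) \<Rightarrow> (k + j, k)) = b" using b by simp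
    show "(case b of (K, J) \<Rightarrow> (J, K - J)) \<in> Sigma {1..<n} (\<lambda>k. {1..<n - k})" using b by auto
  qed
  then have "T4 = - T3" unfolding T3_eq T4_eq by (simp add: sum_negf)
  then show ?thesis by simp
qed

lemma dLam:
  assumes IH: "\<And>k es ys. 1 \<le> k \<Longrightarrow> k < n \<Longrightarrow> length es = k \<Longrightarrow> homog M es ys \<Longrightarrow>
      d (sum_list es + 1 - int k) (ff k es ys) = insert_sum sc ff ops k es ys - Lam k es ys"
  shows "d (sum_list ds + 2 - int n) (Lam n ds xs) = T1 - T3 + T2 - T4"
proof -
  have "d (sum_list ds + 2 - int n) (Lam n ds xs) = (\<Sum>k\<in>{1..<n}. sc (psign (eps n k ds)) (d (sum_list ds + 2 - int n) (MU k ds xs)))"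
    unfolding Lam_MU[OF len] by (rule lin_sum_scale[OF d_lin A_sub]) (use MU_A[OF hom len] in blast)
  also have "\<dots> = (\<Sum>k\<in>{1..<n}.
      sc (psign (eps n k ds)) (mu (sum_list (take k ds) + 2 - int k) (sum_list (drop k ds) + 1 - int (n - k))
      (insert_sum sc ff ops k (take k ds) (take k xs)) (ff (n - k) (drop k ds) (drop k xs)))
    - sc (psign (eps n k ds)) (mu (sum_list (take k ds) + 2 - int k) (sum_list (drop k ds) + 1 - int (n - k))
      (Lam k (take k ds) (take k xs)) (ff (n - k) (drop k ds) (drop k xs)))
    + sc (psign (eps n k ds)) (sc (psign (sum_list (take k ds) + 1 - int k))
      (mu (sum_list (take k ds) + 1 - int k) (sum_list (drop k ds) + 2 - int (n - k))
      (ff k (take k ds) (take k xs)) (insert_sum sc ff ops (n - k) (drop k ds) (drop k xs))))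
    - sc (psign (eps n k ds)) (sc (psign (sum_list (take k ds) + 1 - int k))
      (mu (sum_list (take k ds) + 1 - int k) (sum_list (drop k ds) + 2 - int (n - k))
      (ff k (take k ds) (take k xs)) (Lam (n - k) (drop k ds) (drop k xs)))))"
  proof (rule sum.cong[OF refl])
    fix k assume k: "k \<in> {1..<n}"
    let ?x = "ff k (take k ds) (take k xs)" and ?y = "ff (n - k) (drop k ds) (drop k xs)"
    let ?al = "sum_list (take k ds) + 1 - int k" and ?be = "sum_list (drop k ds) + 1 - int (n - k)"
    let ?IX = "insert_sum sc ff ops k (take k ds) (take k xs)" and ?LX = "Lam k (take k ds) (take k xs)"
    let ?IY = "insert_sum sc ff ops (n - k) (drop k ds) (drop k xs)" and ?LY = "Lam (n - k) (drop k ds) (drop k xs)"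
    have lx: "length (take k ds) = k" "1 \<le> k" "k < n" using k len by auto
    have ly: "length (drop k ds) = n - k" "1 \<le> n - k" "n - k < n" using k len by auto
    have hx: "homog M (take k ds) (take k xs)" using homog_take[OF hom] .
    have hy: "homog M (drop k ds) (drop k xs)" using homog_drop[OF hom] .
    have xA: "?x \<in> A ?al" by (rule ff_A[OF hx lx(1,2)])
    have yA: "?y \<in> A ?be" by (rule ff_A[OF hy ly(1,2)])
    have dx: "d ?al ?x = ?IX - ?LX" by (rule IH[OF lx(2,3,1) hx])
    have dy: "d ?be ?y = ?IY - ?LY" by (rule IH[OF ly(2,3,1) hy])
    have e1: "?al + 1 = sum_list (take k ds) + 2 - int k" by simp
    have e2: "?be + 1 = sum_list (drop k ds) + 2 - int (n - k)" by simp
    have LXA: "?LX \<in> A (sum_list (take k ds) + 2 - int k)" using Lam_A[OF hx lx(1)] .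
    have LYA: "?LY \<in> A (sum_list (drop k ds) + 2 - int (n - k))" using Lam_A[OF hy ly(1)] .
    have dxA: "d ?al ?x \<in> A (sum_list (take k ds) + 2 - int k)" using d_A[OF xA] e1 by simp
    have dyA: "d ?be ?y \<in> A (sum_list (drop k ds) + 2 - int (n - k))" using d_A[OF yA] e2 by simp
    have IXA: "?IX \<in> A (sum_list (take k ds) + 2 - int k)"
    proof -
      have "?IX = d ?al ?x + ?LX" using dx by simp
      then show ?thesis using subspace_add[OF A_sub dxA LXA] by simp
    qed
    have IYA: "?IY \<in> A (sum_list (drop k ds) + 2 - int (n - k))"
    proof -
      have "?IY = d ?be ?y + ?LY" using dy by simp
      then show ?thesis using subspace_add[OF A_sub dyA LYA] by simp
    qed
    have deg: "sum_list ds + 2 - int n = ?al + ?be"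
      using k len sum_take_drop[of ds k] by (simp add: of_nat_diff)
    have mu_eq: "MU k ds xs = mu ?al ?be ?x ?y" unfolding MU_def using len by simp
    have "d (sum_list ds + 2 - int n) (MU k ds xs) = mu (?al + 1) ?be (d ?al ?x) ?y + sc (psign ?al) (mu ?al (?be + 1) ?x (d ?be ?y))"
      unfolding deg mu_eq by (rule leibniz[OF xA yA])
    also have "mu (?al + 1) ?be (d ?al ?x) ?y = mu (sum_list (take k ds) + 2 - int k) ?be ?IX ?y - mu (sum_list (take k ds) + 2 - int k) ?be ?LX ?y"
      unfolding e1 dx by (rule lin_diff[OF mu_lin1[OF yA] A_sub IXA LXA])
    also have "mu ?al (?be + 1) ?x (d ?be ?y) = mu ?al (sum_list (drop k ds) + 2 - int (n - k)) ?x ?IY - mu ?al (sum_list (drop k ds) + 2 - int (n - k)) ?x ?LY"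
      unfolding e2 dy by (rule lin_diff[OF mu_lin2[OF xA] A_sub IYA LYA])
    finally have F: "d (sum_list ds + 2 - int n) (MU k ds xs) = (mu (sum_list (take k ds) + 2 - int k) ?be ?IX ?y - mu (sum_list (take k ds) + 2 - int k) ?be ?LX ?y) + sc (psign ?al) (mu ?al (sum_list (drop k ds) + 2 - int (n - k)) ?x ?IY - mu ?al (sum_list (drop k ds) + 2 - int (n - k)) ?x ?LY)" .
    show "sc (psign (eps n k ds)) (d (sum_list ds + 2 - int n) (MU k ds xs)) = 
      sc (psign (eps n k ds)) (mu (sum_list (take k ds) + 2 - int k) ?be ?IX ?y)
    - sc (psign (eps n k ds)) (mu (sum_list (take k ds) + 2 - int k) ?be ?LX ?y)
    + sc (psign (eps n k ds)) (sc (psign ?al) (mu ?al (sum_list (drop k ds) + 2 - int (n - k)) ?x ?IY))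
    - sc (psign (eps n k ds)) (sc (psign ?al) (mu ?al (sum_list (drop k ds) + 2 - int (n - k)) ?x ?LY))"
      unfolding F by (simp only: scale_right_diff_distrib scale_right_distrib add_diff_eq)
  qed
  also have "\<dots> = T1 - T3 + T2 - T4"
    unfolding T1_def T2_def T3_def T4_def by (simp add: sum.distrib sum_subtractf)
  finally show ?thesis .
qed

lemma K_step:
  assumes IH: "\<And>k es ys. 1 \<le> k \<Longrightarrow> k < n \<Longrightarrow> length es = k \<Longrightarrow> homog M es ys \<Longrightarrow>
      d (sum_list es + 1 - int k) (ff k es ys) = insert_sum sc ff ops k es ys - Lam k es ys"
  shows "d (sum_list ds + 2 - int n) (Lam n ds xs) + insert_sum sc Lam ops n ds xs = 0"
proof -
  have fin: "finite (Sigma (Sn n) (\<lambda>rs. {1..<n - snd rs + 1}))" using Sn_finite by auto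
  have un: "Sigma (Sn n) (\<lambda>rs. {1..<n - snd rs + 1}) = TT1 \<union> TT2" unfolding TT1_def TT2_def by auto
  have dj: "TT1 \<inter> TT2 = {}" unfolding TT1_def TT2_def by auto
  have f1: "finite TT1" "finite TT2" using fin un by (metis finite_Un)+
  have ISL: "insert_sum sc Lam ops n ds xs = (\<Sum>p\<in>TT1. G2 p) + (\<Sum>p\<in>TT2. G2 p)"
    unfolding ISL_eq un by (rule sum.union_disjoint[OF f1 dj])
  have D: "d (sum_list ds + 2 - int n) (Lam n ds xs) = T1 - T3 + T2 - T4" by (rule dLam[OF IH])
  have t4: "T4 = - T3" using T34 by (simp add: eq_neg_iff_add_eq_0 add.commute)
  have t1: "T1 = - (\<Sum>p\<in>TT1. G2 p)" using T1_eq T1_ISL1 by simp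
  have t2: "T2 = - (\<Sum>p\<in>TT2. G2 p)" using T2_eq T2_ISL2 by simp
  show ?thesis unfolding D ISL t4 t1 t2 by simp
qed

end
end


context xfer
begin

lemma h_add: "x \<in> A n \<Longrightarrow> y \<in> A n \<Longrightarrow> h n (x + y) = h n x + h n y" using lin_add[OF h_lin] .
lemma h_neg: "x \<in> A n \<Longrightarrow> h n (- x) = - h n x" using lin_neg[OF h_lin] .

lemma Sn_split: "1 \<le> n \<Longrightarrow> Sn n = insert (0, n) (Sn n - {(0, n)})" unfolding Sn_def by auto

lemma insert_sum_split:
  assumes "length ds = n" "1 \<le> n" "length xs = n"
  shows "insert_sum sc Ou In n ds xs = Ou 1 [sum_list ds + 2 - int n] [In n ds xs] +
     (\<Sum>rs\<in>Sn n - {(0, n)}. sc (psign (isgn n (fst rs) (snd rs) ds)) (Ou (n - snd rs + 1) (ins_ds (fst rs) (snd rs) ds) (ins_xs In (fst rs) (snd rs) ds xs)))"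
proof -
  have "insert_sum sc Ou In n ds xs = (\<Sum>rs\<in>Sn n. sc (psign (isgn n (fst rs) (snd rs) ds)) (Ou (n - snd rs + 1) (ins_ds (fst rs) (snd rs) ds) (ins_xs In (fst rs) (snd rs) ds xs)))"
    unfolding insert_sum_eq by (simp add: case_prod_beta)
  also have "\<dots> = sc (psign (isgn n 0 n ds)) (Ou (n - n + 1) (ins_ds 0 n ds) (ins_xs In 0 n ds xs)) +
     (\<Sum>rs\<in>Sn n - {(0, n)}. sc (psign (isgn n (fst rs) (snd rs) ds)) (Ou (n - snd rs + 1) (ins_ds (fst rs) (snd rs) ds) (ins_xs In (fst rs) (snd rs) ds xs)))"
  proof -
    have m: "(0, n) \<in> Sn n" using assms unfolding Sn_def by simp
    show ?thesis by (simp only: sum.remove[OF Sn_finite m] fst_conv snd_conv)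
  qed
  also have "sc (psign (isgn n 0 n ds)) (Ou (n - n + 1) (ins_ds 0 n ds) (ins_xs In 0 n ds xs)) = Ou 1 [sum_list ds + 2 - int n] [In n ds xs]"
    using assms unfolding isgn_def ins_ds_def ins_xs_def psign_def by simp
  finally show ?thesis .
qed

lemma Sn1: "Sn 1 - {(0, 1)} = {}" unfolding Sn_def by auto

lemma rest_ge2: "rs \<in> Sn n - {(0, n)} \<Longrightarrow> 2 \<le> n - snd rs + 1 \<and> fst rs + snd rs \<le> n \<and> 1 \<le> snd rs"
  unfolding Sn_def by (cases rs) auto

lemma main:
  "1 \<le> n \<Longrightarrow> length ds = n \<Longrightarrow> homog M ds xs \<Longrightarrow>
     d (sum_list ds + 1 - int n) (ff n ds xs) = insert_sum sc ff ops n ds xs - Lam n ds xs \<and>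
     d (sum_list ds + 2 - int n) (Lam n ds xs) + insert_sum sc Lam ops n ds xs = 0"
proof (induction n arbitrary: ds xs rule: less_induct)
  case (less n)
  have IH: "\<And>k es ys. 1 \<le> k \<Longrightarrow> k < n \<Longrightarrow> length es = k \<Longrightarrow> homog M es ys \<Longrightarrow>
      d (sum_list es + 1 - int k) (ff k es ys) = insert_sum sc ff ops k es ys - Lam k es ys"
    using less.IH by blast
  have K: "d (sum_list ds + 2 - int n) (Lam n ds xs) + insert_sum sc Lam ops n ds xs = 0"
    by (rule K_step[OF less.prems(3,2) IH])
  have lx: "length xs = n" using homog_length less.prems by metis
  show ?case
  proof (cases "n = 1")
    case True
    have ds1: "ds = [hd ds]" using less.prems(2) True by (cases ds) auto
    have xs1: "xs = [hd xs]" using lx True by (cases xs) auto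
    have "insert_sum sc ff ops n ds xs = ff 1 [sum_list ds + 2 - int n] [ops n ds xs]"
      using insert_sum_split[OF less.prems(2,1) lx, of ff ops, unfolded True Sn1 sum.empty] True by simp
    also have "\<dots> = d (hd ds) (hd xs)" using True ds1 xs1 unfolding ainf_ops_def by (simp add: ff_1)
    finally have "insert_sum sc ff ops n ds xs = d (hd ds) (hd xs)" .
    moreover have "ff n ds xs = hd xs" using True ff_1 by simp
    moreover have "sum_list ds = hd ds" using ds1 by (metis sum_list.Cons sum_list.Nil add.right_neutral)
    ultimately show ?thesis using K True Lam_le1 by simp
  next
    case False
    then have n2: "2 \<le> n" using less.prems(1) by simp
    define D where "D = sum_list ds + 2 - int n"
    have LA: "Lam n ds xs \<in> A D" unfolding D_def by (rule Lam_A[OF less.prems(3,2)])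
    have hom: "P D (Lam n ds xs) - Lam n ds xs = d (D - 1) (h D (Lam n ds xs)) + h (D + 1) (d D (Lam n ds xs))"
      by (rule homot[OF LA])
    have dL: "d D (Lam n ds xs) = - insert_sum sc Lam ops n ds xs" using K unfolding D_def by (simp add: eq_neg_iff_add_eq_0)
    define R where "R = Sn n - {(0, n)}"
    have memR: "Lam (n - snd rs + 1) (ins_ds (fst rs) (snd rs) ds) (ins_xs ops (fst rs) (snd rs) ds xs) \<in> A (D + 1)"
      if rs: "rs \<in> R" for rs
    proof -
      have a: "2 \<le> n - snd rs + 1" "fst rs + snd rs \<le> n" "1 \<le> snd rs" using rest_ge2 rs R_def by auto
      have rs': "(fst rs, snd rs) \<in> Sn n" using rs R_def by auto
      have l: "length (ins_ds (fst rs) (snd rs) ds) = n - snd rs + 1" using length_ins_ds a less.prems(2) by simp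
      have "Lam (n - snd rs + 1) (ins_ds (fst rs) (snd rs) ds) (ins_xs ops (fst rs) (snd rs) ds xs)
          \<in> A (sum_list (ins_ds (fst rs) (snd rs) ds) + 2 - int (n - snd rs + 1))"
        by (rule Lam_A[OF homog_ins_gen[OF less.prems(3,2) rs'] l])
      moreover have "sum_list (ins_ds (fst rs) (snd rs) ds) + 2 - int (n - snd rs + 1) = D + 1"
        using sum_list_ins_ds[of "fst rs" "snd rs" ds] a less.prems(2) unfolding D_def by (simp add: of_nat_diff)
      ultimately show ?thesis by (metis)
    qed
    have ISL: "insert_sum sc Lam ops n ds xs = (\<Sum>rs\<in>R. sc (psign (isgn n (fst rs) (snd rs) ds)) (Lam (n - snd rs + 1) (ins_ds (fst rs) (snd rs) ds) (ins_xs ops (fst rs) (snd rs) ds xs)))"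
      using insert_sum_split[OF less.prems(2,1) lx, of Lam ops] Lam_le1 unfolding R_def by simp
    have "insert_sum sc ff ops n ds xs = ff 1 [sum_list ds + 2 - int n] [ops n ds xs] +
     (\<Sum>rs\<in>R. sc (psign (isgn n (fst rs) (snd rs) ds)) (ff (n - snd rs + 1) (ins_ds (fst rs) (snd rs) ds) (ins_xs ops (fst rs) (snd rs) ds xs)))"
      unfolding R_def by (rule insert_sum_split[OF less.prems(2,1) lx])
    also have "ff 1 [sum_list ds + 2 - int n] [ops n ds xs] = P D (Lam n ds xs)"
      using n2 unfolding ainf_ops_def nu_def D_def by (simp add: ff_1)
    also have "(\<Sum>rs\<in>R. sc (psign (isgn n (fst rs) (snd rs) ds)) (ff (n - snd rs + 1) (ins_ds (fst rs) (snd rs) ds) (ins_xs ops (fst rs) (snd rs) ds xs)))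
        = (\<Sum>rs\<in>R. sc (psign (isgn n (fst rs) (snd rs) ds)) (h (D + 1) (Lam (n - snd rs + 1) (ins_ds (fst rs) (snd rs) ds) (ins_xs ops (fst rs) (snd rs) ds xs))))"
    proof (rule sum.cong[OF refl])
      fix rs assume rs: "rs \<in> R"
      have a: "2 \<le> n - snd rs + 1" "fst rs + snd rs \<le> n" "1 \<le> snd rs" using rest_ge2 rs R_def by auto
      have e: "sum_list (ins_ds (fst rs) (snd rs) ds) + 2 - int (n - snd rs + 1) = D + 1"
        using sum_list_ins_ds[of "fst rs" "snd rs" ds] a less.prems(2) unfolding D_def by (simp add: of_nat_diff)
      have f: "ff (n - snd rs + 1) (ins_ds (fst rs) (snd rs) ds) (ins_xs ops (fst rs) (snd rs) ds xs)
          = h (D + 1) (Lam (n - snd rs + 1) (ins_ds (fst rs) (snd rs) ds) (ins_xs ops (fst rs) (snd rs) ds xs))"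
        using ff_ge2[OF a(1), of "ins_ds (fst rs) (snd rs) ds" "ins_xs ops (fst rs) (snd rs) ds xs"] unfolding e .
      show "sc (psign (isgn n (fst rs) (snd rs) ds)) (ff (n - snd rs + 1) (ins_ds (fst rs) (snd rs) ds) (ins_xs ops (fst rs) (snd rs) ds xs))
        = sc (psign (isgn n (fst rs) (snd rs) ds)) (h (D + 1) (Lam (n - snd rs + 1) (ins_ds (fst rs) (snd rs) ds) (ins_xs ops (fst rs) (snd rs) ds xs)))"
        by (simp only: f)
    qed
    also have "\<dots> = h (D + 1) (insert_sum sc Lam ops n ds xs)"
      unfolding ISL by (rule lin_sum_scale[OF h_lin A_sub, symmetric]) (use memR in blast)
    finally have IS: "insert_sum sc ff ops n ds xs = P D (Lam n ds xs) + h (D + 1) (insert_sum sc Lam ops n ds xs)" .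
    have ISLA: "insert_sum sc Lam ops n ds xs \<in> A (D + 1)"
      unfolding ISL by (rule subspace_sum[OF A_sub], rule subspace_scale[OF A_sub]) (use memR in blast)
    have ffeq: "ff n ds xs = h D (Lam n ds xs)" using ff_ge2[OF n2] unfolding D_def by simp
    have eD: "sum_list ds + 1 - int n = D - 1" unfolding D_def by simp
    have "d (sum_list ds + 1 - int n) (ff n ds xs) = d (D - 1) (h D (Lam n ds xs))" unfolding ffeq eD ..
    also have "\<dots> = P D (Lam n ds xs) - Lam n ds xs - h (D + 1) (d D (Lam n ds xs))" using hom by (simp add: algebra_simps)
    also have "h (D + 1) (d D (Lam n ds xs)) = - h (D + 1) (insert_sum sc Lam ops n ds xs)" unfolding dL using h_neg[OF ISLA] .
    finally show ?thesis using IS K by simp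
  qed
qed

lemma ainf_rel:
  assumes "1 \<le> n" "length ds = n" "homog M ds xs"
  shows "insert_sum sc ops ops n ds xs = 0"
proof -
  have lx: "length xs = n" using homog_length assms by metis
  show ?thesis
  proof (cases "n = 1")
    case True
    have ds1: "ds = [hd ds]" using assms(2) True by (cases ds) auto
    have xs1: "xs = [hd xs]" using lx True by (cases xs) auto
    have x: "hd xs \<in> A (hd ds)" using homog_hd[OF assms(3)] assms(2) True M_A by blast
    have "insert_sum sc ops ops n ds xs = ops 1 [sum_list ds + 2 - int n] [ops n ds xs]"
      using insert_sum_split[OF assms(2,1) lx, of ops ops, unfolded True Sn1 sum.empty] True by simp
    also have "\<dots> = d (hd ds + 1) (d (hd ds) (hd xs))"
    proof -
      have s: "sum_list ds = hd ds" using sum_list_one assms(2) True by simp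
      show ?thesis using True s unfolding ainf_ops_def by (simp add: add.commute)
    qed
    also have "\<dots> = 0" using dd[OF x] .
    finally show ?thesis .
  next
    case False
    then have n2: "2 \<le> n" using assms(1) by simp
    define D where "D = sum_list ds + 2 - int n"
    define R where "R = Sn n - {(0, n)}"
    have LA: "Lam n ds xs \<in> A D" unfolding D_def by (rule Lam_A[OF assms(3,2)])
    have memR: "Lam (n - snd rs + 1) (ins_ds (fst rs) (snd rs) ds) (ins_xs ops (fst rs) (snd rs) ds xs) \<in> A (D + 1)"
      if rs: "rs \<in> R" for rs
    proof -
      have a: "2 \<le> n - snd rs + 1" "fst rs + snd rs \<le> n" "1 \<le> snd rs" using rest_ge2 rs R_def by auto
      have rs': "(fst rs, snd rs) \<in> Sn n" using rs R_def by auto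
      have l: "length (ins_ds (fst rs) (snd rs) ds) = n - snd rs + 1" using length_ins_ds a assms(2) by simp
      have "Lam (n - snd rs + 1) (ins_ds (fst rs) (snd rs) ds) (ins_xs ops (fst rs) (snd rs) ds xs)
          \<in> A (sum_list (ins_ds (fst rs) (snd rs) ds) + 2 - int (n - snd rs + 1))"
        by (rule Lam_A[OF homog_ins_gen[OF assms(3,2) rs'] l])
      moreover have "sum_list (ins_ds (fst rs) (snd rs) ds) + 2 - int (n - snd rs + 1) = D + 1"
        using sum_list_ins_ds[of "fst rs" "snd rs" ds] a assms(2) unfolding D_def by (simp add: of_nat_diff)
      ultimately show ?thesis by (metis)
    qed
    have ISL: "insert_sum sc Lam ops n ds xs = (\<Sum>rs\<in>R. sc (psign (isgn n (fst rs) (snd rs) ds)) (Lam (n - snd rs + 1) (ins_ds (fst rs) (snd rs) ds) (ins_xs ops (fst rs) (snd rs) ds xs)))"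
      using insert_sum_split[OF assms(2,1) lx, of Lam ops] Lam_le1 unfolding R_def by simp
    have "insert_sum sc ops ops n ds xs = ops 1 [sum_list ds + 2 - int n] [ops n ds xs] +
     (\<Sum>rs\<in>R. sc (psign (isgn n (fst rs) (snd rs) ds)) (ops (n - snd rs + 1) (ins_ds (fst rs) (snd rs) ds) (ins_xs ops (fst rs) (snd rs) ds xs)))"
      unfolding R_def by (rule insert_sum_split[OF assms(2,1) lx])
    also have "ops 1 [sum_list ds + 2 - int n] [ops n ds xs] = P (D + 1) (d D (Lam n ds xs))"
      using n2 P_chain[OF LA] unfolding ainf_ops_def nu_def D_def by simp
    also have "(\<Sum>rs\<in>R. sc (psign (isgn n (fst rs) (snd rs) ds)) (ops (n - snd rs + 1) (ins_ds (fst rs) (snd rs) ds) (ins_xs ops (fst rs) (snd rs) ds xs)))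
        = (\<Sum>rs\<in>R. sc (psign (isgn n (fst rs) (snd rs) ds)) (P (D + 1) (Lam (n - snd rs + 1) (ins_ds (fst rs) (snd rs) ds) (ins_xs ops (fst rs) (snd rs) ds xs))))"
    proof (rule sum.cong[OF refl])
      fix rs assume rs: "rs \<in> R"
      have a: "2 \<le> n - snd rs + 1" "fst rs + snd rs \<le> n" "1 \<le> snd rs" using rest_ge2 rs R_def by auto
      have e: "sum_list (ins_ds (fst rs) (snd rs) ds) + 2 - int (n - snd rs + 1) = D + 1"
        using sum_list_ins_ds[of "fst rs" "snd rs" ds] a assms(2) unfolding D_def by (simp add: of_nat_diff)
      have ne: "\<not> (n - snd rs + 1 = 1)" using a(1) by simp
      have f: "ops (n - snd rs + 1) (ins_ds (fst rs) (snd rs) ds) (ins_xs ops (fst rs) (snd rs) ds xs)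
          = P (D + 1) (Lam (n - snd rs + 1) (ins_ds (fst rs) (snd rs) ds) (ins_xs ops (fst rs) (snd rs) ds xs))"
        unfolding ainf_ops_def if_not_P[OF ne] nu_def e ..
      show "sc (psign (isgn n (fst rs) (snd rs) ds)) (ops (n - snd rs + 1) (ins_ds (fst rs) (snd rs) ds) (ins_xs ops (fst rs) (snd rs) ds xs))
        = sc (psign (isgn n (fst rs) (snd rs) ds)) (P (D + 1) (Lam (n - snd rs + 1) (ins_ds (fst rs) (snd rs) ds) (ins_xs ops (fst rs) (snd rs) ds xs)))"
        by (simp only: f)
    qed
    also have "\<dots> = P (D + 1) (insert_sum sc Lam ops n ds xs)"
      unfolding ISL by (rule lin_sum_scale[OF P_lin A_sub, symmetric]) (use memR in blast)
    also have "P (D + 1) (d D (Lam n ds xs)) + P (D + 1) (insert_sum sc Lam ops n ds xs) = P (D + 1) (d D (Lam n ds xs) + insert_sum sc Lam ops n ds xs)"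
    proof -
      have ISLA: "insert_sum sc Lam ops n ds xs \<in> A (D + 1)"
        unfolding ISL by (rule subspace_sum[OF A_sub], rule subspace_scale[OF A_sub]) (use memR in blast)
      show ?thesis using lin_add[OF P_lin d_A[OF LA] ISLA] by simp
    qed
    also have "d D (Lam n ds xs) + insert_sum sc Lam ops n ds xs = 0"
      using main[OF assms(1,2,3)] unfolding D_def by simp
    finally show ?thesis using lin_zero[OF P_lin A_sub] by simp
  qed
qed

end


lemma length_le_sum_list: "0 \<notin> set cs \<Longrightarrow> length cs \<le> sum_list (cs :: nat list)"
  by (induction cs) auto

lemma compositions_finite: "finite (compositions n)"
proof -
  have "compositions n \<subseteq> {cs. set cs \<subseteq> {0..n} \<and> length cs \<le> n}"
  proof
    fix cs assume "cs \<in> compositions n"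
    then have cs: "sum_list cs = n" "0 \<notin> set cs" unfolding compositions_def by auto
    have "set cs \<subseteq> {0..n}" using cs(1) member_le_sum_list by fastforce
    moreover have "length cs \<le> n" using length_le_sum_list[OF cs(2)] cs(1) by simp
    ultimately show "cs \<in> {cs. set cs \<subseteq> {0..n} \<and> length cs \<le> n}" by blast
  qed
  moreover have "finite {cs. set cs \<subseteq> {0..n} \<and> length cs \<le> n}"
    by (rule finite_lists_length_le) simp
  ultimately show ?thesis using finite_subset by blast
qed

lemma keller_1: "keller_exp [n] = 0" unfolding keller_exp_def by simp
lemma keller_2: "keller_exp [k, l] = int k - 1" unfolding keller_exp_def by (simp add: numeral_2_eq_2)

context xfer
begin

abbreviation opsA where "opsA \<equiv> ainf_ops d (dg_nu mu)"

definition csum :: "nat \<Rightarrow> int list \<Rightarrow> 'a list \<Rightarrow> nat list \<Rightarrow> 'a" where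
  "csum n ds xs cs = (let dbs = blocks cs ds; xbs = blocks cs xs in
        sc (psign (keller_exp cs + koszul_exp 0 cs dbs))
           (opsA (length cs)
              (map (\<lambda>(i, b). sum_list b + 1 - int i) (zip cs dbs))
              (map (\<lambda>(i, (db, xb)). ff i db xb) (zip cs (zip dbs xbs)))))"

lemma comp_sum_csum: "comp_sum sc opsA ff n ds xs = (\<Sum>cs\<in>compositions n. csum n ds xs cs)"
  unfolding comp_sum_def csum_def by simp

lemma csum_long: "3 \<le> length cs \<Longrightarrow> csum n ds xs cs = 0"
  unfolding csum_def Let_def ainf_ops_def dg_nu_def by simp

lemma csum_one: "length ds = n \<Longrightarrow> length xs = n \<Longrightarrow> csum n ds xs [n] = d (sum_list ds + 1 - int n) (ff n ds xs)"
  unfolding csum_def Let_def ainf_ops_def keller_1 by (simp add: psign_def)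

lemma csum_two: "length ds = n \<Longrightarrow> length xs = n \<Longrightarrow> k < n \<Longrightarrow>
   csum n ds xs [k, n - k] = sc (psign (int k - 1 + (1 - int (n - k)) * sum_list (take k ds)))
          (mu (sum_list (take k ds) + 1 - int k) (sum_list (drop k ds) + 1 - int (n - k))
             (ff k (take k ds) (take k xs)) (ff (n - k) (drop k ds) (drop k xs)))"
  unfolding csum_def Let_def ainf_ops_def dg_nu_def keller_2 by simp

lemma comp_sum_eq:
  assumes "1 \<le> n" "length ds = n" "length xs = n"
  shows "comp_sum sc opsA ff n ds xs = d (sum_list ds + 1 - int n) (ff n ds xs) + Lam n ds xs"
proof -
  define C where "C = insert [n] ((\<lambda>k. [k, n - k]) ` {1..<n})"
  have CC: "C \<subseteq> compositions n" unfolding C_def compositions_def using assms(1) by auto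
  have out: "csum n ds xs cs = 0" if cs: "cs \<in> compositions n - C" for cs
  proof -
    have cs': "sum_list cs = n" "0 \<notin> set cs" "cs \<notin> C" using cs unfolding compositions_def by auto
    have "3 \<le> length cs"
    proof (rule ccontr)
      assume "\<not> 3 \<le> length cs"
      then have "length cs = 0 \<or> length cs = 1 \<or> length cs = 2" by presburger
      then show False
      proof (elim disjE)
        assume "length cs = 0" then show False using cs' assms(1) by simp
      next
        assume "length cs = 1"
        then obtain a where "cs = [a]" by (cases cs) auto
        then show False using cs' unfolding C_def by simp
      next
        assume "length cs = 2"
        then obtain a b where ab: "cs = [a, b]" by (cases cs; cases "tl cs") auto
        then have "a + b = n" "a \<noteq> 0" "b \<noteq> 0" using cs' by auto
        then have "cs \<in> C" unfolding C_def ab by (auto intro!: image_eqI[of _ _ a])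
        then show False using cs' by simp
      qed
    qed
    then show ?thesis by (rule csum_long)
  qed
  have "comp_sum sc opsA ff n ds xs = (\<Sum>cs\<in>C. csum n ds xs cs)"
    unfolding comp_sum_csum by (rule sum.mono_neutral_right[OF compositions_finite CC]) (use out in blast)
  also have "\<dots> = csum n ds xs [n] + (\<Sum>cs\<in>(\<lambda>k. [k, n - k]) ` {1..<n}. csum n ds xs cs)"
    unfolding C_def by (rule sum.insert) auto
  also have "(\<Sum>cs\<in>(\<lambda>k. [k, n - k]) ` {1..<n}. csum n ds xs cs) = (\<Sum>k\<in>{1..<n}. csum n ds xs [k, n - k])"
    by (rule sum.reindex_cong[where l="\<lambda>k. [k, n - k]"]) (auto simp: inj_on_def)
  also have "\<dots> = Lam n ds xs"
    unfolding Lam_def by (rule sum.cong[OF refl]) (use csum_two assms in auto)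
  finally show ?thesis using csum_one assms by simp
qed

lemma morphism_eq:
  assumes "1 \<le> n" "length ds = n" "homog M ds xs"
  shows "insert_sum sc ff ops n ds xs = comp_sum sc opsA ff n ds xs"
proof -
  have lx: "length xs = n" using homog_length assms by metis
  show ?thesis unfolding comp_sum_eq[OF assms(1,2) lx] using main[OF assms] by simp
qed

end


context vector_space
begin

lemma lin_compose:
  assumes "linear_on scale scale V f" "\<And>y. y \<in> V \<Longrightarrow> f y \<in> W" "linear_on scale scale W g"
  shows "linear_on scale scale V (\<lambda>y. g (f y))"
  using assms unfolding linear_on_def by (metis subspace_def)

lemma lin_sum_fun:
  assumes "\<And>k. k \<in> K \<Longrightarrow> linear_on scale scale V (f k)"
  shows "linear_on scale scale V (\<lambda>y. \<Sum>k\<in>K. f k y)"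
  unfolding linear_on_def
proof (intro conjI ballI allI)
  fix x y assume "x \<in> V" "y \<in> V"
  then show "(\<Sum>k\<in>K. f k (x + y)) = (\<Sum>k\<in>K. f k x) + (\<Sum>k\<in>K. f k y)"
    using assms unfolding linear_on_def by (simp add: sum.distrib)
next
  fix c x assume "x \<in> V"
  then show "(\<Sum>k\<in>K. f k (c *s x)) = c *s (\<Sum>k\<in>K. f k x)"
    using assms unfolding linear_on_def by (simp add: scale_sum_right)
qed

lemma lin_scale_fun:
  assumes "linear_on scale scale V f"
  shows "linear_on scale scale V (\<lambda>y. c *s f y)"
  using assms unfolding linear_on_def by (simp add: scale_right_distrib scale_left_commute)

lemma lin_id: "linear_on scale scale V (\<lambda>y. y)" unfolding linear_on_def by simp

lemma lin_mono: "linear_on scale scale V f \<Longrightarrow> W \<subseteq> V \<Longrightarrow> linear_on scale scale W f"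
  unfolding linear_on_def by blast

end

lemma homog_update: "homog V ds xs \<Longrightarrow> i < length ds \<Longrightarrow> y \<in> V (ds ! i) \<Longrightarrow> homog V ds (xs[i := y])"
  unfolding homog_def by (auto simp: nth_list_update)

context xfer
begin

lemma Lam_lin_from:
  assumes IH: "\<And>k es ys j. 1 \<le> k \<Longrightarrow> k < s \<Longrightarrow> length es = k \<Longrightarrow> homog M es ys \<Longrightarrow> j < k \<Longrightarrow>
      linear_on sc sc (M (es ! j)) (\<lambda>y. ff k es (ys[j := y]))"
    and len: "length ds = s" and hom: "homog M ds xs" and i: "i < s"
  shows "linear_on sc sc (M (ds ! i)) (\<lambda>y. Lam s ds (xs[i := y]))"
  unfolding Lam_def
proof (rule lin_sum_fun, rule lin_scale_fun)
  fix k assume k: "k \<in> {1..<s}"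
  have lx: "length xs = s" using homog_length hom len by metis
  show "linear_on sc sc (M (ds ! i)) (\<lambda>y. mu (sum_list (take k ds) + 1 - int k) (sum_list (drop k ds) + 1 - int (s - k))
       (ff k (take k ds) (take k (xs[i := y]))) (ff (s - k) (drop k ds) (drop k (xs[i := y]))))"
  proof (cases "i < k")
    case True
    have e1: "\<And>y. take k (xs[i := y]) = (take k xs)[i := y]" by (rule take_update_swap)
    have e2: "\<And>y. drop k (xs[i := y]) = drop k xs" using True by simp
    have ly: "length (drop k ds) = s - k" "1 \<le> s - k" using k len by auto
    have yA: "ff (s - k) (drop k ds) (drop k xs) \<in> A (sum_list (drop k ds) + 1 - int (s - k))"
      by (rule ff_A[OF homog_drop[OF hom] ly])
    have lt: "length (take k ds) = k" "1 \<le> k" "k < s" using k len by auto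
    have nth: "take k ds ! i = ds ! i" using True by simp
    have L: "linear_on sc sc (M (ds ! i)) (\<lambda>y. ff k (take k ds) ((take k xs)[i := y]))"
      using IH[OF lt(2,3,1) homog_take[OF hom] True] nth by simp
    have memb: "ff k (take k ds) ((take k xs)[i := y]) \<in> A (sum_list (take k ds) + 1 - int k)" if y: "y \<in> M (ds ! i)" for y
    proof -
      have "homog M (take k ds) ((take k xs)[i := y])"
        by (rule homog_update[OF homog_take[OF hom]]) (use True lt nth y in auto)
      then show ?thesis by (rule ff_A[OF _ lt(1,2)])
    qed
    show ?thesis unfolding e1 e2 by (rule lin_compose[OF L memb mu_lin1[OF yA]])
  next
    case False
    have e1: "\<And>y. take k (xs[i := y]) = take k xs" using False by simp
    have e2: "\<And>y. drop k (xs[i := y]) = (drop k xs)[i - k := y]" using False by (simp add: drop_update_swap)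
    have lt: "length (take k ds) = k" "1 \<le> k" using k len by auto
    have xA: "ff k (take k ds) (take k xs) \<in> A (sum_list (take k ds) + 1 - int k)"
      by (rule ff_A[OF homog_take[OF hom] lt])
    have ly: "length (drop k ds) = s - k" "1 \<le> s - k" "s - k < s" using k len by auto
    have ik: "i - k < s - k" using False i by simp
    have nth: "drop k ds ! (i - k) = ds ! i" using False len i by simp
    have L: "linear_on sc sc (M (ds ! i)) (\<lambda>y. ff (s - k) (drop k ds) ((drop k xs)[i - k := y]))"
      using IH[OF ly(2,3,1) homog_drop[OF hom] ik] nth by simp
    have memb: "ff (s - k) (drop k ds) ((drop k xs)[i - k := y]) \<in> A (sum_list (drop k ds) + 1 - int (s - k))"
      if y: "y \<in> M (ds ! i)" for y
    proof -
      have "homog M (drop k ds) ((drop k xs)[i - k := y])"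
        by (rule homog_update[OF homog_drop[OF hom]]) (use ik ly nth y in auto)
      then show ?thesis by (rule ff_A[OF _ ly(1,2)])
    qed
    show ?thesis unfolding e1 e2 by (rule lin_compose[OF L memb mu_lin2[OF xA]])
  qed
qed

lemma ff_lin:
  "1 \<le> s \<Longrightarrow> length ds = s \<Longrightarrow> homog M ds xs \<Longrightarrow> i < s \<Longrightarrow> linear_on sc sc (M (ds ! i)) (\<lambda>y. ff s ds (xs[i := y]))"
proof (induction s arbitrary: ds xs i rule: less_induct)
  case (less s)
  show ?case
  proof (cases "s = 1")
    case True
    have lx: "length xs = 1" using homog_length less.prems True by metis
    then obtain x0 where "xs = [x0]" by (cases xs) auto
    moreover have "i = 0" using less.prems True by simp
    ultimately show ?thesis using True ff_1 lin_id by simp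
  next
    case False
    then have s2: "2 \<le> s" using less.prems by simp
    have LL: "linear_on sc sc (M (ds ! i)) (\<lambda>y. Lam s ds (xs[i := y]))"
      by (rule Lam_lin_from[OF _ less.prems(2,3,4)]) (use less.IH in blast)
    have memb: "Lam s ds (xs[i := y]) \<in> A (sum_list ds + 2 - int s)" if y: "y \<in> M (ds ! i)" for y
      by (rule Lam_A[OF homog_update[OF less.prems(3)] less.prems(2)]) (use less.prems y in auto)
    have "linear_on sc sc (M (ds ! i)) (\<lambda>y. h (sum_list ds + 2 - int s) (Lam s ds (xs[i := y])))"
      by (rule lin_compose[OF LL memb h_lin])
    then show ?thesis using ff_ge2[OF s2] by simp
  qed
qed

lemma Lam_lin: "length ds = s \<Longrightarrow> homog M ds xs \<Longrightarrow> i < s \<Longrightarrow> linear_on sc sc (M (ds ! i)) (\<lambda>y. Lam s ds (xs[i := y]))"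
  by (rule Lam_lin_from) (use ff_lin in blast)+

lemma ff_multilinear: "1 \<le> s \<Longrightarrow> multilinear_op sc M sc A s (1 - int s) (ff s)"
  unfolding multilinear_op_def
proof (intro conjI allI impI)
  fix ds xs assume "1 \<le> s" "length ds = s" "homog M ds xs"
  then show "ff s ds xs \<in> A (sum_list ds + (1 - int s))" using ff_A by (simp add: add_diff_eq)
next
  fix ds xs i assume "1 \<le> s" "length ds = s" "homog M ds xs" "i < s"
  then show "linear_on sc sc (M (ds ! i)) (\<lambda>y. ff s ds (xs[i := y]))" by (rule ff_lin)
qed

lemma nu_multilinear: "2 \<le> s \<Longrightarrow> multilinear_op sc M sc M s (2 - int s) (nu s)"
  unfolding multilinear_op_def
proof (intro conjI allI impI)
  fix ds xs assume "2 \<le> s" "length ds = s" "homog M ds xs"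
  then show "nu s ds xs \<in> M (sum_list ds + (2 - int s))" using nu_M by (simp add: add_diff_eq)
next
  fix ds xs i assume a: "2 \<le> s" "length ds = s" "homog M ds xs" "i < s"
  have memb: "Lam s ds (xs[i := y]) \<in> A (sum_list ds + 2 - int s)" if y: "y \<in> M (ds ! i)" for y
    by (rule Lam_A[OF homog_update[OF a(3)] a(2)]) (use a y in auto)
  show "linear_on sc sc (M (ds ! i)) (\<lambda>y. nu s ds (xs[i := y]))"
    unfolding nu_def by (rule lin_compose[OF Lam_lin[OF a(2,3,4)] memb P_lin])
qed

end

locale xferF = xfer +
  fixes F :: "int \<Rightarrow> int \<Rightarrow> _ set"
  assumes F_sub: "subspace (F p n)"
    and mu_F: "x \<in> F p n \<Longrightarrow> y \<in> F q m \<Longrightarrow> mu n m x y \<in> F (p + q) (n + m)"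
    and h_F: "x \<in> F p n \<Longrightarrow> h n x \<in> F p (n - 1)"
    and P_F: "x \<in> F p n \<Longrightarrow> P n x \<in> F p n"
begin

lemma ff_F:
  "1 \<le> s \<Longrightarrow> length ds = s \<Longrightarrow> homog M ds xs \<Longrightarrow> length ps = s \<Longrightarrow> (\<forall>i<s. xs ! i \<in> F (ps ! i) (ds ! i)) \<Longrightarrow>
    ff s ds xs \<in> F (sum_list ps) (sum_list ds + 1 - int s) \<and> Lam s ds xs \<in> F (sum_list ps) (sum_list ds + 2 - int s)"
proof (induction s arbitrary: ds xs ps rule: less_induct)
  case (less s)
  have LF: "Lam s ds xs \<in> F (sum_list ps) (sum_list ds + 2 - int s)"
    unfolding Lam_def
  proof (rule subspace_sum[OF F_sub], rule subspace_scale[OF F_sub])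
    fix k assume k: "k \<in> {1..<s}"
    have h1: "homog M (take k ds) (take k xs)" using homog_take less.prems(3) .
    have h2: "homog M (drop k ds) (drop k xs)" using homog_drop less.prems(3) .
    have lx: "length xs = s" using homog_length less.prems by metis
    have f1: "\<forall>i<k. take k xs ! i \<in> F (take k ps ! i) (take k ds ! i)" using less.prems(5) k by auto
    have f2: "\<forall>i<s - k. drop k xs ! i \<in> F (drop k ps ! i) (drop k ds ! i)" using less.prems(2,4,5) k lx by auto
    have A1: "ff k (take k ds) (take k xs) \<in> F (sum_list (take k ps)) (sum_list (take k ds) + 1 - int k)"
      using less.IH[of k "take k ds" "take k xs" "take k ps"] h1 f1 k less.prems(2,4) by auto
    have A2: "ff (s - k) (drop k ds) (drop k xs) \<in> F (sum_list (drop k ps)) (sum_list (drop k ds) + 1 - int (s - k))"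
      using less.IH[of "s - k" "drop k ds" "drop k xs" "drop k ps"] h2 f2 k less.prems(2,4) by auto
    have "mu (sum_list (take k ds) + 1 - int k) (sum_list (drop k ds) + 1 - int (s - k))
             (ff k (take k ds) (take k xs)) (ff (s - k) (drop k ds) (drop k xs))
       \<in> F (sum_list (take k ps) + sum_list (drop k ps)) (sum_list (take k ds) + 1 - int k + (sum_list (drop k ds) + 1 - int (s - k)))"
      by (rule mu_F[OF A1 A2])
    moreover have "sum_list (take k ps) + sum_list (drop k ps) = sum_list ps"
      by (metis sum_list_append append_take_drop_id)
    moreover have "sum_list (take k ds) + 1 - int k + (sum_list (drop k ds) + 1 - int (s - k)) = sum_list ds + 2 - int s"
      using k sum_take_drop[of ds k] by (simp add: of_nat_diff)
    ultimately show "mu (sum_list (take k ds) + 1 - int k) (sum_list (drop k ds) + 1 - int (s - k))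
             (ff k (take k ds) (take k xs)) (ff (s - k) (drop k ds) (drop k xs))
       \<in> F (sum_list ps) (sum_list ds + 2 - int s)" by simp
  qed
  show ?case
  proof (cases "s = 1")
    case True
    have ds1: "ds = [hd ds]" using less.prems(2) True by (cases ds) auto
    have ps1: "ps = [hd ps]" using less.prems(4) True by (cases ps) auto
    have lx: "length xs = 1" using homog_length less.prems True by metis
    then have xs1: "xs = [hd xs]" by (cases xs) auto
    have "hd xs \<in> F (hd ps) (hd ds)" using less.prems(5) True ds1 ps1 xs1 by (metis nth_Cons_0 zero_less_one)
    moreover have "sum_list ps = hd ps" by (subst ps1) simp
    moreover have "sum_list ds = hd ds" by (subst ds1) simp
    ultimately show ?thesis using True ff_1 LF by simp
  next
    case False
    then have s2: "2 \<le> s" using less.prems by simp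
    have "h (sum_list ds + 2 - int s) (Lam s ds xs) \<in> F (sum_list ps) (sum_list ds + 2 - int s - 1)"
      by (rule h_F[OF LF])
    then show ?thesis using ff_ge2[OF s2] LF by (simp add: algebra_simps)
  qed
qed

lemma ff_filtered: "1 \<le> s \<Longrightarrow> filtered_op M (\<lambda>p n. F p n \<inter> M n) F s (1 - int s) (ff s)"
  unfolding filtered_op_def
proof (intro allI impI)
  fix ps ds xs assume a: "1 \<le> s" "length ps = s" "length ds = s" "homog M ds xs"
    "\<forall>i<s. xs ! i \<in> F (ps ! i) (ds ! i) \<inter> M (ds ! i)"
  then have "ff s ds xs \<in> F (sum_list ps) (sum_list ds + 1 - int s)" using ff_F by blast
  then show "ff s ds xs \<in> F (sum_list ps) (sum_list ds + (1 - int s))" by (simp add: add_diff_eq)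
qed

lemma nu_filtered: "2 \<le> s \<Longrightarrow> filtered_op M (\<lambda>p n. F p n \<inter> M n) (\<lambda>p n. F p n \<inter> M n) s (2 - int s) (nu s)"
  unfolding filtered_op_def
proof (intro allI impI)
  fix ps ds xs assume a: "2 \<le> s" "length ps = s" "length ds = s" "homog M ds xs"
    "\<forall>i<s. xs ! i \<in> F (ps ! i) (ds ! i) \<inter> M (ds ! i)"
  then have "Lam s ds xs \<in> F (sum_list ps) (sum_list ds + 2 - int s)" using ff_F[of s ds xs ps] by auto
  then have "nu s ds xs \<in> F (sum_list ps) (sum_list ds + 2 - int s)" unfolding nu_def by (rule P_F)
  moreover have "nu s ds xs \<in> M (sum_list ds + 2 - int s)" using nu_M a by blast
  ultimately show "nu s ds xs \<in> F (sum_list ps) (sum_list ds + (2 - int s)) \<inter> M (sum_list ds + (2 - int s))"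
    by (simp add: add_diff_eq)
qed

end


context fdga
begin

lemma mu_F: "x \<in> F p n \<Longrightarrow> y \<in> F q m \<Longrightarrow> mu n m x y \<in> F (p + q) (n + m)"
  using fdg unfolding filtered_dg_algebra_def by simp

end

sublocale fdga \<subseteq> X: xferF sc A d mu M PP hh F
proof unfold_locales
  show "dg_algebra sc A d mu" by (rule dga)
  show "\<And>n. subspace (M n)" by (rule M_sub)
  show "\<And>n. M n \<subseteq> A n" by (rule M_A)
  show "\<And>x n. x \<in> M n \<Longrightarrow> d n x \<in> M (n + 1)" by (rule d_M)
  show "\<And>n. linear_on sc sc (A n) (PP n)" by (rule PP_lin)
  show "\<And>x n. x \<in> A n \<Longrightarrow> PP n x \<in> M n" by (rule PP_M)
  show "\<And>x n. x \<in> A n \<Longrightarrow> PP (n + 1) (d n x) = d n (PP n x)" by (rule PP_chain)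
  show "\<And>n. linear_on sc sc (A n) (hh n)" by (rule hh_lin)
  show "\<And>x n. x \<in> A n \<Longrightarrow> hh n x \<in> A (n - 1)" by (rule hh_A)
  show "\<And>x n. x \<in> A n \<Longrightarrow> PP n x - x = d (n - 1) (hh n x) + hh (n + 1) (d n x)" by (rule PP_homotopy)
  show "\<And>p n. subspace (F p n)" by (rule F_sub)
  show "\<And>x p n y q m. x \<in> F p n \<Longrightarrow> y \<in> F q m \<Longrightarrow> mu n m x y \<in> F (p + q) (n + m)" by (rule mu_F)
  show "\<And>x p n. x \<in> F p n \<Longrightarrow> hh n x \<in> F p (n - 1)" by (rule hh_F)
  show "\<And>x p n. x \<in> F p n \<Longrightarrow> PP n x \<in> F p n" by (rule PP_F)
qed

context fdga
begin

lemma FM_eq: "FM = (\<lambda>p n. F p n \<inter> M n)" by (rule ext)+ (simp add: FM_def)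

lemma fmm: "filtered_minimal_model sc A F d mu M FM d X.nu X.ff"
proof -
  have gs: "graded_space sc M" unfolding graded_space_def using vector_space_axioms M_sub by blast
  have dlinM: "\<forall>n. linear_on sc sc (M n) (d n) \<and> (\<forall>x\<in>M n. d n x \<in> M (n + 1))"
  proof (intro allI conjI ballI)
    fix n show "linear_on sc sc (M n) (d n)" by (rule lin_mono[OF d_lin M_A])
  next
    fix n x assume "x \<in> M n" then show "d n x \<in> M (n + 1)" by (rule d_M)
  qed
  have ainf: "ainf_algebra sc M d X.nu"
    unfolding ainf_algebra_def
  proof (intro conjI)
    show "graded_space sc M" by (rule gs)
    show "\<forall>n. linear_on sc sc (M n) (d n) \<and> (\<forall>x\<in>M n. d n x \<in> M (n + 1))" by (rule dlinM)
    show "\<forall>s\<ge>2. multilinear_op sc M sc M s (2 - int s) (X.nu s)" by (intro allI impI) (rule X.nu_multilinear)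
    show "\<forall>n\<ge>1. \<forall>ds xs. length ds = n \<longrightarrow> homog M ds xs \<longrightarrow> insert_sum sc (ainf_ops d X.nu) (ainf_ops d X.nu) n ds xs = 0"
      by (intro allI impI) (rule X.ainf_rel)
  qed
  have filtM: "filtration sc M FM"
    unfolding filtration_def
  proof (intro conjI allI)
    fix p n show "subspace (FM p n)" by (rule FM_sub)
    show "FM p n \<subseteq> M n" by (rule FM_M)
    show "FM (p + 1) n \<subseteq> FM p n" by (rule FM_dec)
  next
    fix n show "(\<Union>p. FM p n) = M n"
    proof
      show "(\<Union>p. FM p n) \<subseteq> M n" using FM_M by (simp add: UN_least)
      show "M n \<subseteq> (\<Union>p. FM p n)"
      proof
        fix x assume x: "x \<in> M n"
        then have "x \<in> A n" using M_A by blast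
        then obtain p where "x \<in> F p n" using F_exh by blast
        then have "x \<in> FM p n" using x unfolding FM_def by simp
        then show "x \<in> (\<Union>p. FM p n)" by (rule UN_I[OF UNIV_I])
      qed
    qed
  next
    fix n show "\<exists>p. FM p n = {0}" by (rule FM_bnd)
  qed
  have dFM: "\<forall>p n. \<forall>x\<in>FM p n. d n x \<in> FM p (n + 1)"
  proof (intro allI ballI)
    fix p n x assume "x \<in> FM p n"
    then have "x \<in> F p n" "x \<in> M n" unfolding FM_def by auto
    then show "d n x \<in> FM p (n + 1)" unfolding FM_def using d_F d_M by simp
  qed
  have nuF: "\<forall>s\<ge>2. filtered_op M FM FM s (2 - int s) (X.nu s)" unfolding FM_eq by (intro allI impI) (rule X.nu_filtered)
  have fainf: "filtered_ainf_algebra sc M FM d X.nu"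
    unfolding filtered_ainf_algebra_def by (intro conjI ainf filtM dFM nuF)
  have bigr: "\<exists>B :: int \<Rightarrow> int \<Rightarrow> 'a set.
        (\<forall>p q. subspace (B p q) \<and> B p q \<subseteq> M (p + q)) \<and>
        (\<forall>n. independent_family (\<lambda>q. B q (n - q))) \<and>
        (\<forall>p n. FM p n = span (\<Union>q\<in>{p..}. B q (n - q)))"
  proof (intro exI[of _ "\<lambda>p q. BBq p (p + q)"] conjI allI)
    fix p q show "subspace (BBq p (p + q))" by (rule BBq_sub)
    show "BBq p (p + q) \<subseteq> M (p + q)" by (rule BBq_M)
  next
    fix n show "independent_family (\<lambda>q. BBq q (q + (n - q)))" using BBq_indep[of n] by simp
  next
    fix p n show "FM p n = span (\<Union>q\<in>{p..}. BBq q (q + (n - q)))" using FM_span[of p n] by simp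
  qed
  have minimal: "\<forall>p n. \<forall>x\<in>FM p n. d n x \<in> FM (p + 1) (n + 1)"
  proof (intro allI ballI)
    fix p n x assume "x \<in> FM p n"
    then have "x \<in> F p n" "x \<in> M n" unfolding FM_def by auto
    then show "d n x \<in> FM (p + 1) (n + 1)" unfolding FM_def using M_minimal d_M by simp
  qed
  have fmin: "filtered_minimal sc M FM d X.nu"
    unfolding filtered_minimal_def by (intro conjI fainf bigr minimal)
  have morph: "filtered_ainf_morphism sc M FM d X.nu A F d (dg_nu mu) X.ff"
    unfolding filtered_ainf_morphism_def
  proof (intro conjI allI impI)
    fix s :: nat assume "1 \<le> s" then show "multilinear_op sc M sc A s (1 - int s) (X.ff s)" by (rule X.ff_multilinear)
  next
    fix s :: nat assume "1 \<le> s" then show "filtered_op M FM F s (1 - int s) (X.ff s)" unfolding FM_eq by (rule X.ff_filtered)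
  next
    fix n :: nat and ds xs assume "1 \<le> n" "length ds = n" "homog M ds xs"
    then show "insert_sum sc X.ff (ainf_ops d X.nu) n ds xs = comp_sum sc (ainf_ops d (dg_nu mu)) X.ff n ds xs"
      by (rule X.morphism_eq)
  qed
  have f1: "\<And>n x. X.ff 1 [n] [x] = x" using X.ff_1 by simp
  have qi: "filtered_quasi_iso FM d F d (\<lambda>n x. X.ff 1 [n] [x])"
    unfolding filtered_quasi_iso_def f1
  proof (intro conjI allI ballI impI)
    fix p n y assume "y \<in> F p n" "d n y = 0"
    then obtain x where "x \<in> F p n \<inter> M n" "d n x = 0 \<and> y - x \<in> d (n - 1) ` F p (n - 1)"
      using qi_surj by blast
    then show "\<exists>x\<in>FM p n. d n x = 0 \<and> y - x \<in> d (n - 1) ` F p (n - 1)"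
      unfolding FM_def by (intro bexI[of _ x]) auto
  next
    fix p n x assume x: "x \<in> FM p n" "d n x = 0" "x \<in> d (n - 1) ` F p (n - 1)"
    then obtain a where a: "a \<in> F p (n - 1)" "x = d (n - 1) a" by (auto simp: image_iff)
    have "\<exists>b\<in>F p (n - 1) \<inter> M (n - 1). x = d (n - 1) b"
      by (rule qi_inj) (use x a in \<open>auto simp: FM_def\<close>)
    then obtain b where "b \<in> F p (n - 1) \<inter> M (n - 1)" "x = d (n - 1) b" by blast
    then show "x \<in> d (n - 1) ` FM p (n - 1)" unfolding FM_def by (intro image_eqI[of _ _ b]) auto
  qed
  show ?thesis unfolding filtered_minimal_model_def by (intro conjI fmin morph qi)
qed

end

theorem theorem3p12:
  fixes sc :: "'k::field \<Rightarrow> 'a::ab_group_add \<Rightarrow> 'a"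
    and A :: "int \<Rightarrow> 'a set" and F :: "int \<Rightarrow> int \<Rightarrow> 'a set"
    and d :: "int \<Rightarrow> 'a \<Rightarrow> 'a" and mu :: "int \<Rightarrow> int \<Rightarrow> 'a \<Rightarrow> 'a \<Rightarrow> 'a"
  assumes "filtered_dg_algebra sc A F d mu"
  shows "\<exists>(M :: int \<Rightarrow> 'a set) (FM :: int \<Rightarrow> int \<Rightarrow> 'a set) (dM :: int \<Rightarrow> 'a \<Rightarrow> 'a)
           (nuM :: nat \<Rightarrow> int list \<Rightarrow> 'a list \<Rightarrow> 'a) (f :: nat \<Rightarrow> int list \<Rightarrow> 'a list \<Rightarrow> 'a).
           filtered_minimal_model sc A F d mu M FM dM nuM f"
proof -
  have vs: "vector_space sc"
    using assms unfolding filtered_dg_algebra_def dg_algebra_def graded_space_def by simp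
  interpret fdga sc A F d mu by (rule fdga.intro[OF vs]) (rule fdga_axioms.intro[OF assms])
  show ?thesis by (intro exI) (rule fmm)
qed


end
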